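(* Suppose $\mathcal M$ expands an ordered field. Let $\mathcal J=\bigcup_{g\in S}\{g\}\times J_g\subseteq M^{m+k}$ be an $A$-definable uniform family of supercones $J_g\subseteq M^k$, with $\mathcal L_A$-definable shell $Z\subseteq M^{m+k}$. Then there are an $A$-definable uniform family $\mathcal J'=\{J'_g\}_{g\in S}$ of supercones $J'_g\subseteq M^k$ having shell $\pi_m(Z)\times(0,1)^k$, and an $\mathcal L_A$-definable continuous injective map $F:Z\to M^{m+k}$, such that $F(\mathcal J)=\mathcal J'$.
   Context: Standing assumptions: $T$ is a complete o-minimal theory expanding the theory of ordered abelian groups with a distinguished positive element $1$, in a language $\mathcal L$; $\mathcal L(P)$ is $\mathcal L$ together with a unary predicate $P$; $\widetilde T$ is an $\mathcal L(P)$-theory extending $T$ such that every model $\langle \mathcal N,P\rangle\models\widetilde T$ satisfies: (I) $P$ is small; (II) every $A$-definable $X\subseteq N^n$ is a boolean combination of sets $\{x: \exists z\in P^m\,\varphi(x,z)\}$ with $\varphi$ an $\mathcal L_A$-formula; (III) for every parameter set $A$ with $A\setminus P$ $\mathrm{dcl}$-independent over $P$ and every $A$-definable $V\subseteq N^s$, the topological closure $cl(V)$ is $\mathcal L_A$-definable. $\widetilde{\mathcal M}=\langle\mathcal M,P\rangle$ is a fixed sufficiently saturated model of $\widetilde T$, $\mathcal M=\langle M,<,+,\dots\rangle$. "$A$-definable" means definable in $\widetilde{\mathcal M}$ with parameters from $A$; "$\mathcal L_A$-definable" means definable in $\mathcal M$ with parameters from $A$. $\pi_m$ is projection onto the first $m$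 coordinates, $\pi=\pi_{n-1}$ on $M^n$; for $X\subseteq M^m\times M^n$ and $a\in M^m$, $X_a=\{b\in M^n:(a,b)\in X\}$. A family $\{J_g\}_{g\in S}$ is identified with $\bigcup_{g\in S}\{g\}\times J_g$. Small: a definable $X\subseteq M^n$ is large if for some $m$ and some $\mathcal L$-definable $f:M^{nm}\to M$, $f(X^m)$ contains an open interval; otherwise small. A subset of an interval $I$ is co-small in $I$ if its complement in $I$ is small. Supercone: $M^0=\{0\}$ is a supercone; a definable $J\subseteq M^{n+1}$ is a supercone if $\pi(J)$ is a supercone and there are $\mathcal L$-definable continuous $h_1<h_2:M^n\to M\cup\{\pm\infty\}$ such that for every $a\in\pi(J)$, $J_a\subseteq(h_1(a),h_2(a))$ and $J_a$ is co-small in $(h_1(a),h_2(a))$. A supercone is $A$-definable if it is $A$-definable as a set and its closure is $\mathcal L_A$-definable. Uniform family: a definable family $\mathcal J=\bigcup_{g\in S}\{g\}\times J_g\subseteq M^{m+k}$ of supercones $J_g\subseteq M^k$ is uniform if there is a cell $V\subseteq M^{m+k}$ (a shell) with $\mathcal J\subseteq V$ and $cl(\pi_{m+j}(\mathcal J)_g)=cl(\pi_{m+j}(V)_g)$ for all $g\in S$, $0<j\le k$. Such a family is $A$-definable if it is an $A$-definable family and has an $\mathcal L_A$-definable shell. *)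

theory Defs
  imports Main
begin

text \<open>Tuples in M^n are lists of length n. A "structure" on the carrier 'a is given
geometrically (van den Dries): S n X means X is a 0-definable subset of M^n.\<close>

definition tuples :: "nat \<Rightarrow> 'a list set" where
  "tuples n = {x. length x = n}"

definition is_structure :: "(nat \<Rightarrow> 'a list set \<Rightarrow> bool) \<Rightarrow> bool" where
  "is_structure S \<longleftrightarrow>
     (\<forall>n X. S n X \<longrightarrow> X \<subseteq> tuples n) \<and>
     (\<forall>n. S n (tuples n)) \<and>
     (\<forall>n X. S n X \<longrightarrow> S n (tuples n - X)) \<and>
     (\<forall>n X Y. S n X \<longrightarrow> S n Y \<longrightarrow> S n (X \<inter> Y)) \<and>
     (\<forall>n X. S n X \<longrightarrow> S (Suc n) {x @ [y] | x y. x \<in> X}) \<and>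
     (\<forall>n X. S n X \<longrightarrow> S (Suc n) {y # x | x y. x \<in> X}) \<and>
     (\<forall>n X. S (Suc n) X \<longrightarrow> S n (take n ` X)) \<and>
     (\<forall>n i j. i < n \<longrightarrow> j < n \<longrightarrow> S n {x \<in> tuples n. x ! i = x ! j})"

text \<open>The structure generated by S together with a unary predicate P
 (the 0-definable sets of the expansion by P).\<close>

inductive gen :: "(nat \<Rightarrow> 'a list set \<Rightarrow> bool) \<Rightarrow> 'a set \<Rightarrow> nat \<Rightarrow> 'a list set \<Rightarrow> bool"
  for S :: "nat \<Rightarrow> 'a list set \<Rightarrow> bool" and P :: "'a set" where
  base: "S n X \<Longrightarrow> gen S P n X"
| pred: "gen S P 1 {[x] | x. x \<in> P}"
| univ: "gen S P n (tuples n)"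
| compl: "gen S P n X \<Longrightarrow> gen S P n (tuples n - X)"
| inter: "gen S P n X \<Longrightarrow> gen S P n Y \<Longrightarrow> gen S P n (X \<inter> Y)"
| prodr: "gen S P n X \<Longrightarrow> gen S P (Suc n) {x @ [y] | x y. x \<in> X}"
| prodl: "gen S P n X \<Longrightarrow> gen S P (Suc n) {y # x | x y. x \<in> X}"
| proj: "gen S P (Suc n) X \<Longrightarrow> gen S P n (take n ` X)"
| diag: "i < n \<Longrightarrow> j < n \<Longrightarrow> gen S P n {x \<in> tuples n. x ! i = x ! j}"

text \<open>Definable with parameters from B (parameters placed first).\<close>

definition defA :: "(nat \<Rightarrow> 'a list set \<Rightarrow> bool) \<Rightarrow> 'a set \<Rightarrow> nat \<Rightarrow> 'a list set \<Rightarrow> bool" where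
  "defA S B n X \<longleftrightarrow> (\<exists>a Y. set a \<subseteq> B \<and> S (length a + n) Y \<and>
      X = {x \<in> tuples n. a @ x \<in> Y})"

datatype 'a ext = MInf | Fin 'a | PInf

fun eless :: "'a::linorder ext \<Rightarrow> 'a ext \<Rightarrow> bool" where
  "eless MInf MInf = False"
| "eless MInf _ = True"
| "eless (Fin a) (Fin b) = (a < b)"
| "eless (Fin _) PInf = True"
| "eless (Fin _) MInf = False"
| "eless PInf _ = False"

definition eivl :: "'a::linorder ext \<Rightarrow> 'a ext \<Rightarrow> 'a set" where
  "eivl l u = {y. eless l (Fin y) \<and> eless (Fin y) u}"

definition box :: "'a::linorder list \<Rightarrow> 'a list \<Rightarrow> 'a list set" where
  "box lo hi = {y. length y = length lo \<and> length hi = length lo \<and>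
      (\<forall>i < length lo. lo ! i < y ! i \<and> y ! i < hi ! i)}"

definition cl :: "nat \<Rightarrow> 'a::linorder list set \<Rightarrow> 'a list set" where
  "cl n X = {x \<in> tuples n. \<forall>lo hi. x \<in> box lo hi \<longrightarrow> box lo hi \<inter> X \<noteq> {}}"

text \<open>Continuity on D of a map into M \<union> {\<plusminus>\<infinity>} (order topology, via the subbasis of open rays).\<close>

definition econt_on :: "'a::linorder list set \<Rightarrow> ('a list \<Rightarrow> 'a ext) \<Rightarrow> bool" where
  "econt_on D h \<longleftrightarrow> (\<forall>x\<in>D. \<forall>c.
     (eless (Fin c) (h x) \<longrightarrow> (\<exists>lo hi. x \<in> box lo hi \<and> (\<forall>y\<in>D \<inter> box lo hi. eless (Fin c) (h y)))) \<and>
     (eless (h x) (Fin c) \<longrightarrow> (\<exists>lo hi. x \<in> box lo hi \<and> (\<forall>y\<in>D \<inter> box lo hi. eless (h y) (Fin c)))))"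

definition cont_on :: "'a::linorder list set \<Rightarrow> nat \<Rightarrow> ('a list \<Rightarrow> 'a list) \<Rightarrow> bool" where
  "cont_on D k F \<longleftrightarrow> (\<forall>i<k. econt_on D (\<lambda>x. Fin (F x ! i)))"

definition edef :: "(nat \<Rightarrow> 'a list set \<Rightarrow> bool) \<Rightarrow> 'a set \<Rightarrow> nat \<Rightarrow> 'a list set \<Rightarrow> ('a list \<Rightarrow> 'a ext) \<Rightarrow> bool" where
  "edef S B n D h \<longleftrightarrow> defA S B n D \<and>
     defA S B (Suc n) {x @ [v] | x v. x \<in> D \<and> h x = Fin v} \<and>
     defA S B n {x \<in> D. h x = PInf} \<and> defA S B n {x \<in> D. h x = MInf}"

definition fdef :: "(nat \<Rightarrow> 'a list set \<Rightarrow> bool) \<Rightarrow> 'a set \<Rightarrow> nat \<Rightarrow> nat \<Rightarrow> 'a list set \<Rightarrow> ('a list \<Rightarrow> 'a list) \<Rightarrow> bool" where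
  "fdef S B n k D F \<longleftrightarrow> D \<subseteq> tuples n \<and> (\<forall>x\<in>D. length (F x) = k) \<and>
     defA S B (n + k) {x @ F x | x. x \<in> D}"

text \<open>Large / small (SL = the L-definable sets; L-definable functions may use parameters).\<close>

definition large :: "(nat \<Rightarrow> 'a list set \<Rightarrow> bool) \<Rightarrow> nat \<Rightarrow> 'a::linorder list set \<Rightarrow> bool" where
  "large SL n X \<longleftrightarrow> (\<exists>m f. defA SL UNIV (n * m + 1) {x @ [f x] | x. length x = n * m} \<and>
      (\<exists>a b. a < b \<and> {a<..<b} \<subseteq> {f (concat xs) | xs. length xs = m \<and> set xs \<subseteq> X}))"

definition small :: "(nat \<Rightarrow> 'a list set \<Rightarrow> bool) \<Rightarrow> nat \<Rightarrow> 'a::linorder list set \<Rightarrow> bool" where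
  "small SL n X \<longleftrightarrow> \<not> large SL n X"

definition fiber :: "'a list set \<Rightarrow> 'a list \<Rightarrow> 'a list set" where
  "fiber X g = {y. g @ y \<in> X}"

text \<open>Supercones in M^n. SL: L-definable sets, SP: L(P)-definable sets.\<close>

fun supercone :: "(nat \<Rightarrow> 'a list set \<Rightarrow> bool) \<Rightarrow> (nat \<Rightarrow> 'a list set \<Rightarrow> bool) \<Rightarrow> nat \<Rightarrow> 'a::linorder list set \<Rightarrow> bool" where
  "supercone SL SP 0 J \<longleftrightarrow> J = {[]}"
| "supercone SL SP (Suc n) J \<longleftrightarrow> defA SP UNIV (Suc n) J \<and> supercone SL SP n (take n ` J) \<and>
     (\<exists>h1 h2. edef SL UNIV n (tuples n) h1 \<and> edef SL UNIV n (tuples n) h2 \<and>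
        econt_on (tuples n) h1 \<and> econt_on (tuples n) h2 \<and>
        (\<forall>x\<in>tuples n. eless (h1 x) (h2 x)) \<and>
        (\<forall>a\<in>take n ` J. {y. a @ [y] \<in> J} \<subseteq> eivl (h1 a) (h2 a) \<and>
            small SL 1 {[y] | y. y \<in> eivl (h1 a) (h2 a) - {y. a @ [y] \<in> J}}))"

definition bound_fn :: "(nat \<Rightarrow> 'a list set \<Rightarrow> bool) \<Rightarrow> nat \<Rightarrow> 'a::linorder list set \<Rightarrow> ('a list \<Rightarrow> 'a ext) \<Rightarrow> bool" where
  "bound_fn SL n D h \<longleftrightarrow> (\<forall>x\<in>D. h x = MInf) \<or> (\<forall>x\<in>D. h x = PInf) \<or>
     ((\<forall>x\<in>D. \<exists>v. h x = Fin v) \<and> edef SL UNIV n D h \<and> econt_on D h)"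

fun cell :: "(nat \<Rightarrow> 'a list set \<Rightarrow> bool) \<Rightarrow> nat \<Rightarrow> 'a::linorder list set \<Rightarrow> bool" where
  "cell SL 0 C \<longleftrightarrow> C = {[]}"
| "cell SL (Suc n) C \<longleftrightarrow>
     (\<exists>D f. cell SL n D \<and> edef SL UNIV n D (\<lambda>x. Fin (f x)) \<and> econt_on D (\<lambda>x. Fin (f x)) \<and>
        C = {x @ [f x] | x. x \<in> D}) \<or>
     (\<exists>D h1 h2. cell SL n D \<and> bound_fn SL n D h1 \<and> bound_fn SL n D h2 \<and>
        (\<forall>x\<in>D. eless (h1 x) (h2 x)) \<and>
        C = {x @ [y] | x y. x \<in> D \<and> y \<in> eivl (h1 x) (h2 x)})"

definition supercone_family :: "(nat \<Rightarrow> 'a list set \<Rightarrow> bool) \<Rightarrow> (nat \<Rightarrow> 'a list set \<Rightarrow> bool) \<Rightarrow> nat \<Rightarrow> nat \<Rightarrow> 'a list set \<Rightarrow> 'a::linorder list set \<Rightarrow> bool" where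
  "supercone_family SL SP m k S J \<longleftrightarrow> S \<subseteq> tuples m \<and>
     J = {g @ y | g y. g \<in> S \<and> y \<in> fiber J g} \<and> J \<subseteq> tuples (m + k) \<and>
     defA SP UNIV (m + k) J \<and> (\<forall>g\<in>S. supercone SL SP k (fiber J g))"

definition is_shell :: "(nat \<Rightarrow> 'a list set \<Rightarrow> bool) \<Rightarrow> nat \<Rightarrow> nat \<Rightarrow> 'a list set \<Rightarrow> 'a list set \<Rightarrow> 'a::linorder list set \<Rightarrow> bool" where
  "is_shell SL m k S J V \<longleftrightarrow> cell SL (m + k) V \<and> J \<subseteq> V \<and>
     (\<forall>g\<in>S. \<forall>j. 0 < j \<and> j \<le> k \<longrightarrow>
        cl j (fiber (take (m + j) ` J) g) = cl j (fiber (take (m + j) ` V) g))"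

definition A_uniform_family_shell :: "(nat \<Rightarrow> 'a list set \<Rightarrow> bool) \<Rightarrow> (nat \<Rightarrow> 'a list set \<Rightarrow> bool) \<Rightarrow> 'a set \<Rightarrow> nat \<Rightarrow> nat \<Rightarrow> 'a list set \<Rightarrow> 'a list set \<Rightarrow> 'a::linorder list set \<Rightarrow> bool" where
  "A_uniform_family_shell SL SP A m k S J V \<longleftrightarrow>
     supercone_family SL SP m k S J \<and> is_shell SL m k S J V \<and>
     defA SP A (m + k) J \<and> defA SL A (m + k) V"

definition o_minimal :: "(nat \<Rightarrow> 'a::linorder list set \<Rightarrow> bool) \<Rightarrow> bool" where
  "o_minimal SL \<longleftrightarrow> (\<forall>X. defA SL UNIV 1 X \<longrightarrow>
     (\<exists>F. finite F \<and> {x. [x] \<in> X} = \<Union>F \<and>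
        (\<forall>I\<in>F. (\<exists>c. I = {c}) \<or> (\<exists>a b. I = eivl a b))))"

definition expands_ordered_field :: "(nat \<Rightarrow> 'a::linordered_field list set \<Rightarrow> bool) \<Rightarrow> bool" where
  "expands_ordered_field SL \<longleftrightarrow>
     SL 2 {[x, y] | x y. x < y} \<and> SL 3 {[x, y, x + y] | x y. True} \<and>
     SL 3 {[x, y, x * y] | x y. True} \<and> SL 1 {[1]}"

definition dcl :: "(nat \<Rightarrow> 'a list set \<Rightarrow> bool) \<Rightarrow> 'a set \<Rightarrow> 'a set" where
  "dcl SL B = {b. defA SL B 1 {[b]}}"

definition dcl_indep_over :: "(nat \<Rightarrow> 'a list set \<Rightarrow> bool) \<Rightarrow> 'a set \<Rightarrow> 'a set \<Rightarrow> bool" where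
  "dcl_indep_over SL P C \<longleftrightarrow> (\<forall>a\<in>C. a \<notin> dcl SL ((C - {a}) \<union> P))"

definition basicP :: "(nat \<Rightarrow> 'a list set \<Rightarrow> bool) \<Rightarrow> 'a set \<Rightarrow> 'a set \<Rightarrow> nat \<Rightarrow> 'a list set \<Rightarrow> bool" where
  "basicP SL P A n X \<longleftrightarrow> (\<exists>l Y. defA SL A (n + l) Y \<and>
     X = {x \<in> tuples n. \<exists>z. length z = l \<and> set z \<subseteq> P \<and> x @ z \<in> Y})"

inductive bcomb :: "('a list set \<Rightarrow> bool) \<Rightarrow> nat \<Rightarrow> 'a list set \<Rightarrow> bool"
  for B :: "'a list set \<Rightarrow> bool" and n :: nat where
  bbase: "B X \<Longrightarrow> bcomb B n X"
| bcompl: "bcomb B n X \<Longrightarrow> bcomb B n (tuples n - X)"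
| binter: "bcomb B n X \<Longrightarrow> bcomb B n Y \<Longrightarrow> bcomb B n (X \<inter> Y)"

definition saturated :: "(nat \<Rightarrow> 'a list set \<Rightarrow> bool) \<Rightarrow> 'b set \<Rightarrow> bool" where
  "saturated SP K \<longleftrightarrow> (\<forall>(B::'a set) n (F::'a list set set). (card_of B, card_of K) \<in> ordLess \<longrightarrow>
     (\<forall>X\<in>F. defA SP B n X) \<longrightarrow>
     (\<forall>G. finite G \<longrightarrow> G \<subseteq> F \<longrightarrow> tuples n \<inter> \<Inter>G \<noteq> {}) \<longrightarrow>
     tuples n \<inter> \<Inter>F \<noteq> {})"

definition standing_assumptions :: "(nat \<Rightarrow> 'a::linordered_field list set \<Rightarrow> bool) \<Rightarrow> 'a set \<Rightarrow> bool" where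
  "standing_assumptions SL P \<longleftrightarrow>
     is_structure SL \<and> expands_ordered_field SL \<and> o_minimal SL \<and>
     \<comment> \<open>(I)\<close> small SL 1 {[x] | x. x \<in> P} \<and>
     \<comment> \<open>(II)\<close> (\<forall>A n X. defA (gen SL P) A n X \<longrightarrow> bcomb (basicP SL P A n) n X) \<and>
     \<comment> \<open>(III)\<close> (\<forall>A. dcl_indep_over SL P (A - P) \<longrightarrow>
          (\<forall>s V. defA (gen SL P) A s V \<longrightarrow> defA SL A s (cl s V))) \<and>
     \<comment> \<open>sufficient saturation: \<kappa>-saturated for some \<kappa> > |L|\<close>
     (\<exists>K::'a set. (card_of {(n, X). SL n X}, card_of K) \<in> ordLess \<and> saturated (gen SL P) K)"

end

theory Submission
  imports Defs
begin


lemma st_sub: "is_structure S \<Longrightarrow> S n X \<Longrightarrow> X \<subseteq> tuples n"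
  by (simp add: is_structure_def)
lemma st_univ: "is_structure S \<Longrightarrow> S n (tuples n)"
  by (simp add: is_structure_def)
lemma st_compl: "is_structure S \<Longrightarrow> S n X \<Longrightarrow> S n (tuples n - X)"
  by (simp add: is_structure_def)
lemma st_inter: "is_structure S \<Longrightarrow> S n X \<Longrightarrow> S n Y \<Longrightarrow> S n (X \<inter> Y)"
  by (simp add: is_structure_def)
lemma st_prodl: "is_structure S \<Longrightarrow> S n X \<Longrightarrow> S (Suc n) {y # x | x y. x \<in> X}"
  by (simp add: is_structure_def)
lemma st_proj: "is_structure S \<Longrightarrow> S (Suc n) X \<Longrightarrow> S n (take n ` X)"
  by (simp add: is_structure_def)
lemma st_diag: "is_structure S \<Longrightarrow> i < n \<Longrightarrow> j < n \<Longrightarrow> S n {x \<in> tuples n. x ! i = x ! j}"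
  by (simp add: is_structure_def)
lemma st_diag': "is_structure S \<Longrightarrow> i < n \<Longrightarrow> j < n \<Longrightarrow> S n {x. length x = n \<and> x ! i = x ! j}"
  using st_diag[of S i n j] by (simp add: tuples_def)
lemma nth_lt: "\<forall>v\<in>set vs. v < n \<Longrightarrow> i < length vs \<Longrightarrow> vs ! i < n"
  by auto

lemma tuples_iff[simp]: "x \<in> tuples n \<longleftrightarrow> length x = n"
  by (simp add: tuples_def)

lemma st_prepend:
  assumes "is_structure S" "S p Y"
  shows "S (n + p) {ys @ y | ys y. length ys = n \<and> y \<in> Y}"
proof (induction n)
  case 0
  then show ?case using assms by simp
next
  case (Suc n)
  have "S (Suc (n+p)) {z # x | x z. x \<in> {ys @ y | ys y. length ys = n \<and> y \<in> Y}}"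
    using st_prodl[OF assms(1) Suc] .
  moreover have "{z # x | x z. x \<in> {ys @ y | ys y. length ys = n \<and> y \<in> Y}}
     = {ys @ y | ys y. length ys = Suc n \<and> y \<in> Y}"
  proof (rule set_eqI, rule iffI)
    fix w assume "w \<in> {z # x | x z. x \<in> {ys @ y | ys y. length ys = n \<and> y \<in> Y}}"
    then obtain z ys y where A: "w = (z # ys) @ y" "length ys = n" "y \<in> Y" by auto
    then have "length (z # ys) = Suc n" by simp
    then show "w \<in> {ys @ y | ys y. length ys = Suc n \<and> y \<in> Y}" using A by blast
  next
    fix w assume "w \<in> {ys @ y | ys y. length ys = Suc n \<and> y \<in> Y}"
    then obtain ys y where "w = ys @ y" "length ys = Suc n" "y \<in> Y" by auto
    then show "w \<in> {z # x | x z. x \<in> {ys @ y | ys y. length ys = n \<and> y \<in> Y}}"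
      by (cases ys) auto
  qed
  ultimately show ?case by simp
qed

lemma st_projn:
  assumes "is_structure S" "S (n + p) X"
  shows "S n (take n ` X)"
  using assms(2)
proof (induction p arbitrary: X)
  case 0
  have "X \<subseteq> tuples n" using st_sub[OF assms(1)] 0 by simp
  then have "take n ` X = X" by (force simp: image_iff)
  then show ?case using 0 by simp
next
  case (Suc p)
  have "S (n + p) (take (n+p) ` X)" using st_proj[OF assms(1)] Suc.prems by simp
  from Suc.IH[OF this] have "S n (take n ` take (n + p) ` X)" .
  moreover have "take n ` take (n + p) ` X = take n ` X"
    by (simp add: image_image min_def)
  ultimately show ?case by simp
qed

lemma st_interl:
  assumes "is_structure S" "\<forall>X\<in>set Xs. S n X"
  shows "S n (tuples n \<inter> \<Inter>(set Xs))"
  using assms(2)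
proof (induction Xs)
  case Nil
  then show ?case using st_univ[OF assms(1)] by simp
next
  case (Cons X Xs)
  have "S n (X \<inter> (tuples n \<inter> \<Inter>(set Xs)))" using Cons st_inter[OF assms(1)] by simp
  moreover have "X \<inter> (tuples n \<inter> \<Inter>(set Xs)) = tuples n \<inter> \<Inter>(set (X # Xs))" by auto
  ultimately show ?case by simp
qed

lemma st_subst:
  fixes S :: "nat \<Rightarrow> 'a list set \<Rightarrow> bool"
  assumes st: "is_structure S" and Y: "S p Y" and len: "length vs = p"
    and vs: "\<forall>v\<in>set vs. v < n"
  shows "S n {z \<in> tuples n. map (nth z) vs \<in> Y}"
proof -
  define W where "W = {ys @ y | ys y. length ys = n \<and> y \<in> Y}"
  have W: "S (n+p) W" unfolding W_def by (rule st_prepend[OF st Y])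
  define Ds :: "'a list set list" where "Ds = map (\<lambda>i. {x \<in> tuples (n+p). x ! (n+i) = x ! (vs!i)}) [0..<p]"
  have "\<forall>X\<in>set Ds. S (n+p) X"
  proof
    fix X assume "X \<in> set Ds"
    then obtain i where i: "i < p" "X = {x \<in> tuples (n+p). x ! (n+i) = x ! (vs!i)}"
      unfolding Ds_def by auto
    have "vs ! i < n" using nth_lt[OF vs, of i] i len by simp
    then show "S (n+p) X" unfolding i(2) by (intro st_diag[OF st]) (use i(1) in auto)
  qed
  then have D: "S (n+p) (tuples (n+p) \<inter> \<Inter>(set Ds))" by (rule st_interl[OF st])
  have "S n (take n ` (W \<inter> (tuples (n+p) \<inter> \<Inter>(set Ds))))"
    by (rule st_projn[OF st st_inter[OF st W D]])
  moreover have "take n ` (W \<inter> (tuples (n+p) \<inter> \<Inter>(set Ds))) = {z \<in> tuples n. map (nth z) vs \<in> Y}"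
  proof (rule set_eqI, rule iffI)
    fix z assume "z \<in> take n ` (W \<inter> (tuples (n+p) \<inter> \<Inter>(set Ds)))"
    then obtain ys y where A: "z = take n (ys @ y)" "length ys = n" "y \<in> Y"
      "\<forall>i<p. (ys @ y) ! (n+i) = (ys @ y) ! (vs!i)"
      unfolding W_def Ds_def by auto
    have ly: "length y = p" using st_sub[OF st Y] A(3) by auto
    have z: "z = ys" using A by simp
    have "map (nth z) vs = y"
    proof (rule nth_equalityI)
      show "length (map (nth z) vs) = length y" using ly len by simp
      fix i assume "i < length (map (nth z) vs)"
      then have i: "i < p" using len by simp
      have "(ys @ y) ! (n+i) = y ! i" using A(2) by (simp add: nth_append)
      moreover have "(ys @ y) ! (vs!i) = ys ! (vs!i)" using A(2) vs len i by (simp add: nth_append)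
      ultimately show "map (nth z) vs ! i = y ! i" using A(4) i z len by simp
    qed
    then show "z \<in> {z \<in> tuples n. map (nth z) vs \<in> Y}" using A z by simp
  next
    fix z assume "z \<in> {z \<in> tuples n. map (nth z) vs \<in> Y}"
    then have z: "length z = n" "map (nth z) vs \<in> Y" by auto
    let ?w = "z @ map (nth z) vs"
    have "?w \<in> W" unfolding W_def using z by blast
    moreover have "?w \<in> tuples (n+p) \<inter> \<Inter>(set Ds)"
      unfolding Ds_def using z len vs by (auto simp: nth_append)
    moreover have "z = take n ?w" using z by simp
    ultimately show "z \<in> take n ` (W \<inter> (tuples (n+p) \<inter> \<Inter>(set Ds)))" by blast
  qed
  ultimately show ?thesis by simp
qed

lemma defA_sub: "defA S B n X \<Longrightarrow> X \<subseteq> tuples n"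
  by (auto simp: defA_def)

lemma defA_of: "S n X \<Longrightarrow> is_structure S \<Longrightarrow> defA S B n X"
proof -
  assume a: "S n X" "is_structure S"
  have "X \<subseteq> tuples n" using st_sub[OF a(2) a(1)] .
  then have "X = {x \<in> tuples n. [] @ x \<in> X}" by auto
  then show ?thesis unfolding defA_def using a(1) by (intro exI[of _ "[]"] exI[of _ X]) auto
qed

lemma defA_mono: "defA S B n X \<Longrightarrow> B \<subseteq> B' \<Longrightarrow> defA S B' n X"
  unfolding defA_def by blast

lemma defA_subst:
  assumes st: "is_structure S" and Y: "defA S B p Y" and len: "length vs = p"
    and vs: "\<forall>v\<in>set vs. v < n"
  shows "defA S B n {z \<in> tuples n. map (nth z) vs \<in> Y}"
proof -
  obtain a Y0 where a: "set a \<subseteq> B" "S (length a + p) Y0" "Y = {x \<in> tuples p. a @ x \<in> Y0}"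
    using Y unfolding defA_def by blast
  define idx where "idx = [0..<length a] @ map (\<lambda>v. length a + v) vs"
  have "S (length a + n) {w \<in> tuples (length a + n). map (nth w) idx \<in> Y0}"
    by (rule st_subst[OF st a(2)]) (use len vs in \<open>auto simp: idx_def\<close>)
  moreover have "{z \<in> tuples n. map (nth z) vs \<in> Y} =
     {z \<in> tuples n. a @ z \<in> {w \<in> tuples (length a + n). map (nth w) idx \<in> Y0}}"
  proof -
    have "\<And>z. length z = n \<Longrightarrow> map (nth (a @ z)) idx = a @ map (nth z) vs"
    proof -
      fix z :: "'a list" assume "length z = n"
      have "map (nth (a @ z)) [0..<length a] = a"
        by (rule nth_equalityI) (auto simp: nth_append)
      moreover have "map (nth (a @ z)) (map (\<lambda>v. length a + v) vs) = map (nth z) vs"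
        by (auto simp: nth_append)
      ultimately show "map (nth (a @ z)) idx = a @ map (nth z) vs" by (simp add: idx_def)
    qed
    then show ?thesis using a(3) len by auto
  qed
  ultimately show ?thesis unfolding defA_def using a(1) by blast
qed

lemma defA_inter:
  assumes st: "is_structure S" and X: "defA S B n X" and Y: "defA S B n Y"
  shows "defA S B n (X \<inter> Y)"
proof -
  obtain a1 Y1 where a1: "set a1 \<subseteq> B" "S (length a1 + n) Y1" "X = {x \<in> tuples n. a1 @ x \<in> Y1}"
    using X unfolding defA_def by blast
  obtain a2 Y2 where a2: "set a2 \<subseteq> B" "S (length a2 + n) Y2" "Y = {x \<in> tuples n. a2 @ x \<in> Y2}"
    using Y unfolding defA_def by blast
  let ?N = "length a1 + length a2 + n"
  define i1 where "i1 = [0..<length a1] @ [length a1 + length a2..<?N]"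
  define i2 where "i2 = [length a1..<?N]"
  have S1: "S ?N {w \<in> tuples ?N. map (nth w) i1 \<in> Y1}"
    by (rule st_subst[OF st a1(2)]) (auto simp: i1_def)
  have S2: "S ?N {w \<in> tuples ?N. map (nth w) i2 \<in> Y2}"
    by (rule st_subst[OF st a2(2)]) (auto simp: i2_def)
  have S12: "S (length (a1 @ a2) + n) ({w \<in> tuples ?N. map (nth w) i1 \<in> Y1} \<inter> {w \<in> tuples ?N. map (nth w) i2 \<in> Y2})"
    using st_inter[OF st S1 S2] by simp
  have e1: "map (nth (a1 @ a2 @ z)) i1 = a1 @ z" if "length z = n" for z :: "'a list"
  proof (rule nth_equalityI)
    show "length (map (nth (a1 @ a2 @ z)) i1) = length (a1 @ z)" using that by (simp add: i1_def)
    fix i assume "i < length (map (nth (a1 @ a2 @ z)) i1)"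
    then show "map (nth (a1 @ a2 @ z)) i1 ! i = (a1 @ z) ! i" using that
      by (auto simp: i1_def nth_append)
  qed
  have e2: "map (nth (a1 @ a2 @ z)) i2 = a2 @ z" if "length z = n" for z :: "'a list"
  proof (rule nth_equalityI)
    show "length (map (nth (a1 @ a2 @ z)) i2) = length (a2 @ z)" using that by (simp add: i2_def)
    fix i assume "i < length (map (nth (a1 @ a2 @ z)) i2)"
    then show "map (nth (a1 @ a2 @ z)) i2 ! i = (a2 @ z) ! i" using that
      by (auto simp: i2_def nth_append)
  qed
  have "X \<inter> Y = {z \<in> tuples n. (a1 @ a2) @ z \<in>
     ({w \<in> tuples ?N. map (nth w) i1 \<in> Y1} \<inter> {w \<in> tuples ?N. map (nth w) i2 \<in> Y2})}"
    using a1(3) a2(3) e1 e2 by auto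
  then show ?thesis unfolding defA_def using S12 a1(1) a2(1) by (intro exI[of _ "a1 @ a2"]) auto
qed

lemma defA_compl:
  assumes st: "is_structure S" and X: "defA S B n X"
  shows "defA S B n (tuples n - X)"
proof -
  obtain a Y where a: "set a \<subseteq> B" "S (length a + n) Y" "X = {x \<in> tuples n. a @ x \<in> Y}"
    using X unfolding defA_def by blast
  have "tuples n - X = {x \<in> tuples n. a @ x \<in> tuples (length a + n) - Y}" using a(3) by auto
  then show ?thesis unfolding defA_def using a st_compl[OF st a(2)] by blast
qed

lemma defA_proj:
  assumes st: "is_structure S" and X: "defA S B (Suc n) X"
  shows "defA S B n (take n ` X)"
proof -
  obtain a Y where a: "set a \<subseteq> B" "S (length a + Suc n) Y" "X = {x \<in> tuples (Suc n). a @ x \<in> Y}"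
    using X unfolding defA_def by blast
  have Y: "Y \<subseteq> tuples (length a + Suc n)" using st_sub[OF st a(2)] .
  have "S (length a + n) (take (length a + n) ` Y)" using st_proj[OF st] a(2) by simp
  moreover have "take n ` X = {x \<in> tuples n. a @ x \<in> take (length a + n) ` Y}"
  proof (rule set_eqI, rule iffI)
    fix x assume "x \<in> take n ` X"
    then obtain z where "z \<in> X" "x = take n z" by auto
    then show "x \<in> {x \<in> tuples n. a @ x \<in> take (length a + n) ` Y}" using a(3)
      by (auto intro!: image_eqI[of _ _ "a @ z"])
  next
    fix x assume "x \<in> {x \<in> tuples n. a @ x \<in> take (length a + n) ` Y}"
    then obtain w where w: "w \<in> Y" "a @ x = take (length a + n) w" "length x = n" by auto
    have lw: "length w = length a + Suc n" using Y w(1) by auto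
    have "w = a @ x @ [last w]"
    proof -
      note w2 = w(2)
      have "w = take (length a + n) w @ [w ! (length a + n)]"
        using lw by (metis add_Suc_right id_take_nth_drop lessI append_take_drop_id
            drop_eq_Nil le_refl Cons_nth_drop_Suc)
      moreover have "w ! (length a + n) = last w"
      proof -
        have "w \<noteq> []" using lw by auto
        then show ?thesis using lw by (simp add: last_conv_nth)
      qed
      ultimately show ?thesis using w2 by (metis append.assoc)
    qed
    then have "x @ [last w] \<in> X" using a(3) w by auto
    then show "x \<in> take n ` X" using w(3) by (auto intro!: image_eqI[of _ _ "x @ [last w]"])
  qed
  ultimately show ?thesis unfolding defA_def using a(1) by blast
qed

lemma defA_fiber:
  assumes X: "defA S B (length g + n) X" and g: "set g \<subseteq> B"
  shows "defA S B n (fiber X g)"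
proof -
  obtain a Y where a: "set a \<subseteq> B" "S (length a + (length g + n)) Y"
     "X = {x \<in> tuples (length g + n). a @ x \<in> Y}"
    using X unfolding defA_def by blast
  have "fiber X g = {x \<in> tuples n. (a @ g) @ x \<in> Y}" using a(3) by (auto simp: fiber_def)
  then show ?thesis unfolding defA_def using a g by (intro exI[of _ "a @ g"]) (auto simp: add.assoc)
qed

section \<open>Formulas\<close>

datatype 'a fm = At "'a list set" "nat list" | Neg "'a fm" | Conj "'a fm" "'a fm" | Ex "'a fm"

fun sem :: "'a fm \<Rightarrow> 'a list \<Rightarrow> bool" where
  "sem (At X vs) x = (map (nth x) vs \<in> X)"
| "sem (Neg f) x = (\<not> sem f x)"
| "sem (Conj f g) x = (sem f x \<and> sem g x)"
| "sem (Ex f) x = (\<exists>y. sem f (x @ [y]))"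

fun fok :: "(nat \<Rightarrow> 'a list set \<Rightarrow> bool) \<Rightarrow> 'a set \<Rightarrow> nat \<Rightarrow> 'a fm \<Rightarrow> bool" where
  "fok S B n (At X vs) = (defA S B (length vs) X \<and> (\<forall>v\<in>set vs. v < n))"
| "fok S B n (Neg f) = fok S B n f"
| "fok S B n (Conj f g) = (fok S B n f \<and> fok S B n g)"
| "fok S B n (Ex f) = fok S B (Suc n) f"

theorem fm_def:
  assumes st: "is_structure S"
  shows "fok S B n f \<Longrightarrow> defA S B n {x \<in> tuples n. sem f x}"
proof (induction f arbitrary: n)
  case (At X vs)
  then show ?case using defA_subst[OF st, of B "length vs" X vs n] by simp
next
  case (Neg f)
  have "{x \<in> tuples n. sem (Neg f) x} = tuples n - {x \<in> tuples n. sem f x}" by auto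
  then show ?case using Neg defA_compl[OF st] by simp
next
  case (Conj f g)
  have "{x \<in> tuples n. sem (Conj f g) x} = {x \<in> tuples n. sem f x} \<inter> {x \<in> tuples n. sem g x}" by auto
  then show ?case using Conj defA_inter[OF st] by simp
next
  case (Ex f)
  have "{x \<in> tuples n. sem (Ex f) x} = take n ` {x \<in> tuples (Suc n). sem f x}"
  proof (rule set_eqI, rule iffI)
    fix x assume "x \<in> {x \<in> tuples n. sem (Ex f) x}"
    then obtain y where "length x = n" "sem f (x @ [y])" by auto
    then show "x \<in> take n ` {x \<in> tuples (Suc n). sem f x}" by (auto intro!: image_eqI[of _ _ "x@[y]"])
  next
    fix x assume "x \<in> take n ` {x \<in> tuples (Suc n). sem f x}"
    then obtain z where z: "length z = Suc n" "sem f z" "x = take n z" by auto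
    then have "z = x @ [last z]"
      by (metis append_butlast_last_id butlast_conv_take diff_Suc_1 list.size(3) nat.distinct(1))
    then show "x \<in> {x \<in> tuples n. sem (Ex f) x}" using z by (auto intro!: exI[of _ "last z"])
  qed
  then show ?case using Ex defA_proj[OF st] by simp
qed

definition TT :: "'a fm" where "TT = At {[]} []"
definition Disj :: "'a fm \<Rightarrow> 'a fm \<Rightarrow> 'a fm" where "Disj f g = Neg (Conj (Neg f) (Neg g))"
definition Imp :: "'a fm \<Rightarrow> 'a fm \<Rightarrow> 'a fm" where "Imp f g = Neg (Conj f (Neg g))"
definition All :: "'a fm \<Rightarrow> 'a fm" where "All f = Neg (Ex (Neg f))"

lemma sem_der[simp]:
  "sem TT x" "sem (Disj f g) x = (sem f x \<or> sem g x)" "sem (Imp f g) x = (sem f x \<longrightarrow> sem g x)"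
  "sem (All f) x = (\<forall>y. sem f (x @ [y]))"
  by (auto simp: TT_def Disj_def Imp_def All_def)

lemma fok_TT: "is_structure S \<Longrightarrow> fok S B n TT"
proof -
  assume st: "is_structure S"
  have "{[]} = tuples 0" by (auto simp: tuples_def)
  then have "defA S B 0 {[]}" using defA_of[of S 0 "tuples 0" B] st_univ[OF st, of 0] st by metis
  then show ?thesis by (simp add: TT_def)
qed

lemma fok_der[simp]:
  "fok S B n (Disj f g) = (fok S B n f \<and> fok S B n g)"
  "fok S B n (Imp f g) = (fok S B n f \<and> fok S B n g)"
  "fok S B n (All f) = fok S B (Suc n) f"
  by (auto simp: Disj_def Imp_def All_def)

fun ExN :: "nat \<Rightarrow> 'a fm \<Rightarrow> 'a fm" where
  "ExN 0 f = f" | "ExN (Suc p) f = ExN p (Ex f)"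

lemma sem_ExN: "sem (ExN p f) x = (\<exists>ys. length ys = p \<and> sem f (x @ ys))"
proof (induction p arbitrary: f x)
  case 0
  then show ?case by simp
next
  case (Suc p)
  have IH: "sem (ExN p (Ex f)) x = (\<exists>ys. length ys = p \<and> sem (Ex f) (x @ ys))"
    by (rule Suc.IH)
  have "(\<exists>ys. length ys = p \<and> sem (Ex f) (x @ ys)) = (\<exists>ys. length ys = Suc p \<and> sem f (x @ ys))"
  proof
    assume "\<exists>ys. length ys = p \<and> sem (Ex f) (x @ ys)"
    then obtain ys y where ys: "length ys = p" "sem f ((x @ ys) @ [y])" by auto
    then show "\<exists>ys. length ys = Suc p \<and> sem f (x @ ys)"
      by (intro exI[of _ "ys @ [y]"]) simp
  next
    assume "\<exists>ys. length ys = Suc p \<and> sem f (x @ ys)"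
    then obtain ys where ys: "length ys = Suc p" "sem f (x @ ys)" by blast
    obtain zs z where e: "ys = zs @ [z]"
      using ys(1) by (metis append_butlast_last_id list.size(3) nat.distinct(1))
    have "length zs = p" using ys(1) e by simp
    moreover have "sem (Ex f) (x @ zs)" using ys(2) e by auto
    ultimately show "\<exists>ys. length ys = p \<and> sem (Ex f) (x @ ys)" by blast
  qed
  then show ?case using IH by simp
qed

lemma fok_ExN[simp]: "fok S B n (ExN p f) = fok S B (n + p) f"
  by (induction p arbitrary: f n) auto

definition BigConj :: "'a fm list \<Rightarrow> 'a fm" where "BigConj fs = foldr Conj fs TT"

lemma sem_BigConj[simp]: "sem (BigConj fs) x = (\<forall>f\<in>set fs. sem f x)"
  by (induction fs) (auto simp: BigConj_def)

lemma fok_BigConj: "is_structure S \<Longrightarrow> (\<forall>f\<in>set fs. fok S B n f) \<Longrightarrow> fok S B n (BigConj fs)"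
  by (induction fs) (auto simp: BigConj_def fok_TT)


definition arith_st :: "(nat \<Rightarrow> 'a::linordered_field list set \<Rightarrow> bool) \<Rightarrow> bool" where
  "arith_st S \<longleftrightarrow> is_structure S \<and> S 2 {[x, y] | x y. x < y} \<and> S 3 {[x, y, x + y] | x y. True} \<and>
     S 3 {[x, y, x * y] | x y. True} \<and> S 1 {[1]}"

lemma gen_structure: "is_structure SL \<Longrightarrow> is_structure (gen SL P)"
proof -
  assume st: "is_structure SL"
  have sub: "gen SL P n X \<Longrightarrow> X \<subseteq> tuples n" for n X
  proof (induction rule: gen.induct)
    case (base n X) then show ?case using st_sub[OF st] by blast
  next
    case pred then show ?case by auto
  next
    case (proj n X) then show ?case by auto
  next
    case (prodr n X) then show ?case by auto
  next
    case (prodl n X) then show ?case by auto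
  qed (auto simp: tuples_def)
  show ?thesis unfolding is_structure_def
    apply (intro conjI allI impI)
    using sub apply blast
           apply (rule gen.univ)
          apply (erule gen.compl)
         apply (erule (1) gen.inter)
        apply (erule gen.prodr)
       apply (erule gen.prodl)
      apply (erule gen.proj)
     apply (erule (1) gen.diag)
    done
qed

lemma arith_gen: "arith_st SL \<Longrightarrow> arith_st (gen SL P)"
  unfolding arith_st_def using gen_structure by (auto intro: gen.base)

lemma arith_SL: "is_structure SL \<Longrightarrow> expands_ordered_field SL \<Longrightarrow> arith_st SL"
  by (simp add: arith_st_def expands_ordered_field_def)

lemma defA_gen: "is_structure SL \<Longrightarrow> defA SL B n X \<Longrightarrow> defA (gen SL P) B n X"
  unfolding defA_def by (auto intro: gen.base)

datatype tm = V nat | C0 | C1 | Pl tm tm | Mu tm tm | Ng tm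

fun tev :: "tm \<Rightarrow> 'a::linordered_field list \<Rightarrow> 'a" where
  "tev (V i) x = x ! i"
| "tev C0 x = 0"
| "tev C1 x = 1"
| "tev (Pl s t) x = tev s x + tev t x"
| "tev (Mu s t) x = tev s x * tev t x"
| "tev (Ng s) x = - tev s x"

fun tok :: "nat \<Rightarrow> tm \<Rightarrow> bool" where
  "tok n (V i) = (i < n)"
| "tok n C0 = True"
| "tok n C1 = True"
| "tok n (Pl s t) = (tok n s \<and> tok n t)"
| "tok n (Mu s t) = (tok n s \<and> tok n t)"
| "tok n (Ng s) = tok n s"

lemma tev_take: "tok n t \<Longrightarrow> n \<le> length x \<Longrightarrow> tev t (take n x) = tev t x"
  by (induction t) auto

definition Gt :: "nat \<Rightarrow> tm \<Rightarrow> 'a::linordered_field list set" where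
  "Gt n t = {w. length w = Suc n \<and> w ! n = tev t (take n w)}"

lemma Gt_app: "length x = n \<Longrightarrow> (x @ [a] \<in> Gt n t) = (a = tev t x)"
  by (auto simp: Gt_def nth_append)

lemma map_nth_upt: "n \<le> length w \<Longrightarrow> map (nth w) [0..<n] = take n w"
  by (rule nth_equalityI) auto

lemma snoc_eq: "length w = Suc n \<Longrightarrow> w = take n w @ [w ! n]"
  by (metis append_take_drop_id drop_eq_Nil id_take_nth_drop lessI order_refl)

definition PlusS :: "'a::linordered_field list set" where "PlusS = {[x, y, x + y] | x y. True}"
definition TimesS :: "'a::linordered_field list set" where "TimesS = {[x, y, x * y] | x y. True}"
definition LessS :: "'a::linordered_field list set" where "LessS = {[x, y] | x y. x < y}"
definition OneS :: "'a::linordered_field list set" where "OneS = {[1]}"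

lemma PlusS_iff[simp]: "[a, b, c] \<in> PlusS \<longleftrightarrow> c = a + b" by (auto simp: PlusS_def)
lemma TimesS_iff[simp]: "[a, b, c] \<in> TimesS \<longleftrightarrow> c = a * b" by (auto simp: TimesS_def)
lemma LessS_iff[simp]: "[a, b] \<in> LessS \<longleftrightarrow> a < b" by (auto simp: LessS_def)
lemma OneS_iff[simp]: "[a] \<in> OneS \<longleftrightarrow> a = 1" by (auto simp: OneS_def)

lemma arith_defs:
  assumes "arith_st S"
  shows "defA S B 3 PlusS" "defA S B 3 TimesS" "defA S B 2 LessS" "defA S B 1 OneS"
  using assms unfolding arith_st_def PlusS_def TimesS_def LessS_def OneS_def
  by (auto intro: defA_of)

lemma arith_defs2:
  assumes "arith_st S"
  shows "defA S B (Suc (Suc (Suc 0))) PlusS" "defA S B (Suc (Suc (Suc 0))) TimesS"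
    "defA S B (Suc (Suc 0)) LessS" "defA S B (Suc 0) OneS"
  using arith_defs[OF assms, of B] by (simp_all add: numeral_eq_Suc)

lemma map_nth_app2[simp]: "n \<le> length w \<Longrightarrow> map (nth (w @ ys)) [0..<n] = take n w"
  by (rule nth_equalityI) (auto simp: nth_append)

lemma map_nth_app[simp]: "length x = n \<Longrightarrow> map (nth (x @ ys)) [0..<n] = x"
  by (rule nth_equalityI) (auto simp: nth_append)

lemma arith_is: "arith_st S \<Longrightarrow> is_structure S" by (simp add: arith_st_def)

lemma defA_eqset:
  assumes "defA S B n X" "X = Y" shows "defA S B n Y" using assms by simp

lemma Gt_def_ok:
  assumes ar: "arith_st S"
  shows "tok n t \<Longrightarrow> defA S B (Suc n) (Gt n t)"
proof (induction t)
  note st = arith_is[OF ar]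
  note ad = arith_defs[OF ar, of B]
  {
    case (V i)
    have "Gt n (V i) = {w \<in> tuples (Suc n). w ! n = w ! i}"
      using V by (auto simp: Gt_def)
    moreover have "S (Suc n) {w \<in> tuples (Suc n). w ! n = w ! i}" using st_diag[OF st, of n "Suc n" i] V by simp
    ultimately show ?case using defA_of[OF _ st] by metis
  next
    case C0
    have e: "Gt n C0 = {w \<in> tuples (Suc n). sem (At PlusS [n, n, n]) w}"
      by (auto simp: Gt_def)
    have "defA S B (Suc n) {w \<in> tuples (Suc n). sem (At PlusS [n, n, n]) w}"
      by (rule fm_def[OF st]) (use ad arith_defs2[OF ar] in simp)
    then show ?case by (simp only: e)
  next
    case C1
    have e: "Gt n C1 = {w \<in> tuples (Suc n). sem (At OneS [n]) w}"
      by (auto simp: Gt_def)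
    have "defA S B (Suc n) {w \<in> tuples (Suc n). sem (At OneS [n]) w}"
      by (rule fm_def[OF st]) (use ad arith_defs2[OF ar] in simp)
    then show ?case by (simp only: e)
  next
    case (Pl s t)
    let ?f = "Ex (Ex (Conj (At (Gt n s) ([0..<n] @ [Suc n])) (Conj (At (Gt n t) ([0..<n] @ [Suc (Suc n)]))
                (At PlusS [Suc n, Suc (Suc n), n]))))"
    have "fok S B (Suc n) ?f" using Pl ad arith_defs2[OF ar] by auto
    moreover have E: "Gt n (Pl s t) = {w \<in> tuples (Suc n). sem ?f w}"
    proof (rule set_eqI)
      fix w
      show "w \<in> Gt n (Pl s t) \<longleftrightarrow> w \<in> {w \<in> tuples (Suc n). sem ?f w}"
      proof (cases "length w = Suc n")
        case True
        have m: "map (nth (w @ [a, b])) ([0..<n] @ [Suc n]) = take n w @ [a]"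
          "map (nth (w @ [a, b])) ([0..<n] @ [Suc (Suc n)]) = take n w @ [b]" for a b
          using True by (auto simp: nth_append)
        have lt: "length (take n w) = n" using True by simp
        show ?thesis using True by (simp add: m Gt_app[OF lt] nth_append) (auto simp: Gt_def)
      qed (auto simp: Gt_def)
    qed
    ultimately show ?case using fm_def[OF st] by (simp only: E)
  next
    case (Mu s t)
    let ?f = "Ex (Ex (Conj (At (Gt n s) ([0..<n] @ [Suc n])) (Conj (At (Gt n t) ([0..<n] @ [Suc (Suc n)]))
                (At TimesS [Suc n, Suc (Suc n), n]))))"
    have "fok S B (Suc n) ?f" using Mu ad arith_defs2[OF ar] by auto
    moreover have E: "Gt n (Mu s t) = {w \<in> tuples (Suc n). sem ?f w}"
    proof (rule set_eqI)
      fix w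
      show "w \<in> Gt n (Mu s t) \<longleftrightarrow> w \<in> {w \<in> tuples (Suc n). sem ?f w}"
      proof (cases "length w = Suc n")
        case True
        have m: "map (nth (w @ [a, b])) ([0..<n] @ [Suc n]) = take n w @ [a]"
          "map (nth (w @ [a, b])) ([0..<n] @ [Suc (Suc n)]) = take n w @ [b]" for a b
          using True by (auto simp: nth_append)
        have lt: "length (take n w) = n" using True by simp
        show ?thesis using True by (simp add: m Gt_app[OF lt] nth_append) (auto simp: Gt_def)
      qed (auto simp: Gt_def)
    qed
    ultimately show ?case using fm_def[OF st] by (simp only: E)
  next
    case (Ng s)
    let ?f = "Ex (Conj (At (Gt n s) ([0..<n] @ [Suc n]))
               (Ex (Conj (At PlusS [Suc (Suc n), Suc (Suc n), Suc (Suc n)]) (At PlusS [Suc n, n, Suc (Suc n)]))))"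
    have "fok S B (Suc n) ?f" using Ng ad arith_defs2[OF ar] by auto
    moreover have E: "Gt n (Ng s) = {w \<in> tuples (Suc n). sem ?f w}"
    proof (rule set_eqI)
      fix w
      show "w \<in> Gt n (Ng s) \<longleftrightarrow> w \<in> {w \<in> tuples (Suc n). sem ?f w}"
      proof (cases "length w = Suc n")
        case True
        have m: "map (nth (w @ [a])) ([0..<n] @ [Suc n]) = take n w @ [a]" for a
          using True by (auto simp: nth_append map_nth_upt)
        have lt: "length (take n w) = n" using True by simp
        have "w \<in> Gt n (Ng s) \<longleftrightarrow> w ! n = - tev s (take n w)" using True by (simp add: Gt_def)
        also have "\<dots> \<longleftrightarrow> (\<exists>a. a = tev s (take n w) \<and> (\<exists>z. z = z + z \<and> z = a + w ! n))"
        proof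
          assume "w ! n = - tev s (take n w)"
          then show "\<exists>a. a = tev s (take n w) \<and> (\<exists>z. z = z + z \<and> z = a + w ! n)"
            by (intro exI[of _ "tev s (take n w)"] exI[of _ 0]) simp
        next
          assume "\<exists>a. a = tev s (take n w) \<and> (\<exists>z. z = z + z \<and> z = a + w ! n)"
          then obtain z where z: "z = z + z" "z = tev s (take n w) + w ! n" by blast
          then have "z = 0" by simp
          then show "w ! n = - tev s (take n w)" using z(2) by (simp add: eq_neg_iff_add_eq_0 add.commute)
        qed
        also have "\<dots> \<longleftrightarrow> sem ?f w" using True by (simp add: m Gt_app[OF lt] nth_append)
        finally show ?thesis using True by simp
      qed (auto simp: Gt_def)
    qed
    ultimately show ?case using fm_def[OF st] by (simp only: E)
  }
qed

definition feq :: "nat \<Rightarrow> tm \<Rightarrow> tm \<Rightarrow> 'a::linordered_field fm" where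
  "feq n s t = Ex (Conj (At (Gt n s) [0..<Suc n]) (At (Gt n t) [0..<Suc n]))"
definition flt :: "nat \<Rightarrow> tm \<Rightarrow> tm \<Rightarrow> 'a::linordered_field fm" where
  "flt n s t = Ex (Ex (Conj (At (Gt n s) ([0..<n] @ [n])) (Conj (At (Gt n t) ([0..<n] @ [Suc n]))
      (At LessS [n, Suc n]))))"
definition fle :: "nat \<Rightarrow> tm \<Rightarrow> tm \<Rightarrow> 'a::linordered_field fm" where
  "fle n s t = Disj (flt n s t) (feq n s t)"

lemma sem_feq[simp]: "length x = n \<Longrightarrow> sem (feq n s t) x = (tev s x = tev t x)"
proof -
  assume l: "length x = n"
  have m: "map (nth (x @ [a])) [0..<Suc n] = x @ [a]" for a
    using l by (simp add: map_nth_upt del: upt_Suc)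
  show ?thesis using l by (simp add: feq_def m Gt_app del: upt_Suc)
qed

lemma sem_flt[simp]: "length x = n \<Longrightarrow> sem (flt n s t) x = (tev s x < tev t x)"
proof -
  assume l: "length x = n"
  have m: "map (nth ((x @ [a]) @ [b])) ([0..<n] @ [n]) = x @ [a]"
     "map (nth ((x @ [a]) @ [b])) ([0..<n] @ [Suc n]) = x @ [b]" for a b
    using l by (auto simp: map_nth_upt nth_append)
  show ?thesis using l by (simp add: flt_def m Gt_app nth_append)
qed

lemma sem_fle[simp]: "length x = n \<Longrightarrow> sem (fle n s t) x = (tev s x \<le> tev t x)"
  by (auto simp: fle_def)

lemma fok_terms:
  assumes "arith_st S" "tok n s" "tok n t"
  shows "fok S B n (feq n s t)" "fok S B n (flt n s t)" "fok S B n (fle n s t)"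
  using assms Gt_def_ok[OF assms(1)] arith_defs[OF assms(1)] arith_defs2[OF assms(1)]
  by (auto simp: feq_def flt_def fle_def)


section \<open>The map psi: M -> (0,1)\<close>

definition psi :: "'a::linordered_field \<Rightarrow> 'a" where
  "psi y = (if 0 \<le> y then (1 + 2 * y) / (2 + 2 * y) else 1 / (2 - 2 * y))"

lemma psi_nonneg: "0 \<le> y \<Longrightarrow> psi y = 1 - 1 / (2 + 2 * y)"
proof -
  assume y: "0 \<le> y"
  have "0 < 2 + 2 * y" using y by (simp add: add_pos_nonneg)
  then have "2 + 2 * y \<noteq> 0" by simp
  then show ?thesis using y by (simp add: psi_def field_simps)
qed

lemma psi_neg: "y < 0 \<Longrightarrow> psi y = 1 / (2 - 2 * y)"
  by (simp add: psi_def)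

lemma psi_bounds: "0 < psi (y::'a::linordered_field)" "psi y < 1"
proof -
  show "0 < psi y"
  proof (cases "0 \<le> y")
    case True
    have "0 < 2 + 2 * y" using True by (simp add: add_pos_nonneg)
    moreover have "0 < 1 + 2 * y" using True by (simp add: add_pos_nonneg)
    ultimately show ?thesis using True by (simp add: psi_def)
  next
    case False
    have "0 < 2 - 2 * y" using False by simp
    then show ?thesis using False by (simp add: psi_def)
  qed
  show "psi y < 1"
  proof (cases "0 \<le> y")
    case True
    have "0 < 2 + 2 * y" using True by (simp add: add_pos_nonneg)
    then show ?thesis using True by (simp add: psi_nonneg)
  next
    case False
    have "2 < 2 - 2 * y" using False by simp
    then have "1 / (2 - 2 * y) < 1 / 2" by (intro divide_strict_left_mono) auto
    then show ?thesis using False by (simp add: psi_def)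
  qed
qed

lemma psi_half: "0 \<le> y \<Longrightarrow> 1/2 \<le> psi (y::'a::linordered_field)" "y < 0 \<Longrightarrow> psi y < 1/2"
proof -
  assume y: "0 \<le> y"
  have "2 \<le> 2 + 2 * y" using y by simp
  then have "1 / (2 + 2 * y) \<le> 1 / 2" by (intro divide_left_mono) auto
  then show "1/2 \<le> psi y" using y by (simp add: psi_nonneg)
next
  assume y: "y < 0"
  have "2 < 2 - 2 * y" using y by simp
  then have "1 / (2 - 2 * y) < 1 / 2" by (intro divide_strict_left_mono) auto
  then show "psi y < 1/2" using y by (simp add: psi_def)
qed

lemma psi_mono: "y < z \<Longrightarrow> psi y < psi (z::'a::linordered_field)"
proof -
  assume yz: "y < z"
  show ?thesis
  proof (cases "0 \<le> y")
    case True
    then have z: "0 \<le> z" using yz by simp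
    have "2 + 2 * y < 2 + 2 * z" using yz by simp
    moreover have "0 < 2 + 2 * y" using True by (simp add: add_pos_nonneg)
    ultimately have "1 / (2 + 2 * z) < 1 / (2 + 2 * y)" by (intro divide_strict_left_mono) auto
    then show ?thesis using True z by (simp add: psi_nonneg)
  next
    case False
    show ?thesis
    proof (cases "0 \<le> z")
      case True
      then show ?thesis using False psi_half[of y] psi_half[of z] by simp
    next
      case F2: False
      have "2 - 2 * z < 2 - 2 * y" using yz by simp
      moreover have "0 < 2 - 2 * z" using F2 by simp
      ultimately have "1 / (2 - 2 * y) < 1 / (2 - 2 * z)" by (intro divide_strict_left_mono) auto
      then show ?thesis using False F2 by (simp add: psi_def)
    qed
  qed
qed

lemma psi_less_iff[simp]: "psi y < psi z \<longleftrightarrow> y < (z::'a::linordered_field)"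
  by (metis linorder_neq_iff order_less_asym psi_mono)

lemma psi_eq_iff[simp]: "psi y = psi z \<longleftrightarrow> y = (z::'a::linordered_field)"
  by (metis linorder_neq_iff order_less_irrefl psi_mono)

lemma psi_le_iff[simp]: "psi y \<le> psi z \<longleftrightarrow> y \<le> (z::'a::linordered_field)"
  by (meson not_le psi_less_iff)

lemma psi_surj: "0 < c \<Longrightarrow> c < 1 \<Longrightarrow> \<exists>y. psi y = (c::'a::linordered_field)"
proof -
  assume c: "0 < c" "c < 1"
  show ?thesis
  proof (cases "1/2 \<le> c")
    case True
    define y where "y = 1 / (2 * (1 - c)) - 1"
    have d: "0 < 2 * (1 - c)" "2 * (1 - c) \<le> 1" using c True by auto
    have "1 \<le> 1 / (2 * (1 - c))" using d by (simp add: le_divide_eq)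
    then have y0: "0 \<le> y" by (simp add: y_def)
    have "2 + 2 * y = 1 / (1 - c)" using d by (simp add: y_def field_simps)
    then have "psi y = c" using y0 c by (simp add: psi_nonneg)
    then show ?thesis by blast
  next
    case False
    define y where "y = 1 - 1 / (2 * c)"
    have "1 < 1 / (2 * c)" using c False by (simp add: less_divide_eq)
    then have y0: "y < 0" by (simp add: y_def)
    have "2 - 2 * y = 1 / c" using c by (simp add: y_def field_simps)
    then have "psi y = c" using y0 c by (simp add: psi_neg)
    then show ?thesis by blast
  qed
qed

lemma eless_irrefl[simp]: "\<not> eless a a"
  by (cases a) auto

lemma eless_trans: "eless a b \<Longrightarrow> eless b c \<Longrightarrow> eless a c"
  by (cases a; cases b; cases c) auto

lemma eless_total: "eless a b \<or> a = b \<or> eless b a"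
  by (cases a; cases b) auto

lemma eless_asym: "eless a b \<Longrightarrow> \<not> eless b a"
  using eless_trans eless_irrefl by blast

definition psie :: "'a::linordered_field ext \<Rightarrow> 'a" where
  "psie e = (case e of MInf \<Rightarrow> 0 | Fin y \<Rightarrow> psi y | PInf \<Rightarrow> 1)"

lemma psie_simps[simp]: "psie MInf = 0" "psie PInf = 1" "psie (Fin y) = psi y"
  by (simp_all add: psie_def)

lemma psie_mono: "eless a b \<Longrightarrow> psie a < psie b"
  by (cases a; cases b) (auto simp: psi_bounds)

lemma psie_less_iff: "psie a < psie b \<longleftrightarrow> eless a b"
  by (metis eless_total order_less_asym order_less_irrefl psie_mono)

lemma psie_bounds: "0 \<le> psie a" "psie a \<le> 1"
  by (cases a; simp add: psi_bounds less_imp_le)+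

lemma eivl_iff: "y \<in> eivl l u \<longleftrightarrow> eless l (Fin y) \<and> eless (Fin y) u"
  by (simp add: eivl_def)

lemma psi_eivl: "y \<in> eivl l u \<longleftrightarrow> psie l < psi y \<and> psi y < psie u"
  by (simp add: eivl_iff psie_less_iff[symmetric])

lemma psi_onto_eivl:
  assumes "psie l < c" "c < psie u"
  shows "\<exists>y\<in>eivl l u. psi y = c"
proof -
  have "0 < c" "c < 1" using assms psie_bounds[of l] psie_bounds[of u] by auto
  then obtain y where "psi y = c" using psi_surj by blast
  then show ?thesis using assms by (auto simp: psi_eivl)
qed

lemma eivl_ne: "eless l u \<Longrightarrow> \<exists>y. y \<in> eivl l (u::'a::linordered_field ext)"
proof -
  assume "eless l u"
  then have "psie l < psie u" by (simp add: psie_less_iff)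
  then obtain c where "psie l < c" "c < psie u" using dense by blast
  then show ?thesis using psi_onto_eivl by blast
qed

lemma eivl_two: "eless l u \<Longrightarrow> \<exists>y z. y \<in> eivl l u \<and> z \<in> eivl l u \<and> y < (z::'a::linordered_field)"
proof -
  assume "eless l u"
  then have "psie l < psie u" by (simp add: psie_less_iff)
  then obtain c where c: "psie l < c" "c < psie u" using dense by blast
  then obtain d where d: "c < d" "d < psie u" using dense by blast
  obtain y where y: "y \<in> eivl l u" "psi y = c" using psi_onto_eivl c by blast
  have "psie l < d" using c d by simp
  then obtain z where z: "z \<in> eivl l u" "psi z = d" using psi_onto_eivl d by blast
  have "y < z" using y z d by (metis psi_less_iff)
  then show ?thesis using y z by blast
qed

lemma eivl_below: "y \<in> eivl l u \<Longrightarrow> \<exists>y'\<in>eivl l u. y' < (y::'a::linordered_field)"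
proof -
  assume y: "y \<in> eivl l u"
  then have "psie l < psi y" by (simp add: psi_eivl)
  then obtain c where c: "psie l < c" "c < psi y" using dense by blast
  then obtain y' where "y' \<in> eivl l u" "psi y' = c" using psi_onto_eivl[of l c u] y
    by (meson order.strict_trans psi_eivl)
  then show ?thesis using c by (metis psi_less_iff)
qed

lemma eivl_above: "y \<in> eivl l u \<Longrightarrow> \<exists>y'\<in>eivl l u. y < (y'::'a::linordered_field)"
proof -
  assume y: "y \<in> eivl l u"
  then have "psi y < psie u" by (simp add: psi_eivl)
  then obtain c where c: "psi y < c" "c < psie u" using dense by blast
  then obtain y' where "y' \<in> eivl l u" "psi y' = c" using psi_onto_eivl[of l c u] y
    by (meson order.strict_trans psi_eivl)
  then show ?thesis using c by (metis psi_less_iff)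
qed

definition PsiS :: "'a::linordered_field list set" where "PsiS = {[y, psi y] | y. True}"

lemma PsiS_iff[simp]: "[y, p] \<in> PsiS \<longleftrightarrow> p = psi y"
  by (auto simp: PsiS_def)

lemma psi_char: "p = psi y \<longleftrightarrow>
   (0 \<le> y \<and> p * (2 + 2 * y) = 1 + 2 * y) \<or> (y < 0 \<and> p * (2 - 2 * y) = (1::'a::linordered_field))"
proof (cases "0 \<le> y")
  case True
  have "0 < 2 + 2 * y" using True by (simp add: add_pos_nonneg)
  then show ?thesis using True by (auto simp: psi_def field_simps)
next
  case False
  have "0 < 2 - 2 * y" using False by simp
  then show ?thesis using False by (auto simp: psi_def field_simps)
qed

lemma PsiS_def_ok:
  assumes ar: "arith_st S"
  shows "defA S B 2 (PsiS :: 'a::linordered_field list set)"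
proof -
  let ?two = "Pl C1 C1"
  let ?f = "Disj (Conj (fle 2 C0 (V 0)) (feq 2 (Mu (V 1) (Pl ?two (Mu ?two (V 0)))) (Pl C1 (Mu ?two (V 0)))))
              (Conj (flt 2 (V 0) C0) (feq 2 (Mu (V 1) (Pl ?two (Ng (Mu ?two (V 0))))) C1)) :: 'a fm"
  have "fok S B 2 ?f" using fok_terms[OF ar] by simp
  then have d: "defA S B 2 {x \<in> tuples 2. sem ?f x}" by (rule fm_def[OF arith_is[OF ar]])
  have "{x \<in> tuples 2. sem ?f x} = PsiS"
  proof (rule set_eqI)
    fix x :: "'a list"
    show "x \<in> {x \<in> tuples 2. sem ?f x} \<longleftrightarrow> x \<in> PsiS"
    proof (cases "length x = 2")
      case True
      then obtain y p where x: "x = [y, p]"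
        by (metis (no_types, opaque_lifting) One_nat_def Suc_1 length_0_conv length_Suc_conv)
      show ?thesis using x psi_char[of p y] by (simp add: algebra_simps)
    next
      case False
      then show ?thesis by (auto simp: PsiS_def)
    qed
  qed
  then show ?thesis using d by simp
qed


lemma box_mem: "y \<in> box lo hi \<longleftrightarrow> length y = length lo \<and> length hi = length lo \<and>
   (\<forall>i<length lo. lo ! i < y ! i \<and> y ! i < hi ! i)"
  by (simp add: box_def)

lemma box_around: "x \<in> box (map (\<lambda>v. v - 1) x) (map (\<lambda>v. v + (1::'a::linordered_field)) x)"
  by (auto simp: box_mem)

definition lmax :: "'a::linorder list \<Rightarrow> 'a list \<Rightarrow> 'a list" where
  "lmax xs ys = map (\<lambda>(a, b). max a b) (zip xs ys)"
definition lmin :: "'a::linorder list \<Rightarrow> 'a list \<Rightarrow> 'a list" where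
  "lmin xs ys = map (\<lambda>(a, b). min a b) (zip xs ys)"

lemma box_inter:
  assumes "x \<in> box lo1 hi1" "x \<in> box lo2 hi2"
  shows "x \<in> box (lmax lo1 lo2) (lmin hi1 hi2)" "box (lmax lo1 lo2) (lmin hi1 hi2) \<subseteq> box lo1 hi1 \<inter> box lo2 hi2"
  using assms by (auto simp: box_mem lmax_def lmin_def)

lemma box_snoc:
  assumes "length lo = length x" "length hi = length x"
  shows "x @ [v] \<in> box (lo @ [l]) (hi @ [h]) \<longleftrightarrow> x \<in> box lo hi \<and> l < v \<and> v < h"
proof -
  have "(\<forall>i<Suc (length x). (lo @ [l]) ! i < (x @ [v]) ! i \<and> (x @ [v]) ! i < (hi @ [h]) ! i)
     \<longleftrightarrow> (\<forall>i<length x. lo ! i < x ! i \<and> x ! i < hi ! i) \<and> l < v \<and> v < h"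
    using assms by (auto simp: nth_append less_Suc_eq)
  then show ?thesis using assms by (simp add: box_mem)
qed

definition nb :: "'a::linorder list set \<Rightarrow> 'a list \<Rightarrow> ('a list \<Rightarrow> bool) \<Rightarrow> bool" where
  "nb D x P \<longleftrightarrow> (\<exists>lo hi. x \<in> box lo hi \<and> (\<forall>y\<in>D \<inter> box lo hi. P y))"

lemma nb_triv: "(\<forall>y\<in>D. P y) \<Longrightarrow> nb D x (P::'a::linordered_field list \<Rightarrow> bool)"
  unfolding nb_def using box_around by blast

lemma nb_conj: "nb D x P \<Longrightarrow> nb D x Q \<Longrightarrow> nb D x (\<lambda>y. P y \<and> Q y)"
  unfolding nb_def
proof (elim exE conjE)
  fix lo1 hi1 lo2 hi2
  assume a: "x \<in> box lo1 hi1" "\<forall>y\<in>D \<inter> box lo1 hi1. P y" "x \<in> box lo2 hi2" "\<forall>y\<in>D \<inter> box lo2 hi2. Q y"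
  show "\<exists>lo hi. x \<in> box lo hi \<and> (\<forall>y\<in>D \<inter> box lo hi. P y \<and> Q y)"
    using box_inter[OF a(1) a(3)] a(2,4) by blast
qed

lemma nb_mono: "nb D x P \<Longrightarrow> (\<And>y. y \<in> D \<Longrightarrow> P y \<Longrightarrow> Q y) \<Longrightarrow> nb D x Q"
  unfolding nb_def by blast

lemma nb_sub: "nb D x P \<Longrightarrow> E \<subseteq> D \<Longrightarrow> nb E x P"
  unfolding nb_def by blast

lemma nb_all:
  fixes x :: "'a::linordered_field list" and N :: nat
  shows "(\<And>i. i < N \<Longrightarrow> nb D x (P i)) \<Longrightarrow> nb D x (\<lambda>y. \<forall>i<N. P i y :: bool)"
proof (induction N)
  case 0
  then show ?case by (simp add: nb_triv)
next
  case (Suc N)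
  have "nb D x (\<lambda>y. (\<forall>i<N. P i y) \<and> P N y)" using Suc by (intro nb_conj) auto
  then show ?case by (rule nb_mono) (auto simp: less_Suc_eq)
qed

lemma nb_pre:
  fixes x :: "'a::linordered_field list"
  assumes x: "x \<in> E" and E: "E \<subseteq> tuples n" and r: "r \<le> n"
    and ED: "\<forall>y\<in>E. g @ take r y \<in> D" and N: "nb D (g @ take r x) P"
  shows "nb E x (\<lambda>y. P (g @ take r y))"
proof -
  obtain lo hi where lh: "g @ take r x \<in> box lo hi" "\<forall>y\<in>D \<inter> box lo hi. P y"
    using N unfolding nb_def by blast
  let ?m = "length g"
  define lo' where "lo' = drop ?m lo @ map (\<lambda>v. v - 1) (drop r x)"
  define hi' where "hi' = drop ?m hi @ map (\<lambda>v. v + 1) (drop r x)"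
  have lx: "length x = n" using x E by auto
  have ll: "length lo = ?m + r" "length hi = ?m + r" using lh(1) lx r by (auto simp: box_mem)
  have L1: "length x = length lo'" "length hi' = length lo'" using ll lx r by (auto simp: lo'_def hi'_def)
  have "\<forall>i<length lo'. lo' ! i < x ! i \<and> x ! i < hi' ! i"
  proof (intro allI impI)
    fix i assume i: "i < length lo'"
    show "lo' ! i < x ! i \<and> x ! i < hi' ! i"
    proof (cases "i < r")
      case True
      have "?m + i < length lo" using True ll by simp
      then have "lo ! (?m + i) < (g @ take r x) ! (?m + i) \<and> (g @ take r x) ! (?m + i) < hi ! (?m + i)"
        using lh(1) unfolding box_mem by blast
      moreover have "(g @ take r x) ! (?m + i) = x ! i" using True by (simp add: nth_append)
      ultimately have "lo ! (?m + i) < x ! i \<and> x ! i < hi ! (?m + i)" by simp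
      then show ?thesis using True ll lx r by (auto simp: lo'_def hi'_def nth_append)
    next
      case False
      then show ?thesis using i ll lx r by (auto simp: lo'_def hi'_def nth_append)
    qed
  qed
  then have "x \<in> box lo' hi'" using L1 by (simp add: box_mem)
  moreover have "P (g @ take r y)" if y: "y \<in> E \<inter> box lo' hi'" for y
  proof -
    have ly: "length y = n" using y E by auto
    have L2: "length (g @ take r y) = length lo" "length hi = length lo" using ll ly r by auto
    have "\<forall>i<length lo. lo ! i < (g @ take r y) ! i \<and> (g @ take r y) ! i < hi ! i"
    proof (intro allI impI)
      fix i assume i: "i < length lo"
      show "lo ! i < (g @ take r y) ! i \<and> (g @ take r y) ! i < hi ! i"
      proof (cases "i < ?m")
        case True
        have "lo ! i < (g @ take r x) ! i \<and> (g @ take r x) ! i < hi ! i" using lh(1) i unfolding box_mem by blast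
        then show ?thesis using True by (simp add: nth_append)
      next
        case False
        have "i - ?m < r" using i False ll by auto
        have yb: "\<forall>j<length lo'. lo' ! j < y ! j \<and> y ! j < hi' ! j" using y by (simp add: box_mem)
        have "i - ?m < length lo'" using \<open>i - ?m < r\<close> ll lx r by (simp add: lo'_def)
        then have "lo' ! (i - ?m) < y ! (i - ?m) \<and> y ! (i - ?m) < hi' ! (i - ?m)" using yb by blast
        then show ?thesis using False ll r \<open>i - ?m < r\<close> by (auto simp: lo'_def hi'_def nth_append)
      qed
    qed
    then have "g @ take r y \<in> box lo hi" using L2 by (simp add: box_mem)
    then show ?thesis using lh(2) ED y by blast
  qed
  ultimately show ?thesis unfolding nb_def by blast
qed

section \<open>Continuity\<close>

definition ctn :: "'a::linorder list set \<Rightarrow> ('a list \<Rightarrow> 'a) \<Rightarrow> bool" where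
  "ctn D f \<longleftrightarrow> econt_on D (\<lambda>x. Fin (f x))"

lemma econt_iff: "econt_on D h \<longleftrightarrow> (\<forall>x\<in>D. \<forall>c.
     (eless (Fin c) (h x) \<longrightarrow> nb D x (\<lambda>y. eless (Fin c) (h y))) \<and>
     (eless (h x) (Fin c) \<longrightarrow> nb D x (\<lambda>y. eless (h y) (Fin c))))"
  unfolding econt_on_def nb_def by blast

lemma ctn_iff: "ctn D f \<longleftrightarrow> (\<forall>x\<in>D. \<forall>c.
     (c < f x \<longrightarrow> nb D x (\<lambda>y. c < f y)) \<and> (f x < c \<longrightarrow> nb D x (\<lambda>y. f y < c)))"
  unfolding ctn_def econt_iff by simp

lemma econt_const: "econt_on D (\<lambda>x. e :: 'a::linordered_field ext)"
  unfolding econt_iff by (auto intro: nb_triv)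

lemma ctn_const: "ctn D (\<lambda>x. c :: 'a::linordered_field)"
  unfolding ctn_def by (rule econt_const)

lemma ctn_coord:
  assumes "D \<subseteq> tuples n" "i < n"
  shows "ctn D (\<lambda>x. x ! i :: 'a::linordered_field)"
  unfolding ctn_iff
proof (intro ballI allI conjI impI)
  fix x c assume x: "x \<in> D"
  have lx: "length x = n" using x assms by auto
  {
    assume c: "c < x ! i"
    let ?lo = "(map (\<lambda>v. v - 1) x)[i := c]" and ?hi = "map (\<lambda>v. v + 1) x"
    have "x \<in> box ?lo ?hi" using c lx assms(2) by (auto simp: box_mem nth_list_update)
    moreover have "\<forall>y\<in>D \<inter> box ?lo ?hi. c < y ! i" using lx assms(2)
      by (auto simp: box_mem) (metis nth_list_update_eq length_map)
    ultimately show "nb D x (\<lambda>y. c < y ! i)" unfolding nb_def by blast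
  next
    assume c: "x ! i < c"
    let ?lo = "map (\<lambda>v. v - 1) x" and ?hi = "(map (\<lambda>v. v + 1) x)[i := c]"
    have "x \<in> box ?lo ?hi" using c lx assms(2) by (auto simp: box_mem nth_list_update)
    moreover have "\<forall>y\<in>D \<inter> box ?lo ?hi. y ! i < c" using lx assms(2)
      by (auto simp: box_mem) (metis nth_list_update_eq length_map)
    ultimately show "nb D x (\<lambda>y. y ! i < c)" unfolding nb_def by blast
  }
qed

lemma econt_psie:
  assumes h: "econt_on D h"
  shows "ctn D (\<lambda>x. psie (h x) :: 'a::linordered_field)"
  unfolding ctn_iff
proof (intro ballI allI conjI impI)
  fix x c assume x: "x \<in> D"
  note hh = h[unfolded econt_iff, rule_format, OF x]
  {
    assume c: "c < psie (h x)"
    show "nb D x (\<lambda>y. c < psie (h y))"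
    proof (cases "c < 0")
      case True
      then show ?thesis using psie_bounds by (intro nb_triv) (auto intro: less_le_trans)
    next
      case False
    define c1 where "c1 = max c (psie (h x) / 2)"
    have c1: "c \<le> c1" "c1 < psie (h x)" "0 < c1"
      using c False psie_bounds[of "h x"] by (auto simp: c1_def)
    have "c1 < 1" using c1 psie_bounds[of "h x"] by simp
    then obtain d where d: "psi d = c1" using psi_surj c1 by blast
    have "eless (Fin d) (h x)" using c1(2) d psie_less_iff[of "Fin d" "h x"] by simp
    then have "nb D x (\<lambda>y. eless (Fin d) (h y))" using hh by blast
    then show "nb D x (\<lambda>y. c < psie (h y))"
    proof (rule nb_mono)
      fix y assume "eless (Fin d) (h y)"
      then have "psie (Fin d) < psie (h y)" by (rule psie_mono)
      then show "c < psie (h y)" using c1(1) d by simp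
    qed
    qed
  next
    assume c: "psie (h x) < c"
    show "nb D x (\<lambda>y. psie (h y) < c)"
    proof (cases "1 < c")
      case True
      then show ?thesis using psie_bounds by (intro nb_triv) (auto intro: le_less_trans)
    next
      case False
    define c1 where "c1 = min c ((psie (h x) + 1) / 2)"
    have p1: "psie (h x) < 1" using c False by simp
    then have p2: "(psie (h x) + 1) / 2 < 1" "psie (h x) < (psie (h x) + 1) / 2" by (simp_all add: field_simps)
    have c1a: "c1 \<le> (psie (h x) + 1) / 2" unfolding c1_def by (rule min.cobounded2)
    have c1: "c1 \<le> c" "psie (h x) < c1" "c1 < 1"
      using c p2 c1a by (auto simp: c1_def)
    have "0 < c1" using c1 psie_bounds[of "h x"] by simp
    then obtain d where d: "psi d = c1" using psi_surj c1 by blast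
    have "eless (h x) (Fin d)" using c1(2) d psie_less_iff[of "h x" "Fin d"] by simp
    then have "nb D x (\<lambda>y. eless (h y) (Fin d))" using hh by blast
    then show "nb D x (\<lambda>y. psie (h y) < c)"
    proof (rule nb_mono)
      fix y assume "eless (h y) (Fin d)"
      then have "psie (h y) < psie (Fin d)" by (rule psie_mono)
      then show "psie (h y) < c" using c1(1) d by simp
    qed
    qed
  }
qed

lemma ctn_psi: "ctn D f \<Longrightarrow> ctn D (\<lambda>x. psi (f x) :: 'a::linordered_field)"
  using econt_psie[of D "\<lambda>x. Fin (f x)"] unfolding ctn_def by simp

lemma ctn_near:
  assumes "ctn D f" "x \<in> D" "0 < (d::'a::linordered_field)"
  shows "nb D x (\<lambda>y. f x - d < f y \<and> f y < f x + d)"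
proof -
  have "nb D x (\<lambda>y. f x - d < f y)" using assms unfolding ctn_iff by auto
  moreover have "nb D x (\<lambda>y. f y < f x + d)" using assms unfolding ctn_iff by auto
  ultimately show ?thesis by (rule nb_conj)
qed

lemma alg_low:
  fixes a p b c d a' p' b' :: "'a::linordered_field"
  assumes "0 < c" "c * (b - a) < p - a" "d = ((p - a) - c * (b - a)) / (2 * (1 + c))"
    "a - d < a'" "a' < a + d" "p - d < p'" "b' < b + d" "a' < p'" "p' < b'"
  shows "c < (p' - a') / (b' - a')"
proof -
  have e: "2 * d * (1 + c) = (p - a) - c * (b - a)" using assms(1,3) by (simp add: field_simps)
  have h1: "b' - a' < (b - a) + 2 * d" using assms(4,7) by simp
  have "c * (b' - a') < c * ((b - a) + 2 * d)" using mult_strict_left_mono[OF h1 assms(1)] .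
  also have "\<dots> = (p - a) - 2 * d" using e by (simp add: algebra_simps)
  also have "\<dots> < p' - a'" using assms(5,6) by simp
  finally have "c * (b' - a') < p' - a'" .
  then show ?thesis using assms(8,9) by (simp add: less_divide_eq mult.commute)
qed

lemma alg_high:
  fixes a p b c d a' p' b' :: "'a::linordered_field"
  assumes "0 < c" "p - a < c * (b - a)" "d = (c * (b - a) - (p - a)) / (2 * (1 + c))"
    "a - d < a'" "a' < a + d" "p' < p + d" "b - d < b'" "a' < p'" "p' < b'"
  shows "(p' - a') / (b' - a') < c"
proof -
  have e: "2 * d * (1 + c) = c * (b - a) - (p - a)" using assms(1,3) by (simp add: field_simps)
  have "p' - a' < (p - a) + 2 * d" using assms(4,6) by simp
  also have "\<dots> = c * ((b - a) - 2 * d)" using e by (simp add: algebra_simps)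
  also have "\<dots> < c * (b' - a')"
  proof -
    have h1: "(b - a) - 2 * d < b' - a'" using assms(5,7) by simp
    show ?thesis using mult_strict_left_mono[OF h1 assms(1)] .
  qed
  finally have "p' - a' < c * (b' - a')" .
  then show ?thesis using assms(8,9) by (simp add: divide_less_eq mult.commute)
qed

lemma ctn_quot:
  fixes p a b :: "'a::linordered_field list \<Rightarrow> 'a"
  assumes cp: "ctn D p" and ca: "ctn D a" and cb: "ctn D b"
    and ord: "\<forall>x\<in>D. a x < p x \<and> p x < b x"
  shows "ctn D (\<lambda>x. (p x - a x) / (b x - a x))"
  unfolding ctn_iff
proof (intro ballI allI conjI impI)
  fix x c assume x: "x \<in> D"
  have q01: "0 < (p y - a y) / (b y - a y)" "(p y - a y) / (b y - a y) < 1" if "y \<in> D" for y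
    using ord that by (auto simp: divide_less_eq)
  {
    assume c: "c < (p x - a x) / (b x - a x)"
    show "nb D x (\<lambda>y. c < (p y - a y) / (b y - a y))"
    proof (cases "c \<le> 0")
      case True
      then show ?thesis using q01 by (intro nb_triv) (auto intro: le_less_trans)
    next
      case False
      have bx: "0 < b x - a x" using ord x by auto
      have cc: "c * (b x - a x) < p x - a x" using c bx by (simp add: less_divide_eq)
      define d where "d = ((p x - a x) - c * (b x - a x)) / (2 * (1 + c))"
      have d: "0 < d" using cc False by (simp add: d_def)
      have "nb D x (\<lambda>y. (a x - d < a y \<and> a y < a x + d) \<and> (p x - d < p y \<and> p y < p x + d)
                   \<and> (b x - d < b y \<and> b y < b x + d))"
        by (intro nb_conj ctn_near[OF _ x d] ca cp cb)
      then show ?thesis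
        by (rule nb_mono) (use ord False cc in \<open>auto intro!: alg_low[OF _ _ d_def]\<close>)
    qed
  next
    assume c: "(p x - a x) / (b x - a x) < c"
    show "nb D x (\<lambda>y. (p y - a y) / (b y - a y) < c)"
    proof (cases "1 \<le> c")
      case True
      then show ?thesis using q01 by (intro nb_triv) (auto intro: less_le_trans)
    next
      case False
      have bx: "0 < b x - a x" using ord x by auto
      have c0: "0 < c" using q01[OF x] c by simp
      have cc: "p x - a x < c * (b x - a x)" using c bx by (simp add: divide_less_eq)
      define d where "d = (c * (b x - a x) - (p x - a x)) / (2 * (1 + c))"
      have d: "0 < d" using cc c0 by (simp add: d_def)
      have "nb D x (\<lambda>y. (a x - d < a y \<and> a y < a x + d) \<and> (p x - d < p y \<and> p y < p x + d)
                   \<and> (b x - d < b y \<and> b y < b x + d))"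
        by (intro nb_conj ctn_near[OF _ x d] ca cp cb)
      then show ?thesis
        by (rule nb_mono) (use ord c0 cc in \<open>auto intro!: alg_high[OF _ _ d_def]\<close>)
    qed
  }
qed

lemma ctn_pre:
  fixes f :: "'a::linordered_field list \<Rightarrow> 'a"
  assumes "ctn D f" "E \<subseteq> tuples n" "r \<le> n" "\<forall>y\<in>E. g @ take r y \<in> D"
  shows "ctn E (\<lambda>y. f (g @ take r y))"
  unfolding ctn_iff
proof (intro ballI allI conjI impI)
  fix x c assume x: "x \<in> E"
  have xD: "g @ take r x \<in> D" using assms x by blast
  show "c < f (g @ take r x) \<Longrightarrow> nb E x (\<lambda>y. c < f (g @ take r y))"
    using assms(1) xD unfolding ctn_iff by (intro nb_pre[OF x assms(2,3,4), of "\<lambda>z. c < f z"]) auto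
  show "f (g @ take r x) < c \<Longrightarrow> nb E x (\<lambda>y. f (g @ take r y) < c)"
    using assms(1) xD unfolding ctn_iff by (intro nb_pre[OF x assms(2,3,4), of "\<lambda>z. f z < c"]) auto
qed

lemma econt_pre:
  fixes h :: "'a::linordered_field list \<Rightarrow> 'a ext"
  assumes "econt_on D h" "E \<subseteq> tuples n" "r \<le> n" "\<forall>y\<in>E. g @ take r y \<in> D"
  shows "econt_on E (\<lambda>y. h (g @ take r y))"
  unfolding econt_iff
proof (intro ballI allI conjI impI)
  fix x c assume x: "x \<in> E"
  have xD: "g @ take r x \<in> D" using assms x by blast
  show "eless (Fin c) (h (g @ take r x)) \<Longrightarrow> nb E x (\<lambda>y. eless (Fin c) (h (g @ take r y)))"
    using assms(1) xD unfolding econt_iff by (intro nb_pre[OF x assms(2,3,4), of "\<lambda>z. eless (Fin c) (h z)"]) auto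
  show "eless (h (g @ take r x)) (Fin c) \<Longrightarrow> nb E x (\<lambda>y. eless (h (g @ take r y)) (Fin c))"
    using assms(1) xD unfolding econt_iff by (intro nb_pre[OF x assms(2,3,4), of "\<lambda>z. eless (h z) (Fin c)"]) auto
qed

lemma bound_fn_econt: "bound_fn SL n D h \<Longrightarrow> econt_on D (h :: 'a::linordered_field list \<Rightarrow> 'a ext)"
  unfolding bound_fn_def
proof (elim disjE conjE)
  assume "\<forall>x\<in>D. h x = MInf"
  then show "econt_on D h" unfolding econt_iff by (auto intro!: nb_triv)
next
  assume "\<forall>x\<in>D. h x = PInf"
  then show "econt_on D h" unfolding econt_iff by (auto intro!: nb_triv)
qed


section \<open>Cells\<close>

lemma snoc_tuples: "length w = Suc n \<Longrightarrow> w = take n w @ [last w]"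
  by (metis append_butlast_last_id butlast_conv_take diff_Suc_1 list.size(3) nat.distinct(1))

lemma cell_props:
  fixes C :: "'a::linordered_field list set"
  shows "cell SL n C \<Longrightarrow> C \<noteq> {} \<and> C \<subseteq> tuples n"
proof (induction n arbitrary: C)
  case 0
  then show ?case by auto
next
  case (Suc n)
  from Suc.prems show ?case
  proof (simp only: cell.simps, elim disjE exE conjE)
    fix D f assume D: "cell SL n D" and C: "C = {x @ [f x] | x. x \<in> D}"
    obtain x where "x \<in> D" using Suc.IH[OF D] by blast
    then show ?thesis using C Suc.IH[OF D] by auto
  next
    fix D h1 h2 assume D: "cell SL n D" and lt: "\<forall>x\<in>D. eless (h1 x) (h2 x)"
      and C: "C = {x @ [y] | x y. x \<in> D \<and> y \<in> eivl (h1 x) (h2 x)}"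
    obtain x where x: "x \<in> D" using Suc.IH[OF D] by blast
    obtain y where "y \<in> eivl (h1 x) (h2 x)" using eivl_ne lt x by blast
    then have "x @ [y] \<in> C" using C x by blast
    then show ?thesis using C Suc.IH[OF D] by auto
  qed
qed

lemma cell_SucE:
  fixes C :: "'a::linordered_field list set"
  assumes "cell SL (Suc n) C"
  obtains (graph) D f where "cell SL n D" "take n ` C = D" "\<forall>x\<in>D. {y. x @ [y] \<in> C} = {f x}"
  | (ivl) D h1 h2 where "cell SL n D" "take n ` C = D" "bound_fn SL n D h1" "bound_fn SL n D h2"
      "\<forall>x\<in>D. eless (h1 x) (h2 x) \<and> {y. x @ [y] \<in> C} = eivl (h1 x) (h2 x)"
  using assms
proof (simp only: cell.simps, elim disjE exE conjE)
  fix D f assume D: "cell SL n D" and C: "C = {x @ [f x] | x. x \<in> D}"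
  have Dt: "D \<subseteq> tuples n" using cell_props[OF D] by simp
  have tk: "take n ` C = D" using C Dt by (force simp: image_iff)
  have fb: "\<forall>x\<in>D. {y. x @ [y] \<in> C} = {f x}" using C Dt by auto
  show thesis by (rule graph[OF D tk fb])
next
  fix D h1 h2 assume D: "cell SL n D" and b: "bound_fn SL n D h1" "bound_fn SL n D h2"
    and lt: "\<forall>x\<in>D. eless (h1 x) (h2 x)"
    and C: "C = {x @ [y] | x y. x \<in> D \<and> y \<in> eivl (h1 x) (h2 x)}"
  have Dt: "D \<subseteq> tuples n" using cell_props[OF D] by simp
  have tk: "take n ` C = D"
  proof
    show "take n ` C \<subseteq> D" using C Dt by auto
    show "D \<subseteq> take n ` C"
    proof
      fix x assume x: "x \<in> D"
      obtain y where "y \<in> eivl (h1 x) (h2 x)" using eivl_ne lt x by blast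
      then have "x @ [y] \<in> C" using C x by blast
      then show "x \<in> take n ` C" using x Dt by (force simp: image_iff)
    qed
  qed
  have fb: "\<forall>x\<in>D. {y. x @ [y] \<in> C} = eivl (h1 x) (h2 x)" using C Dt by auto
  have "\<forall>x\<in>D. eless (h1 x) (h2 x) \<and> {y. x @ [y] \<in> C} = eivl (h1 x) (h2 x)" using lt fb by blast
  then show thesis by (rule ivl[OF D tk b(1) b(2)])
qed

lemma cell_take:
  fixes C :: "'a::linordered_field list set"
  shows "cell SL (n + p) C \<Longrightarrow> cell SL n (take n ` C)"
proof (induction p arbitrary: C)
  case 0
  have "C \<subseteq> tuples n" using cell_props[OF 0[simplified]] by simp
  then have "take n ` C = C" by (force simp: image_iff)
  then show ?case using 0 by simp
next
  case (Suc p)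
  have c: "cell SL (Suc (n + p)) C" using Suc.prems by simp
  have "cell SL (n + p) (take (n + p) ` C)"
    by (rule cell_SucE[OF c]) auto
  from Suc.IH[OF this] show ?case by (simp add: image_image min_def)
qed

section \<open>Small sets\<close>

lemma large_mono: "large SL n X \<Longrightarrow> X \<subseteq> Y \<Longrightarrow> large SL n Y"
proof -
  assume l: "large SL n X" and XY: "X \<subseteq> Y"
  then obtain m f a b where A: "defA SL UNIV (n * m + 1) {x @ [f x] | x. length x = n * m}" "a < b"
    "{a<..<b} \<subseteq> {f (concat xs) | xs. length xs = m \<and> set xs \<subseteq> X}"
    unfolding large_def by blast
  have "{f (concat xs) | xs. length xs = m \<and> set xs \<subseteq> X} \<subseteq> {f (concat xs) | xs. length xs = m \<and> set xs \<subseteq> Y}"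
    using XY by blast
  then have "{a<..<b} \<subseteq> {f (concat xs) | xs. length xs = m \<and> set xs \<subseteq> Y}" using A(3) by (rule order.trans[rotated])
  then show ?thesis unfolding large_def using A(1,2)
    by (intro exI[of _ m] exI[of _ f] conjI exI[of _ a] exI[of _ b])
qed

lemma small_mono: "small SL n Y \<Longrightarrow> X \<subseteq> Y \<Longrightarrow> small SL n X"
  unfolding small_def using large_mono by blast

lemma eivl_convex: "p \<in> eivl l u \<Longrightarrow> q \<in> eivl l u \<Longrightarrow> p < t \<Longrightarrow> t < q \<Longrightarrow> t \<in> eivl l u"
  by (cases l; cases u) (auto simp: eivl_iff)

lemma graph_mem: "x @ [v] \<in> {x @ [f x] | x. length x = m} \<longleftrightarrow> length x = m \<and> v = f x"
  by auto

lemma small_image: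
  fixes X :: "'a::linordered_field set"
  assumes st: "is_structure SL" and sm: "small SL 1 {[y] | y. y \<in> X}" and inj: "inj_on \<tau> X"
    and dt: "defA SL UNIV 2 {[y, \<tau>' y] | y. True}" and ag: "\<forall>y\<in>X. \<tau>' y = \<tau> y"
  shows "small SL 1 {[\<tau> y] | y. y \<in> X}"
  unfolding small_def
proof
  assume "large SL 1 {[\<tau> y] | y. y \<in> X}"
  then obtain m f a b where gf: "defA SL UNIV (m + 1) {x @ [f x] | x. length x = m}"
    and ab: "a < b" "{a<..<b} \<subseteq> {f (concat xs) | xs. length xs = m \<and> set xs \<subseteq> {[\<tau> y] | y. y \<in> X}}"
    unfolding large_def by auto
  define f' where "f' zs = f (map \<tau>' zs)" for zs
  let ?Tau = "{[y, \<tau>' y] | y. True}"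
  let ?Gf = "{x @ [f x] | x. length x = m}"
  let ?phi = "ExN m (Conj (BigConj (map (\<lambda>i. At ?Tau [i, Suc m + i]) [0..<m]))
                (At ?Gf ([Suc m..<Suc m + m] @ [m])))"
  have f1: "\<forall>f\<in>set (map (\<lambda>i. At ?Tau [i, Suc m + i]) [0..<m]). fok SL UNIV (m + 1 + m) f"
    using dt by (auto simp: numeral_2_eq_2)
  have len: "length ([Suc m..<Suc m + m] @ [m]) = m + 1" by simp
  have f2: "fok SL UNIV (m + 1 + m) (At ?Gf ([Suc m..<Suc m + m] @ [m]))"
    unfolding fok.simps len using gf by auto
  have "fok SL UNIV (m + 1) ?phi"
    using f2 fok_BigConj[OF st f1] by simp
  then have d: "defA SL UNIV (m + 1) {w \<in> tuples (m + 1). sem ?phi w}" by (rule fm_def[OF st])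
  have "{w \<in> tuples (m + 1). sem ?phi w} = {x @ [f' x] | x. length x = m}"
  proof (rule set_eqI)
    fix w :: "'a list"
    show "w \<in> {w \<in> tuples (m + 1). sem ?phi w} \<longleftrightarrow> w \<in> {x @ [f' x] | x. length x = m}"
    proof (cases "length w = m + 1")
      case True
      then have w: "w = take m w @ [last w]" using snoc_tuples[of w m] by simp
      define zs where "zs = take m w"
      define v where "v = last w"
      have lz: "length zs = m" using True by (simp add: zs_def)
      have wz: "w = zs @ [v]" using w by (simp add: zs_def v_def)
      have "sem ?phi w \<longleftrightarrow> (\<exists>ws. length ws = m \<and> (\<forall>i<m. ws ! i = \<tau>' (zs ! i)) \<and> v = f ws)"
      proof -
        have A: "map (nth (zs @ [v] @ ws)) [i, Suc m + i] = [zs ! i, ws ! i]"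
          if "i < m" "length ws = m" for i ws using that lz by (simp add: nth_append)
        have B: "map (nth (zs @ [v] @ ws)) ([Suc m..<Suc m + m] @ [m]) = ws @ [v]" if "length ws = m" for ws
        proof -
          have "map (nth (zs @ [v] @ ws)) [Suc m..<Suc m + m] = ws"
          proof (rule nth_equalityI)
            show "length (map (nth (zs @ [v] @ ws)) [Suc m..<Suc m + m]) = length ws" using that by simp
            fix i assume "i < length (map (nth (zs @ [v] @ ws)) [Suc m..<Suc m + m])"
            then have i: "i < m" by (simp del: upt_Suc)
            have "[Suc m..<Suc m + m] ! i = Suc m + i" using i by (simp del: upt_Suc)
            then have "map (nth (zs @ [v] @ ws)) [Suc m..<Suc m + m] ! i = (zs @ [v] @ ws) ! (Suc m + i)"
              using i by (simp del: upt_Suc)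
            also have "\<dots> = ws ! i" using lz by (simp add: nth_append)
            finally show "map (nth (zs @ [v] @ ws)) [Suc m..<Suc m + m] ! i = ws ! i" .
          qed
          moreover have "(zs @ [v] @ ws) ! m = v" using lz by (simp add: nth_append)
          ultimately show ?thesis by simp
        qed
        have S: "sem ?phi (zs @ [v]) \<longleftrightarrow> (\<exists>ws. length ws = m \<and>
            (\<forall>i<m. map (nth (zs @ [v] @ ws)) [i, Suc m + i] \<in> ?Tau) \<and>
            map (nth (zs @ [v] @ ws)) ([Suc m..<Suc m + m] @ [m]) \<in> ?Gf)"
          unfolding sem_ExN sem.simps sem_BigConj append_assoc
          by (simp only: set_map set_upt) (auto simp del: upt_Suc)
        have T: "[a, b] \<in> ?Tau \<longleftrightarrow> b = \<tau>' a" for a b by auto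
        have "sem ?phi (zs @ [v]) \<longleftrightarrow> (\<exists>ws. length ws = m \<and> (\<forall>i<m. ws ! i = \<tau>' (zs ! i)) \<and> ws @ [v] \<in> ?Gf)"
          unfolding S
        proof (intro iff_exI conj_cong refl)
          fix ws :: "'a list" assume "length ws = m"
          then show "(\<forall>i<m. map (nth (zs @ [v] @ ws)) [i, Suc m + i] \<in> ?Tau) = (\<forall>i<m. ws ! i = \<tau>' (zs ! i))"
            "(map (nth (zs @ [v] @ ws)) ([Suc m..<Suc m + m] @ [m]) \<in> ?Gf) = (ws @ [v] \<in> ?Gf)"
            using A B T by auto
        qed
        then show ?thesis unfolding wz by auto
      qed
      also have "\<dots> \<longleftrightarrow> v = f' zs"
      proof
        assume "\<exists>ws. length ws = m \<and> (\<forall>i<m. ws ! i = \<tau>' (zs ! i)) \<and> v = f ws"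
        then obtain ws where ws: "length ws = m" "\<forall>i<m. ws ! i = \<tau>' (zs ! i)" "v = f ws" by blast
        have "ws = map \<tau>' zs" using ws lz by (intro nth_equalityI) auto
        then show "v = f' zs" using ws by (simp add: f'_def)
      next
        assume "v = f' zs"
        then show "\<exists>ws. length ws = m \<and> (\<forall>i<m. ws ! i = \<tau>' (zs ! i)) \<and> v = f ws"
          using lz by (intro exI[of _ "map \<tau>' zs"]) (simp add: f'_def)
      qed
      finally show ?thesis using True wz lz by auto
    next
      case False
      then show ?thesis by auto
    qed
  qed
  then have gf': "defA SL UNIV (1 * m + 1) {x @ [f' x] | x. length x = 1 * m}" using d by simp
  have "{a<..<b} \<subseteq> {f' (concat xs) | xs. length xs = m \<and> set xs \<subseteq> {[y] | y. y \<in> X}}"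
  proof
    fix t assume "t \<in> {a<..<b}"
    then obtain xs where xs: "t = f (concat xs)" "length xs = m" "set xs \<subseteq> {[\<tau> y] | y. y \<in> X}"
      using ab by blast
    define xs' where "xs' = map (\<lambda>l. [the_inv_into X \<tau> (hd l)]) xs"
    have e: "map \<tau>' [the_inv_into X \<tau> (hd l)] = l \<and> [the_inv_into X \<tau> (hd l)] \<in> {[y] | y. y \<in> X}"
      if lx: "l \<in> set xs" for l
    proof -
      obtain y where y: "l = [\<tau> y]" "y \<in> X" using xs(3) lx by blast
      have "the_inv_into X \<tau> (hd l) = y" using y inj by (simp add: the_inv_into_f_f)
      then show ?thesis using y ag by simp
    qed
    have "map \<tau>' (concat xs') = concat (map (map \<tau>') xs')" by (simp add: map_concat)
    also have "\<dots> = concat xs" unfolding xs'_def using e by (simp add: map_idI comp_def)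
    finally have "f' (concat xs') = t" using xs(1) by (simp add: f'_def)
    moreover have "set xs' \<subseteq> {[y] | y. y \<in> X}" using e by (auto simp: xs'_def)
    moreover have "length xs' = m" using xs(2) by (simp add: xs'_def)
    ultimately show "t \<in> {f' (concat xs) | xs. length xs = m \<and> set xs \<subseteq> {[y] | y. y \<in> X}}" by blast
  qed
  then have "large SL 1 {[y] | y. y \<in> X}" unfolding large_def using gf' ab(1) by blast
  then show False using sm unfolding small_def by blast
qed

lemma cosmall_two:
  fixes X :: "'a::linordered_field set"
  assumes st: "is_structure SL" and lu: "eless l u"
    and sm: "small SL 1 {[y] | y. y \<in> eivl l u - X}"
  shows "\<exists>y1 y2. y1 \<in> X \<and> y2 \<in> X \<and> y1 \<noteq> y2"
proof (rule ccontr)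
  assume nx: "\<not> (\<exists>y1 y2. y1 \<in> X \<and> y2 \<in> X \<and> y1 \<noteq> y2)"
  obtain p q where pq: "p \<in> eivl l u" "q \<in> eivl l u" "p < q" using eivl_two[OF lu] by blast
  obtain c d where cd: "c < d" "{c<..<d} \<subseteq> eivl l u - X"
  proof (cases "\<exists>x\<in>X. p < x \<and> x < q")
    case True
    then obtain x where x: "x \<in> X" "p < x" "x < q" by blast
    have "{p<..<x} \<subseteq> eivl l u - X"
    proof
      fix t assume t: "t \<in> {p<..<x}"
      have xe: "x \<in> eivl l u" using eivl_convex[OF pq(1) pq(2) x(2) x(3)] .
      have "t \<in> eivl l u" using eivl_convex[OF pq(1) xe] t by simp
      moreover have "t \<notin> X" using nx x t by auto
      ultimately show "t \<in> eivl l u - X" by blast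
    qed
    then show thesis using that x by blast
  next
    case False
    have "{p<..<q} \<subseteq> eivl l u - X"
    proof
      fix t assume t: "t \<in> {p<..<q}"
      have "t \<in> eivl l u" using eivl_convex[OF pq(1) pq(2)] t by simp
      moreover have "t \<notin> X" using False t by auto
      ultimately show "t \<in> eivl l u - X" by blast
    qed
    then show thesis using that pq by blast
  qed
  define f where "f x = (x ! 0 :: 'a)" for x :: "'a list"
  have "{x @ [f x] | x. length x = 1 * 1} = {w \<in> tuples 2. w ! 1 = w ! 0}"
  proof (rule set_eqI)
    fix w :: "'a list"
    show "w \<in> {x @ [f x] | x. length x = 1 * 1} \<longleftrightarrow> w \<in> {w \<in> tuples 2. w ! 1 = w ! 0}"
    proof
      assume "w \<in> {x @ [f x] | x. length x = 1 * 1}"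
      then obtain a where "w = [a, a]" by (auto simp: f_def length_Suc_conv)
      then show "w \<in> {w \<in> tuples 2. w ! 1 = w ! 0}" by simp
    next
      assume "w \<in> {w \<in> tuples 2. w ! 1 = w ! 0}"
      then obtain a b where "w = [a, b]" "b = a"
        by (auto simp: length_Suc_conv numeral_2_eq_2)
      then show "w \<in> {x @ [f x] | x. length x = 1 * 1}" by (auto simp: f_def intro!: exI[of _ "[a]"])
    qed
  qed
  then have g: "defA SL UNIV (1 * 1 + 1) {x @ [f x] | x. length x = 1 * 1}"
    using defA_of[OF st_diag[OF st, of 1 2 0] st] by (simp add: numeral_2_eq_2)
  have "{c<..<d} \<subseteq> {f (concat xs) | xs. length xs = 1 \<and> set xs \<subseteq> {[y] | y. y \<in> eivl l u - X}}"
  proof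
    fix t assume t: "t \<in> {c<..<d}"
    then have "f (concat [[t]]) = t \<and> length [[t]] = 1 \<and> set [[t]] \<subseteq> {[y] | y. y \<in> eivl l u - X}"
      using cd by (auto simp: f_def)
    then show "t \<in> {f (concat xs) | xs. length xs = 1 \<and> set xs \<subseteq> {[y] | y. y \<in> eivl l u - X}}"
      by (intro CollectI exI[of _ "[[t]]"]) simp
  qed
  then have "large SL 1 {[y] | y. y \<in> eivl l u - X}" unfolding large_def using g cd(1) by blast
  then show False using sm by (simp add: small_def)
qed


lemma ctn_cong: "ctn D f \<Longrightarrow> (\<And>x. x \<in> D \<Longrightarrow> f x = g x) \<Longrightarrow> ctn D g"
  unfolding ctn_iff nb_def by (metis (no_types, lifting) IntE)

lemma econt_cong: "econt_on D f \<Longrightarrow> (\<And>x. x \<in> D \<Longrightarrow> f x = g x) \<Longrightarrow> econt_on D g"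
  unfolding econt_iff nb_def by (metis (no_types, lifting) IntE)

lemma defA_projn:
  assumes st: "is_structure S" and X: "defA S B (n + p) X"
  shows "defA S B n (take n ` X)"
  using X
proof (induction p arbitrary: X)
  case 0
  have "X \<subseteq> tuples n" using defA_sub[OF 0[simplified]] .
  then have "take n ` X = X" by (force simp: image_iff)
  then show ?case using 0 by simp
next
  case (Suc p)
  have "defA S B (n + p) (take (n+p) ` X)" using defA_proj[OF st] Suc.prems by simp
  from Suc.IH[OF this] have "defA S B n (take n ` take (n + p) ` X)" .
  moreover have "take n ` take (n + p) ` X = take n ` X"
    by (simp add: image_image min_def)
  ultimately show ?case by simp
qed

locale constr =
  fixes SL :: "nat \<Rightarrow> 'a::linordered_field list set \<Rightarrow> bool" and A :: "'a set"
    and m k :: nat and Z :: "'a list set" and hL hU :: "nat \<Rightarrow> 'a list \<Rightarrow> 'a ext"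
  assumes ar: "arith_st SL"
    and Zcell: "cell SL (m + k) Z" and ZA: "defA SL A (m + k) Z"
    and lev: "\<And>j. j < k \<Longrightarrow> bound_fn SL (m + j) (take (m + j) ` Z) (hL j) \<and>
        bound_fn SL (m + j) (take (m + j) ` Z) (hU j) \<and>
        (\<forall>x\<in>take (m + j) ` Z. eless (hL j x) (hU j x) \<and>
           {y. x @ [y] \<in> take (m + Suc j) ` Z} = eivl (hL j x) (hU j x))"
begin

lemma st: "is_structure SL" using arith_is[OF ar] .

definition Zj :: "nat \<Rightarrow> 'a list set" where "Zj j = take (m + j) ` Z"

definition lo :: "nat \<Rightarrow> 'a list \<Rightarrow> 'a" where "lo j x = psie (hL j x)"
definition hi :: "nat \<Rightarrow> 'a list \<Rightarrow> 'a" where "hi j x = psie (hU j x)"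
definition Tf :: "nat \<Rightarrow> 'a list \<Rightarrow> 'a" where
  "Tf j w = (psi (last w) - lo j (butlast w)) / (hi j (butlast w) - lo j (butlast w))"
definition F :: "'a list \<Rightarrow> 'a list" where
  "F x = take m x @ map (\<lambda>j. Tf j (take (m + Suc j) x)) [0..<k]"

lemma Z_sub: "Z \<subseteq> tuples (m + k)" using cell_props[OF Zcell] by simp

lemma Zj_sub: "j \<le> k \<Longrightarrow> Zj j \<subseteq> tuples (m + j)"
  using Z_sub by (auto simp: Zj_def)

lemma Zj_k: "Zj k = Z"
  using Z_sub by (force simp: Zj_def image_iff)

lemma Zj_mem: "x \<in> Z \<Longrightarrow> take (m + j) x \<in> Zj j" by (simp add: Zj_def)
lemma Zj_mem': "x \<in> Z \<Longrightarrow> take (Suc (m + j)) x \<in> Zj (Suc j)" using Zj_mem[of x "Suc j"] by simp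

lemma lev_fib: "j < k \<Longrightarrow> x \<in> Zj j \<Longrightarrow> x @ [y] \<in> Zj (Suc j) \<longleftrightarrow> y \<in> eivl (hL j x) (hU j x)"
  using lev[of j] unfolding Zj_def by auto

lemma lev_lt: "j < k \<Longrightarrow> x \<in> Zj j \<Longrightarrow> eless (hL j x) (hU j x)"
  using lev[of j] unfolding Zj_def by auto

lemma lo_hi: "j < k \<Longrightarrow> x \<in> Zj j \<Longrightarrow> lo j x < hi j x"
  using lev_lt by (simp add: lo_def hi_def psie_mono)

lemma Zj_Suc_dest:
  assumes j: "j < k" and w: "w \<in> Zj (Suc j)"
  shows "butlast w \<in> Zj j" "w = butlast w @ [last w]" "last w \<in> eivl (hL j (butlast w)) (hU j (butlast w))"
proof -
  obtain x where x: "x \<in> Z" "w = take (m + Suc j) x" using w by (auto simp: Zj_def)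
  have lx: "length x = m + k" using x Z_sub by auto
  have lw: "length w = Suc (m + j)" using x lx j by simp
  show e: "w = butlast w @ [last w]" using lw
    by (metis append_butlast_last_id list.size(3) nat.distinct(1))
  have "butlast w = take (m + j) x" using x lx j by (simp add: butlast_take)
  then show b: "butlast w \<in> Zj j" using x by (simp add: Zj_mem)
  show "last w \<in> eivl (hL j (butlast w)) (hU j (butlast w))"
    using lev_fib[OF j b] e w by metis
qed

lemma psi_in: "j < k \<Longrightarrow> x \<in> Zj j \<Longrightarrow> x @ [y] \<in> Zj (Suc j) \<Longrightarrow> lo j x < psi y \<and> psi y < hi j x"
  using lev_fib by (simp add: lo_def hi_def psi_eivl)

lemma Tf_app: "Tf j (x @ [y]) = (psi y - lo j x) / (hi j x - lo j x)"
  by (simp add: Tf_def)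

lemma Tf_bounds:
  assumes "j < k" "x \<in> Zj j" "x @ [y] \<in> Zj (Suc j)"
  shows "0 < Tf j (x @ [y])" "Tf j (x @ [y]) < 1"
  using psi_in[OF assms] by (auto simp: Tf_app divide_less_eq)

lemma Tf_bounds':
  assumes "j < k" "w \<in> Zj (Suc j)"
  shows "0 < Tf j w" "Tf j w < 1"
  using Tf_bounds[OF assms(1) Zj_Suc_dest(1)[OF assms] ] Zj_Suc_dest(2)[OF assms] assms(2) by metis+

lemma Tf_less_iff:
  assumes "j < k" "x \<in> Zj j"
  shows "Tf j (x @ [y]) < Tf j (x @ [y']) \<longleftrightarrow> y < y'"
proof -
  have "0 < hi j x - lo j x" using lo_hi[OF assms] by simp
  then show ?thesis by (simp add: Tf_app divide_less_cancel)
qed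

lemma Tf_inj:
  assumes "j < k" "x \<in> Zj j" "Tf j (x @ [y]) = Tf j (x @ [y'])"
  shows "y = y'"
  using Tf_less_iff[OF assms(1,2)] assms(3) by (metis linorder_neq_iff order_less_irrefl)

lemma Tf_onto:
  assumes j: "j < k" and x: "x \<in> Zj j" and t: "0 < t" "t < 1"
  shows "\<exists>y. x @ [y] \<in> Zj (Suc j) \<and> Tf j (x @ [y]) = t"
proof -
  have lh: "lo j x < hi j x" using lo_hi[OF j x] .
  define c where "c = lo j x + t * (hi j x - lo j x)"
  have "lo j x < c" using t lh by (simp add: c_def)
  moreover have "c < hi j x"
  proof -
    have "t * (hi j x - lo j x) < 1 * (hi j x - lo j x)" using t lh by (intro mult_strict_right_mono) auto
    then show ?thesis by (simp add: c_def)
  qed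
  ultimately obtain y where y: "y \<in> eivl (hL j x) (hU j x)" "psi y = c"
    using psi_onto_eivl by (metis lo_def hi_def)
  have "Tf j (x @ [y]) = t" using lh y(2) by (simp add: Tf_app c_def)
  then show ?thesis using y lev_fib[OF j x] by blast
qed

lemma F_len: "x \<in> Z \<Longrightarrow> length (F x) = m + k"
  using Z_sub by (auto simp: F_def)

lemma F_nth_low: "x \<in> Z \<Longrightarrow> i < m \<Longrightarrow> F x ! i = x ! i"
  using Z_sub by (auto simp: F_def nth_append)

lemma F_nth_high: "x \<in> Z \<Longrightarrow> j < k \<Longrightarrow> F x ! (m + j) = Tf j (take (m + Suc j) x)"
  using Z_sub by (auto simp: F_def nth_append)

lemma F_take: "x \<in> Z \<Longrightarrow> take m (F x) = take m x"
  using Z_sub by (auto simp: F_def)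

lemma take_Suc_snoc: "n < length x \<Longrightarrow> take (Suc n) x = take n x @ [x ! n]"
  by (simp add: take_Suc_conv_app_nth)

lemma F_inj: "inj_on F Z"
proof (rule inj_onI)
  fix x x' assume x: "x \<in> Z" and x': "x' \<in> Z" and e: "F x = F x'"
  have lx: "length x = m + k" "length x' = m + k" using x x' Z_sub by auto
  have "j \<le> k \<Longrightarrow> take (m + j) x = take (m + j) x'" for j
  proof (induction j)
    case 0
    then show ?case using F_take[OF x] F_take[OF x'] e by simp
  next
    case (Suc j)
    then have j: "j < k" by simp
    have IH: "take (m + j) x = take (m + j) x'" using Suc by simp
    have "Tf j (take (m + j) x @ [x ! (m + j)]) = Tf j (take (m + j) x' @ [x' ! (m + j)])"
      using F_nth_high[OF x j] F_nth_high[OF x' j] e lx j by (simp add: take_Suc_snoc)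
    then have "x ! (m + j) = x' ! (m + j)"
      using Tf_inj[OF j Zj_mem[OF x, of j]] IH by simp
    then show ?case using IH lx j by (simp add: take_Suc_snoc)
  qed
  from this[of k] show "x = x'" using lx by simp
qed

lemma Tf_ctn: "j < k \<Longrightarrow> ctn (Zj (Suc j)) (Tf j)"
proof -
  assume j: "j < k"
  have sub: "Zj (Suc j) \<subseteq> tuples (m + Suc j)" using Zj_sub[of "Suc j"] j by simp
  have bl: "\<And>w. w \<in> Zj (Suc j) \<Longrightarrow> butlast w = [] @ take (m + j) w"
    using sub by (auto simp: butlast_conv_take)
  have p: "ctn (Zj (Suc j)) (\<lambda>w. psi (last w))"
  proof (rule ctn_cong)
    show "ctn (Zj (Suc j)) (\<lambda>w. psi (w ! (m + j)))" by (rule ctn_psi[OF ctn_coord[OF sub]]) simp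
    fix w assume "w \<in> Zj (Suc j)"
    then have "length w = Suc (m + j)" using sub by auto
    then have "w \<noteq> []" "length w - 1 = m + j" by auto
    then show "psi (w ! (m + j)) = psi (last w)" by (metis last_conv_nth)
  qed
  have pre: "\<forall>y\<in>Zj (Suc j). [] @ take (m + j) y \<in> Zj j"
    using Zj_Suc_dest(1)[OF j] bl by metis
  have a: "ctn (Zj (Suc j)) (\<lambda>w. lo j (butlast w))"
  proof (rule ctn_cong)
    have e: "econt_on (Zj j) (hL j)" using bound_fn_econt lev[OF j] by (auto simp: Zj_def)
    have "econt_on (Zj (Suc j)) (\<lambda>y. hL j ([] @ take (m + j) y))"
      by (rule econt_pre[OF e sub _ pre]) simp
    then show "ctn (Zj (Suc j)) (\<lambda>w. psie (hL j ([] @ take (m + j) w)))" by (rule econt_psie)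
    fix w assume "w \<in> Zj (Suc j)"
    then show "psie (hL j ([] @ take (m + j) w)) = lo j (butlast w)" using bl by (simp add: lo_def)
  qed
  have b: "ctn (Zj (Suc j)) (\<lambda>w. hi j (butlast w))"
  proof (rule ctn_cong)
    have e: "econt_on (Zj j) (hU j)" using bound_fn_econt lev[OF j] by (auto simp: Zj_def)
    have "econt_on (Zj (Suc j)) (\<lambda>y. hU j ([] @ take (m + j) y))"
      by (rule econt_pre[OF e sub _ pre]) simp
    then show "ctn (Zj (Suc j)) (\<lambda>w. psie (hU j ([] @ take (m + j) w)))" by (rule econt_psie)
    fix w assume "w \<in> Zj (Suc j)"
    then show "psie (hU j ([] @ take (m + j) w)) = hi j (butlast w)" using bl by (simp add: hi_def)
  qed
  have ord: "\<forall>w\<in>Zj (Suc j). lo j (butlast w) < psi (last w) \<and> psi (last w) < hi j (butlast w)"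
    using psi_in[OF j] Zj_Suc_dest[OF j] by metis
  show "ctn (Zj (Suc j)) (Tf j)" unfolding Tf_def[abs_def] by (rule ctn_quot[OF p a b ord])
qed

lemma F_cont: "cont_on Z (m + k) F"
  unfolding cont_on_def
proof (intro allI impI)
  fix i assume i: "i < m + k"
  show "econt_on Z (\<lambda>x. Fin (F x ! i))"
  proof (cases "i < m")
    case True
    have "ctn Z (\<lambda>x. F x ! i)"
      by (rule ctn_cong[OF ctn_coord[OF Z_sub i]]) (use F_nth_low True in simp)
    then show ?thesis by (simp add: ctn_def)
  next
    case False
    define j where "j = i - m"
    have j: "j < k" "i = m + j" using i False by (auto simp: j_def)
    have "ctn Z (\<lambda>x. Tf j ([] @ take (m + Suc j) x))"
      by (rule ctn_pre[OF Tf_ctn[OF j(1)] Z_sub]) (use j in \<open>auto simp: Zj_mem'\<close>)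
    then have "ctn Z (\<lambda>x. F x ! i)"
      by (rule ctn_cong) (use F_nth_high j in simp)
    then show ?thesis by (simp add: ctn_def)
  qed
qed

end


context constr
begin

lemma ZjA: "j \<le> k \<Longrightarrow> defA SL A (m + j) (Zj j)"
proof -
  assume j: "j \<le> k"
  have "defA SL A ((m + j) + (k - j)) Z" using ZA j by simp
  then show ?thesis unfolding Zj_def by (rule defA_projn[OF st])
qed

lemma lo_char:
  assumes j: "j < k" and x: "x \<in> Zj j"
  shows "c = lo j x \<longleftrightarrow> (\<forall>y. x @ [y] \<in> Zj (Suc j) \<longrightarrow> c < psi y) \<and>
           (\<forall>c'. c < c' \<longrightarrow> (\<exists>y. x @ [y] \<in> Zj (Suc j) \<and> psi y < c'))"
proof -
  have fwd: "\<exists>y. x @ [y] \<in> Zj (Suc j) \<and> psi y < c'" if c': "lo j x < c'" for c'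
  proof -
    have "lo j x < min c' (hi j x)" using c' lo_hi[OF j x] by simp
    then obtain e where e: "lo j x < e" "e < min c' (hi j x)" using dense by blast
    then obtain y where y: "y \<in> eivl (hL j x) (hU j x)" "psi y = e"
      using psi_onto_eivl[of "hL j x" e "hU j x"] by (auto simp: lo_def hi_def)
    then show ?thesis using lev_fib[OF j x] e by auto
  qed
  show ?thesis
  proof
    assume "c = lo j x"
    then show "(\<forall>y. x @ [y] \<in> Zj (Suc j) \<longrightarrow> c < psi y) \<and>
           (\<forall>c'. c < c' \<longrightarrow> (\<exists>y. x @ [y] \<in> Zj (Suc j) \<and> psi y < c'))"
      using psi_in[OF j x] fwd by blast
  next
    assume a: "(\<forall>y. x @ [y] \<in> Zj (Suc j) \<longrightarrow> c < psi y) \<and>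
           (\<forall>c'. c < c' \<longrightarrow> (\<exists>y. x @ [y] \<in> Zj (Suc j) \<and> psi y < c'))"
    show "c = lo j x"
    proof (rule ccontr)
      assume "c \<noteq> lo j x"
      then consider "c < lo j x" | "lo j x < c" by linarith
      then show False
      proof cases
        case 1
        then obtain y where "x @ [y] \<in> Zj (Suc j)" "psi y < lo j x" using a by blast
        then show False using psi_in[OF j x] by force
      next
        case 2
        then obtain y where "x @ [y] \<in> Zj (Suc j)" "psi y < c" using fwd by blast
        then show False using a by force
      qed
    qed
  qed
qed

lemma hi_char:
  assumes j: "j < k" and x: "x \<in> Zj j"
  shows "c = hi j x \<longleftrightarrow> (\<forall>y. x @ [y] \<in> Zj (Suc j) \<longrightarrow> psi y < c) \<and>
           (\<forall>c'. c' < c \<longrightarrow> (\<exists>y. x @ [y] \<in> Zj (Suc j) \<and> c' < psi y))"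
proof -
  have fwd: "\<exists>y. x @ [y] \<in> Zj (Suc j) \<and> c' < psi y" if c': "c' < hi j x" for c'
  proof -
    have "max c' (lo j x) < hi j x" using c' lo_hi[OF j x] by simp
    then obtain e where e: "max c' (lo j x) < e" "e < hi j x" using dense by blast
    then obtain y where y: "y \<in> eivl (hL j x) (hU j x)" "psi y = e"
      using psi_onto_eivl[of "hL j x" e "hU j x"] by (auto simp: lo_def hi_def)
    then show ?thesis using lev_fib[OF j x] e by auto
  qed
  show ?thesis
  proof
    assume "c = hi j x"
    then show "(\<forall>y. x @ [y] \<in> Zj (Suc j) \<longrightarrow> psi y < c) \<and>
           (\<forall>c'. c' < c \<longrightarrow> (\<exists>y. x @ [y] \<in> Zj (Suc j) \<and> c' < psi y))"
      using psi_in[OF j x] fwd by blast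
  next
    assume a: "(\<forall>y. x @ [y] \<in> Zj (Suc j) \<longrightarrow> psi y < c) \<and>
           (\<forall>c'. c' < c \<longrightarrow> (\<exists>y. x @ [y] \<in> Zj (Suc j) \<and> c' < psi y))"
    show "c = hi j x"
    proof (rule ccontr)
      assume "c \<noteq> hi j x"
      then consider "hi j x < c" | "c < hi j x" by linarith
      then show False
      proof cases
        case 1
        then obtain y where "x @ [y] \<in> Zj (Suc j)" "hi j x < psi y" using a by blast
        then show False using psi_in[OF j x] by force
      next
        case 2
        then obtain y where "x @ [y] \<in> Zj (Suc j)" "c < psi y" using fwd by blast
        then show False using a by force
      qed
    qed
  qed
qed

definition LoG :: "nat \<Rightarrow> 'a list set" where "LoG j = {x @ [lo j x] | x. x \<in> Zj j}"
definition HiG :: "nat \<Rightarrow> 'a list set" where "HiG j = {x @ [hi j x] | x. x \<in> Zj j}"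

lemma snoc_split: "length w = Suc n \<Longrightarrow> \<exists>x c. w = x @ [c] \<and> length x = n"
  by (metis append_butlast_last_id length_butlast diff_Suc_1 list.size(3) nat.distinct(1))

lemma LoG_def_ok:
  assumes j: "j < k"
  shows "defA SL A (Suc (m + j)) (LoG j)"
proof -
  define n where "n = m + j"
  let ?Z0 = "Zj j" and ?Z1 = "Zj (Suc j)"
  let ?phi = "Conj (At ?Z0 [0..<n])
     (Conj (All (Imp (At ?Z1 ([0..<n] @ [Suc n]))
                     (Ex (Conj (At PsiS [Suc n, Suc (Suc n)]) (flt (Suc (Suc (Suc n))) (V n) (V (Suc (Suc n))))))))
           (All (Imp (flt (Suc (Suc n)) (V n) (V (Suc n)))
                     (Ex (Conj (At ?Z1 ([0..<n] @ [Suc (Suc n)]))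
                               (Ex (Conj (At PsiS [Suc (Suc n), Suc (Suc (Suc n))])
                                         (flt (Suc (Suc (Suc (Suc n)))) (V (Suc (Suc (Suc n)))) (V (Suc n))))))))))"
  have Z0: "defA SL A n ?Z0" using ZjA j by (simp add: n_def)
  have Z1: "defA SL A (Suc n) ?Z1" using ZjA[of "Suc j"] j by (simp add: n_def)
  have Ps: "defA SL A (Suc (Suc 0)) PsiS" using PsiS_def_ok[OF ar] by (simp add: numeral_2_eq_2)
  have "fok SL A (Suc n) ?phi" using Z0 Z1 Ps fok_terms[OF ar] by simp
  then have d: "defA SL A (Suc n) {w \<in> tuples (Suc n). sem ?phi w}" by (rule fm_def[OF st])
  have "{w \<in> tuples (Suc n). sem ?phi w} = LoG j"
  proof (rule set_eqI)
    fix w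
    show "w \<in> {w \<in> tuples (Suc n). sem ?phi w} \<longleftrightarrow> w \<in> LoG j"
    proof (cases "length w = Suc n")
      case True
      then obtain x c where w: "w = x @ [c]" "length x = n" using snoc_split by blast
      have "sem ?phi w \<longleftrightarrow> x \<in> ?Z0 \<and> (\<forall>y. x @ [y] \<in> ?Z1 \<longrightarrow> c < psi y) \<and>
           (\<forall>c'. c < c' \<longrightarrow> (\<exists>y. x @ [y] \<in> ?Z1 \<and> psi y < c'))"
        using w by (simp add: nth_append)
      also have "\<dots> \<longleftrightarrow> x \<in> ?Z0 \<and> c = lo j x" using lo_char[OF j] by blast
      also have "\<dots> \<longleftrightarrow> w \<in> LoG j" using w by (auto simp: LoG_def)
      finally show ?thesis using True by simp
    next
      case False
      have "LoG j \<subseteq> tuples (Suc n)" using Zj_sub[of j] j by (auto simp: LoG_def n_def)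
      then show ?thesis using False by auto
    qed
  qed
  then show ?thesis using d by (simp add: n_def)
qed

lemma HiG_def_ok:
  assumes j: "j < k"
  shows "defA SL A (Suc (m + j)) (HiG j)"
proof -
  define n where "n = m + j"
  let ?Z0 = "Zj j" and ?Z1 = "Zj (Suc j)"
  let ?phi = "Conj (At ?Z0 [0..<n])
     (Conj (All (Imp (At ?Z1 ([0..<n] @ [Suc n]))
                     (Ex (Conj (At PsiS [Suc n, Suc (Suc n)]) (flt (Suc (Suc (Suc n))) (V (Suc (Suc n))) (V n))))))
           (All (Imp (flt (Suc (Suc n)) (V (Suc n)) (V n))
                     (Ex (Conj (At ?Z1 ([0..<n] @ [Suc (Suc n)]))
                               (Ex (Conj (At PsiS [Suc (Suc n), Suc (Suc (Suc n))])
                                         (flt (Suc (Suc (Suc (Suc n)))) (V (Suc n)) (V (Suc (Suc (Suc n))))))))))))"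
  have Z0: "defA SL A n ?Z0" using ZjA j by (simp add: n_def)
  have Z1: "defA SL A (Suc n) ?Z1" using ZjA[of "Suc j"] j by (simp add: n_def)
  have Ps: "defA SL A (Suc (Suc 0)) PsiS" using PsiS_def_ok[OF ar] by (simp add: numeral_2_eq_2)
  have "fok SL A (Suc n) ?phi" using Z0 Z1 Ps fok_terms[OF ar] by simp
  then have d: "defA SL A (Suc n) {w \<in> tuples (Suc n). sem ?phi w}" by (rule fm_def[OF st])
  have "{w \<in> tuples (Suc n). sem ?phi w} = HiG j"
  proof (rule set_eqI)
    fix w
    show "w \<in> {w \<in> tuples (Suc n). sem ?phi w} \<longleftrightarrow> w \<in> HiG j"
    proof (cases "length w = Suc n")
      case True
      then obtain x c where w: "w = x @ [c]" "length x = n" using snoc_split by blast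
      have "sem ?phi w \<longleftrightarrow> x \<in> ?Z0 \<and> (\<forall>y. x @ [y] \<in> ?Z1 \<longrightarrow> psi y < c) \<and>
           (\<forall>c'. c' < c \<longrightarrow> (\<exists>y. x @ [y] \<in> ?Z1 \<and> c' < psi y))"
        using w by (simp add: nth_append)
      also have "\<dots> \<longleftrightarrow> x \<in> ?Z0 \<and> c = hi j x" using hi_char[OF j] by blast
      also have "\<dots> \<longleftrightarrow> w \<in> HiG j" using w by (auto simp: HiG_def)
      finally show ?thesis using True by simp
    next
      case False
      have "HiG j \<subseteq> tuples (Suc n)" using Zj_sub[of j] j by (auto simp: HiG_def n_def)
      then show ?thesis using False by auto
    qed
  qed
  then show ?thesis using d by (simp add: n_def)
qed

definition TG :: "nat \<Rightarrow> 'a list set" where "TG j = {w @ [Tf j w] | w. w \<in> Zj (Suc j)}"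

lemma TG_def_ok:
  assumes j: "j < k"
  shows "defA SL A (Suc (Suc (m + j))) (TG j)"
proof -
  define n where "n = m + j"
  let ?Z1 = "Zj (Suc j)"
  let ?phi = "Conj (At ?Z1 [0..<Suc n])
      (Ex (Ex (Ex (Conj (At (LoG j) ([0..<n] @ [Suc (Suc n)]))
                   (Conj (At (HiG j) ([0..<n] @ [Suc (Suc (Suc n))]))
                     (Conj (At PsiS [n, Suc (Suc (Suc (Suc n)))])
                        (feq (Suc (Suc (Suc (Suc (Suc n)))))
                           (Mu (V (Suc n)) (Pl (V (Suc (Suc (Suc n)))) (Ng (V (Suc (Suc n))))))
                           (Pl (V (Suc (Suc (Suc (Suc n))))) (Ng (V (Suc (Suc n))))))))))))"
  have Z1: "defA SL A (Suc n) ?Z1" using ZjA[of "Suc j"] j by (simp add: n_def)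
  have Ps: "defA SL A (Suc (Suc 0)) PsiS" using PsiS_def_ok[OF ar] by (simp add: numeral_2_eq_2)
  have "fok SL A (Suc (Suc n)) ?phi"
    using Z1 Ps LoG_def_ok[OF j] HiG_def_ok[OF j] fok_terms[OF ar] by (simp add: n_def)
  then have d: "defA SL A (Suc (Suc n)) {w \<in> tuples (Suc (Suc n)). sem ?phi w}" by (rule fm_def[OF st])
  have "{w \<in> tuples (Suc (Suc n)). sem ?phi w} = TG j"
  proof (rule set_eqI)
    fix w
    show "w \<in> {w \<in> tuples (Suc (Suc n)). sem ?phi w} \<longleftrightarrow> w \<in> TG j"
    proof (cases "length w = Suc (Suc n)")
      case True
      then obtain x' t where w1: "w = x' @ [t]" "length x' = Suc n" using snoc_split by blast
      then obtain x y where w2: "x' = x @ [y]" "length x = n" using snoc_split by blast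
      have w: "w = x @ [y, t]" using w1 w2 by simp
      have L: "x @ [l] \<in> LoG j \<longleftrightarrow> x \<in> Zj j \<and> l = lo j x" for l using w2(2) by (auto simp: LoG_def)
      have H: "x @ [h] \<in> HiG j \<longleftrightarrow> x \<in> Zj j \<and> h = hi j x" for h using w2(2) by (auto simp: HiG_def)
      have "sem ?phi w \<longleftrightarrow> x @ [y] \<in> ?Z1 \<and> (\<exists>l h p. (x @ [l] \<in> LoG j) \<and> (x @ [h] \<in> HiG j) \<and>
             p = psi y \<and> t * (h + - l) = p + - l)"
        using w w2(2) by (simp add: nth_append)
      also have "\<dots> \<longleftrightarrow> x @ [y] \<in> ?Z1 \<and> t = Tf j (x @ [y])"
      proof (cases "x @ [y] \<in> ?Z1")
        case True
        have x0: "x \<in> Zj j" using Zj_Suc_dest(1)[OF j True] by simp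
        have "0 < hi j x - lo j x" using lo_hi[OF j x0] by simp
        then have "t * (hi j x + - lo j x) = psi y + - lo j x \<longleftrightarrow> t = Tf j (x @ [y])"
          by (simp add: Tf_app eq_divide_eq)
        then show ?thesis using True x0 L H by auto
      qed simp
      also have "\<dots> \<longleftrightarrow> w \<in> TG j" using w by (auto simp: TG_def)
      finally show ?thesis using True by simp
    next
      case False
      have "TG j \<subseteq> tuples (Suc (Suc n))" using Zj_sub[of "Suc j"] j by (auto simp: TG_def n_def)
      then show ?thesis using False by auto
    qed
  qed
  then show ?thesis using d by (simp add: n_def)
qed

definition Fgraph :: "'a list set" where "Fgraph = {x @ F x | x. x \<in> Z}"

lemma Fgraph_def_ok: "defA SL A ((m + k) + (m + k)) Fgraph"
proof -
  define N where "N = m + k"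
  let ?phi = "Conj (At Z [0..<N]) (Conj (BigConj (map (\<lambda>i. feq (N + N) (V (N + i)) (V i)) [0..<m]))
                (BigConj (map (\<lambda>j. At (TG j) ([0..<Suc (m + j)] @ [N + (m + j)])) [0..<k])))"
  have f1: "\<forall>f\<in>set (map (\<lambda>i. feq (N + N) (V (N + i)) (V i)) [0..<m]). fok SL A (N + N) f"
    using fok_terms[OF ar] by (auto simp: N_def)
  have f2: "\<forall>f\<in>set (map (\<lambda>j. At (TG j) ([0..<Suc (m + j)] @ [N + (m + j)])) [0..<k]). fok SL A (N + N) f"
    using TG_def_ok by (auto simp: N_def)
  have "fok SL A (N + N) ?phi" using ZA fok_BigConj[OF st f1] fok_BigConj[OF st f2] by (simp add: N_def)
  then have d: "defA SL A (N + N) {w \<in> tuples (N + N). sem ?phi w}" by (rule fm_def[OF st])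
  have "{w \<in> tuples (N + N). sem ?phi w} = Fgraph"
  proof (rule set_eqI)
    fix w
    show "w \<in> {w \<in> tuples (N + N). sem ?phi w} \<longleftrightarrow> w \<in> Fgraph"
    proof (cases "length w = N + N")
      case True
      define x where "x = take N w"
      define y where "y = drop N w"
      have w: "w = x @ y" "length x = N" "length y = N" using True by (auto simp: x_def y_def)
      have A1: "map (nth (x @ y)) [0..<N] = x" using w by simp
      have A2: "map (nth (x @ y)) ([0..<Suc (m + j)] @ [N + (m + j)]) = take (Suc (m + j)) x @ [y ! (m + j)]"
        if "j < k" for j using w that by (simp add: nth_append N_def take_Suc_conv_app_nth)
      have T: "take (Suc (m + j)) x @ [v] \<in> TG j \<longleftrightarrow> take (Suc (m + j)) x \<in> Zj (Suc j) \<and> v = Tf j (take (Suc (m + j)) x)"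
        if "j < k" for j v
      proof -
        have "length (take (Suc (m + j)) x) = Suc (m + j)" using w that by (simp add: N_def)
        moreover have "\<And>w'. w' \<in> Zj (Suc j) \<Longrightarrow> length w' = Suc (m + j)" using Zj_sub[of "Suc j"] that by auto
        ultimately show ?thesis by (auto simp: TG_def)
      qed
      have "sem ?phi w \<longleftrightarrow> x \<in> Z \<and> (\<forall>i<m. y ! i = x ! i) \<and>
            (\<forall>j<k. take (Suc (m + j)) x \<in> Zj (Suc j) \<and> y ! (m + j) = Tf j (take (Suc (m + j)) x))"
      proof -
        have T': "take (m + j) x @ [x ! (m + j), v] \<in> TG j \<longleftrightarrow> take (Suc (m + j)) x \<in> Zj (Suc j) \<and> v = Tf j (take (Suc (m + j)) x)"
          if "j < k" for j v
        proof -
          have E: "take (Suc (m + j)) x = take (m + j) x @ [x ! (m + j)]"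
            using w that by (simp add: N_def take_Suc_conv_app_nth)
          have e: "take (m + j) x @ [x ! (m + j), v] = take (Suc (m + j)) x @ [v]"
            unfolding E by simp
          show ?thesis unfolding e by (rule T[OF that])
        qed
        show ?thesis using w T' by (auto simp: nth_append N_def)
      qed
      also have "\<dots> \<longleftrightarrow> x \<in> Z \<and> y = F x"
      proof
        assume a: "x \<in> Z \<and> (\<forall>i<m. y ! i = x ! i) \<and>
            (\<forall>j<k. take (Suc (m + j)) x \<in> Zj (Suc j) \<and> y ! (m + j) = Tf j (take (Suc (m + j)) x))"
        have "y = F x"
        proof (rule nth_equalityI)
          show "length y = length (F x)" using w F_len a by (simp add: N_def)
          fix i assume i: "i < length y"
          show "y ! i = F x ! i"
          proof (cases "i < m")
            case True
            then show ?thesis using a F_nth_low by simp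
          next
            case False
            then obtain j where j: "i = m + j" "j < k" using i w by (metis N_def add_less_cancel_left le_Suc_ex not_less)
            then show ?thesis using a F_nth_high by simp
          qed
        qed
        then show "x \<in> Z \<and> y = F x" using a by simp
      next
        assume a: "x \<in> Z \<and> y = F x"
        then show "x \<in> Z \<and> (\<forall>i<m. y ! i = x ! i) \<and>
            (\<forall>j<k. take (Suc (m + j)) x \<in> Zj (Suc j) \<and> y ! (m + j) = Tf j (take (Suc (m + j)) x))"
          using F_nth_low F_nth_high Zj_mem' by auto
      qed
      also have "\<dots> \<longleftrightarrow> w \<in> Fgraph"
      proof
        assume "x \<in> Z \<and> y = F x" then show "w \<in> Fgraph" using w by (auto simp: Fgraph_def)
      next
        assume "w \<in> Fgraph"
        then obtain x' where x': "x' \<in> Z" "w = x' @ F x'" by (auto simp: Fgraph_def)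
        have lx': "length x' = N" using x' Z_sub by (auto simp: N_def)
        have "x = x'" unfolding x_def using x'(2) lx' by simp
        moreover have "y = F x'" unfolding y_def using x'(2) lx' by simp
        ultimately show "x \<in> Z \<and> y = F x" using x'(1) by simp
      qed
      finally show ?thesis using True by simp
    next
      case False
      have "Fgraph \<subseteq> tuples (N + N)" using Z_sub F_len by (auto simp: Fgraph_def N_def)
      then show ?thesis using False by auto
    qed
  qed
  then show ?thesis using d by (simp add: N_def)
qed

lemma F_fdef: "fdef SL A (m + k) (m + k) Z F"
  unfolding fdef_def using Z_sub F_len Fgraph_def_ok by (simp add: Fgraph_def)

lemma image_def_ok:
  assumes J: "defA (gen SL P) A (m + k) J" and JZ: "J \<subseteq> Z"
  shows "defA (gen SL P) A (m + k) (F ` J)"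
proof -
  define N where "N = m + k"
  have stg: "is_structure (gen SL P)" using gen_structure[OF st] .
  have FG: "defA (gen SL P) A (N + N) Fgraph" using defA_gen[OF st Fgraph_def_ok] by (simp add: N_def)
  let ?phi = "ExN N (Conj (At J [N..<N + N]) (At Fgraph ([N..<N + N] @ [0..<N])))"
  have "fok (gen SL P) A N ?phi" using J FG by (auto simp: N_def)
  then have d: "defA (gen SL P) A N {w \<in> tuples N. sem ?phi w}" by (rule fm_def[OF stg])
  have "{w \<in> tuples N. sem ?phi w} = F ` J"
  proof (rule set_eqI)
    fix w
    show "w \<in> {w \<in> tuples N. sem ?phi w} \<longleftrightarrow> w \<in> F ` J"
    proof (cases "length w = N")
      case True
      have M1: "map (nth (w @ ys)) [N..<N + N] = ys" if "length ys = N" for ys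
        using True that by (intro nth_equalityI) (auto simp: nth_append)
      have M2: "map (nth (w @ ys)) [0..<N] = w" for ys using True by simp
      have "sem ?phi w \<longleftrightarrow> (\<exists>x. length x = N \<and> x \<in> J \<and> x @ w \<in> Fgraph)"
        unfolding sem_ExN
      proof (rule iff_exI)
        fix ys
        show "(length ys = N \<and> sem (Conj (At J [N..<N + N]) (At Fgraph ([N..<N + N] @ [0..<N]))) (w @ ys)) =
              (length ys = N \<and> ys \<in> J \<and> ys @ w \<in> Fgraph)"
          by (cases "length ys = N") (simp_all add: M1 M2)
      qed
      also have "\<dots> \<longleftrightarrow> w \<in> F ` J"
      proof
        assume "\<exists>x. length x = N \<and> x \<in> J \<and> x @ w \<in> Fgraph"
        then obtain x x' where x: "length x = N" "x \<in> J" "x' \<in> Z" "x @ w = x' @ F x'"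
          by (auto simp: Fgraph_def)
        have "length x' = N" using x Z_sub by (auto simp: N_def)
        then have "x = x'" "w = F x'" using x by auto
        then show "w \<in> F ` J" using x by auto
      next
        assume "w \<in> F ` J"
        then obtain x where x: "x \<in> J" "w = F x" by auto
        have "length x = N" using x JZ Z_sub by (auto simp: N_def)
        then show "\<exists>x. length x = N \<and> x \<in> J \<and> x @ w \<in> Fgraph"
          using x JZ by (auto simp: Fgraph_def)
      qed
      finally show ?thesis using True by simp
    next
      case False
      have "F ` J \<subseteq> tuples N" using JZ F_len by (auto simp: N_def)
      then show ?thesis using False by auto
    qed
  qed
  then show ?thesis using d by (simp add: N_def)
qed

end


lemma snoc_split2: "length w = Suc n \<Longrightarrow> \<exists>x c. w = x @ [c] \<and> length x = n"
  by (metis append_butlast_last_id length_butlast diff_Suc_1 list.size(3) nat.distinct(1))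

lemma tev_const: "tok 0 T \<Longrightarrow> tev T x = tev T []"
  by (induction T) auto

lemma defA_empty: "is_structure S \<Longrightarrow> defA S B n {}"
proof -
  assume st: "is_structure S"
  have "defA S B n (tuples n)" by (rule defA_of[OF st_univ[OF st] st])
  then have "defA S B n (tuples n - tuples n)" by (rule defA_compl[OF st])
  then show ?thesis by simp
qed

lemma edef_const:
  fixes SL :: "nat \<Rightarrow> 'a::linordered_field list set \<Rightarrow> bool"
  assumes ar: "arith_st SL" and D: "defA SL B n D" and T: "tok 0 T"
  shows "edef SL B n D (\<lambda>_. Fin (tev T []))"
proof -
  note st = arith_is[OF ar]
  let ?phi = "Conj (At D [0..<n]) (feq (Suc n) (V n) T) :: 'a fm"
  have T': "tok (Suc n) T" using T by (induction T) auto
  have "fok SL B (Suc n) ?phi" using D fok_terms[OF ar, of "Suc n" "V n" T] T' by simp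
  then have d: "defA SL B (Suc n) {w \<in> tuples (Suc n). sem ?phi w}" by (rule fm_def[OF st])
  have Dt: "D \<subseteq> tuples n" using defA_sub[OF D] .
  have "{w \<in> tuples (Suc n). sem ?phi w} = {x @ [v] | x v. x \<in> D \<and> Fin (tev T []) = Fin v}"
  proof (rule set_eqI)
    fix w :: "'a list"
    show "w \<in> {w \<in> tuples (Suc n). sem ?phi w} \<longleftrightarrow> w \<in> {x @ [v] | x v. x \<in> D \<and> Fin (tev T []) = Fin v}"
    proof (cases "length w = Suc n")
      case True
      then obtain x c where w: "w = x @ [c]" "length x = n" using snoc_split2 by blast
      have tc: "tev T (x @ [c]) = tev T []" "tev T (x @ [tev T []]) = tev T []" by (rule tev_const[OF T])+
      show ?thesis using w Dt tc by (auto simp: nth_append)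
    next
      case False
      then show ?thesis using Dt by auto
    qed
  qed
  then have "defA SL B (Suc n) {x @ [v] | x v. x \<in> D \<and> Fin (tev T []) = Fin v}" using d by simp
  moreover have "{x \<in> D. Fin (tev T []) = PInf} = {}" "{x \<in> D. Fin (tev T []) = MInf} = {}" by auto
  ultimately show ?thesis unfolding edef_def using D defA_empty[OF st] by simp
qed

lemma edef_0: "arith_st SL \<Longrightarrow> defA SL B n D \<Longrightarrow> edef SL B n D (\<lambda>_. Fin (0::'a::linordered_field))"
  using edef_const[of SL B n D C0] by simp
lemma edef_1: "arith_st SL \<Longrightarrow> defA SL B n D \<Longrightarrow> edef SL B n D (\<lambda>_. Fin (1::'a::linordered_field))"
  using edef_const[of SL B n D C1] by simp

definition Bx :: "nat \<Rightarrow> 'a::linordered_field list set \<Rightarrow> nat \<Rightarrow> 'a list set" where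
  "Bx m Z j = {x. length x = m + j \<and> take m x \<in> take m ` Z \<and> (\<forall>i<j. 0 < x ! (m + i) \<and> x ! (m + i) < 1)}"

lemma Bx_def_ok:
  fixes SL :: "nat \<Rightarrow> 'a::linordered_field list set \<Rightarrow> bool"
  assumes ar: "arith_st SL" and ZA: "defA SL B (m + k) Z"
  shows "defA SL B (m + j) (Bx m Z j)"
proof -
  note st = arith_is[OF ar]
  have Z0: "defA SL B m (take m ` Z)" using defA_projn[OF st ZA] .
  let ?phi = "Conj (At (take m ` Z) [0..<m])
     (BigConj (map (\<lambda>i. Conj (flt (m + j) C0 (V (m + i))) (flt (m + j) (V (m + i)) C1)) [0..<j])) :: 'a fm"
  have f1: "\<forall>f\<in>set (map (\<lambda>i. Conj (flt (m + j) C0 (V (m + i))) (flt (m + j) (V (m + i)) C1)) [0..<j]).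
      fok SL B (m + j) f" using fok_terms[OF ar] by auto
  have "fok SL B (m + j) ?phi" using Z0 fok_BigConj[OF st f1] by simp
  then have d: "defA SL B (m + j) {w \<in> tuples (m + j). sem ?phi w}" by (rule fm_def[OF st])
  have "{w \<in> tuples (m + j). sem ?phi w} = Bx m Z j"
    by (auto simp: Bx_def map_nth_upt)
  then show ?thesis using d by simp
qed

lemma Bx_Suc: "Bx m Z (Suc j) = {x @ [y] | x y. x \<in> Bx m Z j \<and> y \<in> eivl (Fin 0) (Fin 1)}"
proof (rule set_eqI)
  fix w
  show "w \<in> Bx m Z (Suc j) \<longleftrightarrow> w \<in> {x @ [y] | x y. x \<in> Bx m Z j \<and> y \<in> eivl (Fin 0) (Fin 1)}"
  proof
    assume w: "w \<in> Bx m Z (Suc j)"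
    then have "length w = Suc (m + j)" by (simp add: Bx_def)
    then obtain x y where xy: "w = x @ [y]" "length x = m + j" using snoc_split2 by blast
    have A: "\<forall>i<Suc j. 0 < w ! (m + i) \<and> w ! (m + i) < 1" "take m w \<in> take m ` Z" using w by (auto simp: Bx_def)
    have "\<forall>i<j. 0 < x ! (m + i) \<and> x ! (m + i) < 1"
    proof (intro allI impI)
      fix i assume i: "i < j"
      then have "w ! (m + i) = x ! (m + i)" using xy by (simp add: nth_append)
      moreover have "i < Suc j" using i by simp
      ultimately show "0 < x ! (m + i) \<and> x ! (m + i) < 1" using A(1) by metis
    qed
    moreover have "take m x = take m w" using xy by simp
    ultimately have "x \<in> Bx m Z j" using xy A(2) by (simp add: Bx_def)
    moreover have "y \<in> eivl (Fin 0) (Fin 1)"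
    proof -
      have "w ! (m + j) = y" using xy by (simp add: nth_append)
      then show ?thesis using A(1) by (auto simp: eivl_iff)
    qed
    ultimately show "w \<in> {x @ [y] | x y. x \<in> Bx m Z j \<and> y \<in> eivl (Fin 0) (Fin 1)}" using xy by blast
  next
    assume "w \<in> {x @ [y] | x y. x \<in> Bx m Z j \<and> y \<in> eivl (Fin 0) (Fin 1)}"
    then obtain x y where xy: "w = x @ [y]" "x \<in> Bx m Z j" "y \<in> eivl (Fin 0) (Fin 1)" by blast
    then show "w \<in> Bx m Z (Suc j)" unfolding Bx_def
      by (auto simp: eivl_iff nth_append less_Suc_eq)
  qed
qed

lemma Bx_cell:
  fixes SL :: "nat \<Rightarrow> 'a::linordered_field list set \<Rightarrow> bool"
  assumes ar: "arith_st SL" and ZA: "defA SL B (m + k) Z" and Zc: "cell SL (m + k) Z"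
  shows "cell SL (m + j) (Bx m Z j)"
proof (induction j)
  case 0
  have Zt: "Z \<subseteq> tuples (m + k)" using cell_props[OF Zc] by simp
  have "Bx m Z 0 = take m ` Z" using Zt by (auto simp: Bx_def)
  then show ?case using cell_take[OF Zc] by simp
next
  case (Suc j)
  have D: "defA SL UNIV (m + j) (Bx m Z j)" using Bx_def_ok[OF ar defA_mono[OF ZA]] by simp
  have b0: "bound_fn SL (m + j) (Bx m Z j) (\<lambda>_. Fin 0)"
    unfolding bound_fn_def using edef_0[OF ar D] econt_const by auto
  have b1: "bound_fn SL (m + j) (Bx m Z j) (\<lambda>_. Fin 1)"
    unfolding bound_fn_def using edef_1[OF ar D] econt_const by auto
  show ?case unfolding add_Suc_right cell.simps Bx_Suc
    using Suc b0 b1 by (intro disjI2 exI[of _ "Bx m Z j"] exI[of _ "\<lambda>_. Fin 0"] exI[of _ "\<lambda>_. Fin 1"]) auto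
qed

lemma Bx_shell: "{g @ y | g y. g \<in> take m ` Z \<and> length y = k \<and> (\<forall>i<k. 0 < y ! i \<and> y ! i < 1)} = Bx m Z k"
  if "Z \<subseteq> tuples (m + k)"
proof (rule set_eqI)
  fix w
  show "w \<in> {g @ y | g y. g \<in> take m ` Z \<and> length y = k \<and> (\<forall>i<k. 0 < y ! i \<and> y ! i < 1)} \<longleftrightarrow> w \<in> Bx m Z k"
  proof
    assume "w \<in> {g @ y | g y. g \<in> take m ` Z \<and> length y = k \<and> (\<forall>i<k. 0 < y ! i \<and> y ! i < 1)}"
    then obtain g y where gy: "w = g @ y" "g \<in> take m ` Z" "length y = k" "\<forall>i<k. 0 < y ! i \<and> y ! i < 1" by blast
    have lg: "length g = m" using gy(2) that by auto
    then show "w \<in> Bx m Z k" using gy by (auto simp: Bx_def nth_append)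
  next
    assume w: "w \<in> Bx m Z k"
    then have lw: "length w = m + k" by (simp add: Bx_def)
    have "w = take m w @ drop m w" by simp
    moreover have "take m w \<in> take m ` Z" using w by (simp add: Bx_def)
    moreover have "length (drop m w) = k" using lw by simp
    moreover have "\<forall>i<k. 0 < drop m w ! i \<and> drop m w ! i < 1" using w lw by (auto simp: Bx_def)
    ultimately show "w \<in> {g @ y | g y. g \<in> take m ` Z \<and> length y = k \<and> (\<forall>i<k. 0 < y ! i \<and> y ! i < 1)}"
      by blast
  qed
qed

lemma id_fdef:
  fixes SL :: "nat \<Rightarrow> 'a::linordered_field list set \<Rightarrow> bool"
  assumes ar: "arith_st SL" and ZA: "defA SL A N Z"
  shows "fdef SL A N N Z (\<lambda>x. x)"
proof -
  note st = arith_is[OF ar]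
  have Zt: "Z \<subseteq> tuples N" using defA_sub[OF ZA] .
  let ?phi = "Conj (At Z [0..<N]) (BigConj (map (\<lambda>i. feq (N + N) (V (N + i)) (V i)) [0..<N])) :: 'a fm"
  have f1: "\<forall>f\<in>set (map (\<lambda>i. feq (N + N) (V (N + i)) (V i)) [0..<N]). fok SL A (N + N) f"
    using fok_terms[OF ar] by auto
  have "fok SL A (N + N) ?phi" using ZA fok_BigConj[OF st f1] by simp
  then have d: "defA SL A (N + N) {w \<in> tuples (N + N). sem ?phi w}" by (rule fm_def[OF st])
  have "{w \<in> tuples (N + N). sem ?phi w} = {x @ x | x. x \<in> Z}"
  proof (rule set_eqI)
    fix w :: "'a list"
    show "w \<in> {w \<in> tuples (N + N). sem ?phi w} \<longleftrightarrow> w \<in> {x @ x | x. x \<in> Z}"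
    proof (cases "length w = N + N")
      case True
      define x where "x = take N w"
      define y where "y = drop N w"
      have w: "w = x @ y" "length x = N" "length y = N" using True by (auto simp: x_def y_def)
      have "sem ?phi w \<longleftrightarrow> x \<in> Z \<and> (\<forall>i<N. y ! i = x ! i)" using w by (auto simp: nth_append)
      also have "\<dots> \<longleftrightarrow> x \<in> Z \<and> y = x" using w by (auto intro: nth_equalityI)
      also have "\<dots> \<longleftrightarrow> w \<in> {x @ x | x. x \<in> Z}"
      proof
        assume "x \<in> Z \<and> y = x" then show "w \<in> {x @ x | x. x \<in> Z}" using w by auto
      next
        assume "w \<in> {x @ x | x. x \<in> Z}"
        then obtain x' where x': "x' \<in> Z" "w = x' @ x'" by auto
        have "length x' = N" using x' Zt by auto
        then have "x = x'" "y = x'" using x' by (auto simp: x_def y_def)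
        then show "x \<in> Z \<and> y = x" using x' by simp
      qed
      finally show ?thesis using True by simp
    next
      case False
      then show ?thesis using Zt by auto
    qed
  qed
  then show ?thesis unfolding fdef_def using d Zt by auto
qed

lemma id_cont: "Z \<subseteq> tuples N \<Longrightarrow> cont_on Z N (\<lambda>x::'a::linordered_field list. x)"
  unfolding cont_on_def using ctn_coord[of Z N] by (simp add: ctn_def)

lemma cl_mono: "X \<subseteq> Y \<Longrightarrow> cl n X \<subseteq> cl n Y"
  unfolding cl_def by blast

lemma cl_sup: "X \<subseteq> tuples n \<Longrightarrow> X \<subseteq> cl n X"
  unfolding cl_def by blast


lemma supercone_props:
  fixes X :: "'a::linordered_field list set"
  shows "supercone SL SP n X \<Longrightarrow> X \<noteq> {} \<and> X \<subseteq> tuples n"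
proof (induction n arbitrary: X)
  case 0
  then show ?case by auto
next
  case (Suc n)
  then have "take n ` X \<noteq> {}" "defA SP UNIV (Suc n) X" by auto
  then show ?case using defA_sub by blast
qed

lemma supercone_take:
  fixes X :: "'a::linordered_field list set"
  shows "supercone SL SP n X \<Longrightarrow> j \<le> n \<Longrightarrow> supercone SL SP j (take j ` X)"
proof (induction n arbitrary: X)
  case 0
  then have "X \<subseteq> tuples 0" using supercone_props by blast
  then have "take 0 ` X = X" by (force simp: image_iff)
  then show ?case using 0 by simp
next
  case (Suc n)
  show ?case
  proof (cases "j = Suc n")
    case True
    have "X \<subseteq> tuples (Suc n)" using Suc.prems supercone_props by blast
    then have "take j ` X = X" using True by (force simp: image_iff)
    then show ?thesis using Suc.prems True by simp
  next
    case False
    then have j: "j \<le> n" using Suc.prems by simp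
    have "supercone SL SP n (take n ` X)" using Suc.prems(1) by simp
    from Suc.IH[OF this j] show ?thesis by (simp add: image_image min_def j)
  qed
qed

definition Ut :: "nat \<Rightarrow> 'a::linordered_field list set" where
  "Ut j = {t. length t = j \<and> (\<forall>i<j. 0 < t ! i \<and> t ! i < 1)}"

context constr
begin

definition Gj :: "nat \<Rightarrow> 'a list \<Rightarrow> 'a list \<Rightarrow> 'a list" where
  "Gj j g y = map (\<lambda>i. Tf i (g @ take (Suc i) y)) [0..<j]"

definition Zf :: "nat \<Rightarrow> 'a list \<Rightarrow> 'a list set" where "Zf j g = fiber (Zj j) g"

lemma Gj_len[simp]: "length (Gj j g y) = j" by (simp add: Gj_def)

lemma Gj_snoc: "length b = j \<Longrightarrow> Gj (Suc j) g (b @ [v]) = Gj j g b @ [Tf j (g @ b @ [v])]"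
  by (auto simp: Gj_def)

lemma take_Gj: "j \<le> j' \<Longrightarrow> take j (Gj j' g y) = Gj j g y"
  by (simp add: Gj_def take_map min_def)

lemma Gj_take: "j \<le> length y \<Longrightarrow> Gj j g (take j y) = Gj j g y"
  by (auto simp: Gj_def min_def)

lemma F_split: "length g = m \<Longrightarrow> length y = k \<Longrightarrow> F (g @ y) = g @ Gj k g y"
  by (simp add: F_def Gj_def)

lemma Zf_len: "j \<le> k \<Longrightarrow> y \<in> Zf j g \<Longrightarrow> length g = m \<Longrightarrow> length y = j"
  using Zj_sub[of j] by (auto simp: Zf_def fiber_def)

lemma Zj_take:
  assumes "w \<in> Zj j" "i \<le> j" "j \<le> k" shows "take (m + i) w \<in> Zj i"
  using assms by (auto simp: Zj_def min_def)

lemma Zf_take: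
  assumes "y \<in> Zf j g" "i \<le> j" "j \<le> k" "length g = m" shows "take i y \<in> Zf i g"
proof -
  have gy: "g @ y \<in> Zj j" using assms(1) by (simp add: Zf_def fiber_def)
  have "take (m + i) (g @ y) \<in> Zj i" using Zj_take[OF gy assms(2,3)] .
  moreover have "take (m + i) (g @ y) = g @ take i y" using assms(4) by simp
  ultimately show ?thesis by (simp add: Zf_def fiber_def)
qed

lemma Gj_range:
  assumes y: "y \<in> Zf j g" and j: "j \<le> k" and g: "length g = m"
  shows "Gj j g y \<in> Ut j"
proof -
  have "0 < Tf i (g @ take (Suc i) y) \<and> Tf i (g @ take (Suc i) y) < 1" if i: "i < j" for i
  proof -
    have "take (Suc i) y \<in> Zf (Suc i) g" using Zf_take[OF y _ j g, of "Suc i"] i by simp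
    then have "g @ take (Suc i) y \<in> Zj (Suc i)" by (simp add: Zf_def fiber_def)
    then show ?thesis using Tf_bounds' i j by simp
  qed
  then show ?thesis by (simp add: Ut_def Gj_def)
qed

lemma Gj_inj:
  assumes j: "j \<le> k" and g: "length g = m"
  shows "y \<in> Zf j g \<Longrightarrow> y' \<in> Zf j g \<Longrightarrow> Gj j g y = Gj j g y' \<Longrightarrow> y = y'"
  using j
proof (induction j arbitrary: y y')
  case 0
  then show ?case using Zf_len[of 0 y g] Zf_len[of 0 y' g] g by simp
next
  case (Suc j)
  have jk: "j < k" using Suc by simp
  have ly: "length y = Suc j" "length y' = Suc j" using Zf_len Suc.prems g by auto
  obtain b v where bv: "y = b @ [v]" "length b = j" using ly(1) snoc_split2 by blast
  obtain b' v' where bv': "y' = b' @ [v']" "length b' = j" using ly(2) snoc_split2 by blast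
  have bZ: "b \<in> Zf j g" "b' \<in> Zf j g"
    using Zf_take[OF Suc.prems(1), of j] Zf_take[OF Suc.prems(2), of j] Suc.prems(4) g bv bv' by auto
  have e: "Gj j g b @ [Tf j (g @ b @ [v])] = Gj j g b' @ [Tf j (g @ b' @ [v'])]"
    using Suc.prems(3) Gj_snoc bv bv' by metis
  then have "Gj j g b = Gj j g b'" by simp
  then have bb: "b = b'" using Suc.IH bZ Suc.prems(4) by simp
  have "Tf j ((g @ b) @ [v]) = Tf j ((g @ b) @ [v'])" using e bb by simp
  moreover have "g @ b \<in> Zj j" using bZ by (simp add: Zf_def fiber_def)
  ultimately have "v = v'" using Tf_inj[OF jk] by blast
  then show ?case using bb bv bv' by simp
qed

lemma Gj_onto:
  assumes g: "g \<in> Zj 0" and j: "j \<le> k"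
  shows "t \<in> Ut j \<Longrightarrow> \<exists>y\<in>Zf j g. Gj j g y = t"
  using j
proof (induction j arbitrary: t)
  case 0
  then have "t = []" by (simp add: Ut_def)
  moreover have "[] \<in> Zf 0 g" using g by (simp add: Zf_def fiber_def)
  ultimately show ?case by (auto simp: Gj_def)
next
  case (Suc j)
  have jk: "j < k" using Suc by simp
  have lt: "length t = Suc j" using Suc.prems by (simp add: Ut_def)
  obtain t' c where tc: "t = t' @ [c]" "length t' = j" using lt snoc_split2 by blast
  have A: "\<forall>i<Suc j. 0 < t ! i \<and> t ! i < 1" using Suc.prems by (simp add: Ut_def)
  have "\<forall>i<j. 0 < t' ! i \<and> t' ! i < 1"
  proof (intro allI impI)
    fix i assume i: "i < j"
    then have "t ! i = t' ! i" using tc by (simp add: nth_append)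
    moreover have "i < Suc j" using i by simp
    ultimately show "0 < t' ! i \<and> t' ! i < 1" using A by metis
  qed
  then have "t' \<in> Ut j" using tc by (simp add: Ut_def)
  then obtain y where y: "y \<in> Zf j g" "Gj j g y = t'" using Suc.IH jk by auto
  have "t ! j = c" using tc by (simp add: nth_append)
  then have c: "0 < c" "c < 1" using A by auto
  have gy: "g @ y \<in> Zj j" using y by (simp add: Zf_def fiber_def)
  obtain v where v: "(g @ y) @ [v] \<in> Zj (Suc j)" "Tf j ((g @ y) @ [v]) = c" using Tf_onto[OF jk gy c] by blast
  have lg: "length g = m" using g Zj_sub[of 0] by auto
  have ly: "length y = j" using Zf_len y jk lg by simp
  have "y @ [v] \<in> Zf (Suc j) g" using v by (simp add: Zf_def fiber_def)
  moreover have "Gj (Suc j) g (y @ [v]) = t" using Gj_snoc[OF ly] y v tc by simp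
  ultimately show ?case by blast
qed

lemma Gj_nb:
  assumes y: "y \<in> Zf j g" and j: "j \<le> k" and g: "length g = m" and b: "Gj j g y \<in> box lb ub"
  shows "nb (Zf j g) y (\<lambda>y'. Gj j g y' \<in> box lb ub)"
proof -
  have Zs: "Zf j g \<subseteq> tuples j" using Zf_len[OF j _ g] by auto
  have ll: "length lb = j" "length ub = j" using b by (auto simp: box_mem)
  have c: "ctn (Zf j g) (\<lambda>y. Tf i (g @ take (Suc i) y))" if i: "i < j" for i
  proof (rule ctn_pre[OF Tf_ctn Zs])
    show "i < k" using i j by simp
    show "Suc i \<le> j" using i by simp
    show "\<forall>y\<in>Zf j g. g @ take (Suc i) y \<in> Zj (Suc i)"
      using Zf_take[OF _ _ j g, of _ "Suc i"] i by (auto simp: Zf_def fiber_def)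
  qed
  have "nb (Zf j g) y (\<lambda>y'. \<forall>i<j. lb ! i < Gj j g y' ! i \<and> Gj j g y' ! i < ub ! i)"
  proof (rule nb_all)
    fix i assume i: "i < j"
    have bi: "lb ! i < Gj j g y ! i" "Gj j g y ! i < ub ! i" using b i ll by (auto simp: box_mem)
    have e: "Gj j g y' ! i = Tf i (g @ take (Suc i) y')" for y' using i by (simp add: Gj_def)
    have "nb (Zf j g) y (\<lambda>y'. lb ! i < Tf i (g @ take (Suc i) y'))"
      using c[OF i] y bi e unfolding ctn_iff by auto
    moreover have "nb (Zf j g) y (\<lambda>y'. Tf i (g @ take (Suc i) y') < ub ! i)"
      using c[OF i] y bi e unfolding ctn_iff by auto
    ultimately show "nb (Zf j g) y (\<lambda>y'. lb ! i < Gj j g y' ! i \<and> Gj j g y' ! i < ub ! i)"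
      unfolding e by (rule nb_conj)
  qed
  then show ?thesis by (rule nb_mono) (use ll in \<open>auto simp: box_mem\<close>)
qed

end


lemma ext_between: "eless (Fin y) e \<Longrightarrow> \<exists>c. y < c \<and> eless (Fin c) (e::'a::linordered_field ext)"
proof -
  assume a: "eless (Fin y) e"
  then have "psie (Fin y) < psie e" by (rule psie_mono)
  then obtain d where "psie (Fin y) < d" "d < psie e" using dense by blast
  then obtain c where "c \<in> eivl (Fin y) e" using psi_onto_eivl by blast
  then show ?thesis by (auto simp: eivl_iff)
qed

lemma ext_between2: "eless e (Fin y) \<Longrightarrow> \<exists>c. c < y \<and> eless (e::'a::linordered_field ext) (Fin c)"
proof -
  assume a: "eless e (Fin y)"
  then have "psie e < psie (Fin y)" by (rule psie_mono)
  then obtain d where "psie e < d" "d < psie (Fin y)" using dense by blast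
  then obtain c where "c \<in> eivl e (Fin y)" using psi_onto_eivl by blast
  then show ?thesis by (auto simp: eivl_iff)
qed

lemma cl_bound_low:
  fixes X :: "'a::linordered_field list set"
  assumes h1: "econt_on (tuples j) h1"
    and bd: "\<forall>a\<in>take j ` X. \<forall>y. a @ [y] \<in> X \<longrightarrow> eless (h1 a) (Fin y)"
    and X: "X \<subseteq> tuples (Suc j)"
    and b: "b \<in> tuples j" and cl: "b @ [y] \<in> cl (Suc j) X" and lt: "eless (Fin y) (h1 b)"
  shows False
proof -
  obtain c where c: "y < c" "eless (Fin c) (h1 b)" using ext_between[OF lt] by blast
  have "nb (tuples j) b (\<lambda>b'. eless (Fin c) (h1 b'))" using h1 b c(2) unfolding econt_iff by blast
  then obtain lo hi where lh: "b \<in> box lo hi" "\<forall>b'\<in>tuples j \<inter> box lo hi. eless (Fin c) (h1 b')"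
    unfolding nb_def by blast
  have ll: "length lo = length b" "length hi = length b" using lh(1) by (auto simp: box_mem)
  have "b @ [y] \<in> box (lo @ [y - 1]) (hi @ [c])" using box_snoc[OF ll] lh(1) c(1) by simp
  then obtain w where w: "w \<in> box (lo @ [y - 1]) (hi @ [c])" "w \<in> X" using cl unfolding cl_def by blast
  have "length w = Suc j" using w X by auto
  then obtain b' y' where bw: "w = b' @ [y']" "length b' = j" using snoc_split2 by blast
  have lb: "length lo = length b'" "length hi = length b'" using ll b bw by auto
  have inb: "b' \<in> box lo hi" "y' < c" using w(1) box_snoc[OF lb] bw by auto
  have "eless (Fin c) (h1 b')" using lh(2) inb bw by auto
  moreover have "b' \<in> take j ` X" using w(2) bw by (force simp: image_iff)
  then have "eless (h1 b') (Fin y')" using bd w(2) bw by auto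
  ultimately have "eless (Fin c) (Fin y')" by (rule eless_trans)
  then show False using inb(2) by simp
qed

lemma cl_bound_high:
  fixes X :: "'a::linordered_field list set"
  assumes h2: "econt_on (tuples j) h2"
    and bd: "\<forall>a\<in>take j ` X. \<forall>y. a @ [y] \<in> X \<longrightarrow> eless (Fin y) (h2 a)"
    and X: "X \<subseteq> tuples (Suc j)"
    and b: "b \<in> tuples j" and cl: "b @ [y] \<in> cl (Suc j) X" and lt: "eless (h2 b) (Fin y)"
  shows False
proof -
  obtain c where c: "c < y" "eless (h2 b) (Fin c)" using ext_between2[OF lt] by blast
  have "nb (tuples j) b (\<lambda>b'. eless (h2 b') (Fin c))" using h2 b c(2) unfolding econt_iff by blast
  then obtain lo hi where lh: "b \<in> box lo hi" "\<forall>b'\<in>tuples j \<inter> box lo hi. eless (h2 b') (Fin c)"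
    unfolding nb_def by blast
  have ll: "length lo = length b" "length hi = length b" using lh(1) by (auto simp: box_mem)
  have "b @ [y] \<in> box (lo @ [c]) (hi @ [y + 1])" using box_snoc[OF ll] lh(1) c(1) by simp
  then obtain w where w: "w \<in> box (lo @ [c]) (hi @ [y + 1])" "w \<in> X" using cl unfolding cl_def by blast
  have "length w = Suc j" using w X by auto
  then obtain b' y' where bw: "w = b' @ [y']" "length b' = j" using snoc_split2 by blast
  have lb: "length lo = length b'" "length hi = length b'" using ll b bw by auto
  have inb: "b' \<in> box lo hi" "c < y'" using w(1) box_snoc[OF lb] bw by auto
  have "eless (h2 b') (Fin c)" using lh(2) inb bw by auto
  moreover have "b' \<in> take j ` X" using w(2) bw by (force simp: image_iff)
  then have "eless (Fin y') (h2 b')" using bd w(2) bw by auto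
  ultimately have "eless (Fin y') (Fin c)" using eless_trans by blast
  then show False using inb(2) by simp
qed

context constr
begin

lemma TG_mem: "j < k \<Longrightarrow> length w = Suc (m + j) \<Longrightarrow> w @ [v] \<in> TG j \<longleftrightarrow> w \<in> Zj (Suc j) \<and> v = Tf j w"
proof -
  assume j: "j < k" and lw: "length w = Suc (m + j)"
  have "\<And>w'. w' \<in> Zj (Suc j) \<Longrightarrow> length w' = Suc (m + j)" using Zj_sub[of "Suc j"] j by auto
  then show ?thesis using lw by (auto simp: TG_def)
qed

lemma tau_def_ok:
  assumes j: "j < k" and c: "length c = m + j"
  shows "defA SL UNIV 2 {[y, (if c @ [y] \<in> Zj (Suc j) then Tf j (c @ [y]) else 0)] | y. True}"
proof -
  let ?Zb = "fiber (Zj (Suc j)) c" and ?Tb = "fiber (TG j) c"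
  have Zb: "defA SL UNIV 1 ?Zb"
    using defA_fiber[of SL UNIV c 1 "Zj (Suc j)"] defA_mono[OF ZjA[of "Suc j"]] j c by simp
  have Tb: "defA SL UNIV 2 ?Tb"
    using defA_fiber[of SL UNIV c 2 "TG j"] defA_mono[OF TG_def_ok[OF j]] c by (simp add: numeral_2_eq_2)
  let ?phi = "Disj (Conj (At ?Zb [0]) (At ?Tb [0, 1])) (Conj (Neg (At ?Zb [0])) (feq 2 (V 1) C0)) :: 'a fm"
  have "fok SL UNIV 2 ?phi" using Zb Tb fok_terms[OF ar] by (simp add: numeral_2_eq_2)
  then have d: "defA SL UNIV 2 {w \<in> tuples 2. sem ?phi w}" by (rule fm_def[OF st])
  have "{w \<in> tuples 2. sem ?phi w} = {[y, (if c @ [y] \<in> Zj (Suc j) then Tf j (c @ [y]) else 0)] | y. True}"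
  proof (rule set_eqI)
    fix w :: "'a list"
    show "w \<in> {w \<in> tuples 2. sem ?phi w} \<longleftrightarrow> w \<in> {[y, (if c @ [y] \<in> Zj (Suc j) then Tf j (c @ [y]) else 0)] | y. True}"
    proof (cases "length w = 2")
      case True
      then obtain y t where w: "w = [y, t]" by (auto simp: numeral_2_eq_2 length_Suc_conv)
      have lc: "length (c @ [y]) = Suc (m + j)" using c by simp
      have T: "[y, t] \<in> ?Tb \<longleftrightarrow> c @ [y] \<in> Zj (Suc j) \<and> t = Tf j (c @ [y])"
        using TG_mem[OF j lc, of t] by (simp add: fiber_def)
      show ?thesis using w T by (auto simp: fiber_def)
    next
      case False
      then show ?thesis by auto
    qed
  qed
  then show ?thesis using d by simp
qed

end

locale constrJ = constr SL A m k Z hL hU for SL :: "nat \<Rightarrow> 'a::linordered_field list set \<Rightarrow> bool"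
    and A m k Z hL hU +
  fixes P :: "'a set" and S J :: "'a list set"
  assumes fam: "supercone_family SL (gen SL P) m k S J"
    and shell: "is_shell SL m k S J Z"
    and JA: "defA (gen SL P) A (m + k) J"
begin

abbreviation "SP \<equiv> gen SL P"

lemma S_sub: "S \<subseteq> tuples m" and J_sub: "J \<subseteq> tuples (m + k)"
  and J_eq: "J = {g @ y | g y. g \<in> S \<and> y \<in> fiber J g}"
  and sc: "\<forall>g\<in>S. supercone SL SP k (fiber J g)"
  using fam by (auto simp: supercone_family_def)

lemma JZ: "J \<subseteq> Z" using shell by (simp add: is_shell_def)

lemma shell_cl: "g \<in> S \<Longrightarrow> 0 < j \<Longrightarrow> j \<le> k \<Longrightarrow>
   cl j (fiber (take (m + j) ` J) g) = cl j (fiber (take (m + j) ` Z) g)"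
  using shell by (simp add: is_shell_def)

definition Kf :: "'a list \<Rightarrow> nat \<Rightarrow> 'a list set" where "Kf g j = take j ` fiber J g"

lemma g_len: "g \<in> S \<Longrightarrow> length g = m" using S_sub by auto

lemma J_dest: "x \<in> J \<Longrightarrow> \<exists>g z. x = g @ z \<and> g \<in> S \<and> g @ z \<in> J \<and> length z = k"
proof -
  assume x: "x \<in> J"
  then obtain g z where gz: "x = g @ z" "g \<in> S" "z \<in> fiber J g" using J_eq by blast
  have "length z = k" using gz x J_sub g_len by auto
  then show ?thesis using gz x by blast
qed

lemma K_fib: "g \<in> S \<Longrightarrow> j \<le> k \<Longrightarrow> fiber (take (m + j) ` J) g = Kf g j"
proof -
  assume g: "g \<in> S" and j: "j \<le> k"
  have lg: "length g = m" using g_len[OF g] .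
  show ?thesis
  proof (rule set_eqI)
    fix y
    show "y \<in> fiber (take (m + j) ` J) g \<longleftrightarrow> y \<in> Kf g j"
    proof
      assume "y \<in> fiber (take (m + j) ` J) g"
      then obtain x where x: "x \<in> J" "g @ y = take (m + j) x" by (auto simp: fiber_def)
      obtain g' z where gz: "x = g' @ z" "g' \<in> S" "g' @ z \<in> J" "length z = k" using J_dest[OF x(1)] by blast
      have "g @ y = g' @ take j z" using x(2) gz g_len[OF gz(2)] by simp
      then have "g = g'" "y = take j z" using lg g_len[OF gz(2)] by auto
      then show "y \<in> Kf g j" using gz by (auto simp: Kf_def fiber_def)
    next
      assume "y \<in> Kf g j"
      then obtain z where z: "g @ z \<in> J" "y = take j z" by (auto simp: Kf_def fiber_def)
      have "take (m + j) (g @ z) = g @ y" using z lg by simp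
      then show "y \<in> fiber (take (m + j) ` J) g" using z by (force simp: fiber_def)
    qed
  qed
qed

lemma Kf_sub: "g \<in> S \<Longrightarrow> j \<le> k \<Longrightarrow> Kf g j \<subseteq> Zf j g"
proof -
  assume g: "g \<in> S" and j: "j \<le> k"
  have "fiber (take (m + j) ` J) g \<subseteq> fiber (take (m + j) ` Z) g" using JZ by (auto simp: fiber_def)
  then show ?thesis using K_fib[OF g j] by (simp add: Zf_def Zj_def)
qed

lemma Kf_sc: "g \<in> S \<Longrightarrow> j \<le> k \<Longrightarrow> supercone SL SP j (Kf g j)"
  unfolding Kf_def using supercone_take sc by blast

lemma Kf_take: "j < k \<Longrightarrow> take j ` Kf g (Suc j) = Kf g j"
  by (simp add: Kf_def image_image min_def)

lemma Kf_len: "g \<in> S \<Longrightarrow> j \<le> k \<Longrightarrow> y \<in> Kf g j \<Longrightarrow> length y = j"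
  using Kf_sub Zf_len g_len by blast

lemma S_Zj0: "g \<in> S \<Longrightarrow> g \<in> Zj 0"
proof -
  assume g: "g \<in> S"
  obtain z where "z \<in> fiber J g" using sc g supercone_props by blast
  then have "g @ z \<in> Z" using JZ by (auto simp: fiber_def)
  then have "take m (g @ z) \<in> Zj 0" using Zj_mem[of "g @ z" 0] by simp
  then show ?thesis using g_len[OF g] by simp
qed

lemma Jp_fib: "g \<in> S \<Longrightarrow> j \<le> k \<Longrightarrow> fiber (take (m + j) ` (F ` J)) g = Gj j g ` Kf g j"
proof -
  assume g: "g \<in> S" and j: "j \<le> k"
  have lg: "length g = m" using g_len[OF g] .
  have FJ: "take (m + j) (F x) = g' @ Gj j g' (take j z)" if "x = g' @ z" "g' \<in> S" "length z = k" for x g' z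
  proof -
    have "F x = g' @ Gj k g' z" using F_split g_len that by simp
    then have "take (m + j) (F x) = g' @ take j (Gj k g' z)" using g_len[OF that(2)] by simp
    also have "\<dots> = g' @ Gj j g' (take j z)" using take_Gj[OF j] Gj_take[of j z g'] that j by simp
    finally show ?thesis .
  qed
  show ?thesis
  proof (rule set_eqI)
    fix y
    show "y \<in> fiber (take (m + j) ` (F ` J)) g \<longleftrightarrow> y \<in> Gj j g ` Kf g j"
    proof
      assume "y \<in> fiber (take (m + j) ` (F ` J)) g"
      then obtain x where x: "x \<in> J" "g @ y = take (m + j) (F x)" by (auto simp: fiber_def)
      obtain g' z where gz: "x = g' @ z" "g' \<in> S" "g' @ z \<in> J" "length z = k" using J_dest[OF x(1)] by blast
      have "g @ y = g' @ Gj j g' (take j z)" using x(2) FJ[OF gz(1,2,4)] by simp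
      then have "g = g'" "y = Gj j g (take j z)" using lg g_len[OF gz(2)] by auto
      moreover have "take j z \<in> Kf g j" using gz \<open>g = g'\<close> by (auto simp: Kf_def fiber_def)
      ultimately show "y \<in> Gj j g ` Kf g j" by blast
    next
      assume "y \<in> Gj j g ` Kf g j"
      then obtain z where z: "g @ z \<in> J" "y = Gj j g (take j z)" by (auto simp: Kf_def fiber_def)
      have lz: "length z = k" using z J_sub lg by auto
      have "take (m + j) (F (g @ z)) = g @ y" using FJ[OF refl g lz] z by simp
      then show "y \<in> fiber (take (m + j) ` (F ` J)) g" using z by (force simp: fiber_def)
    qed
  qed
qed

lemma Bx_fib: "g \<in> Zj 0 \<Longrightarrow> j \<le> k \<Longrightarrow> fiber (take (m + j) ` Bx m Z k) g = Ut j"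
proof -
  assume g: "g \<in> Zj 0" and j: "j \<le> k"
  have lg: "length g = m" using g Zj_sub[of 0] by auto
  have gZ: "g \<in> take m ` Z" using g by (simp add: Zj_def)
  show ?thesis
  proof (rule set_eqI)
    fix y :: "'a list"
    show "y \<in> fiber (take (m + j) ` Bx m Z k) g \<longleftrightarrow> y \<in> Ut j"
    proof
      assume "y \<in> fiber (take (m + j) ` Bx m Z k) g"
      then obtain x where x: "x \<in> Bx m Z k" "g @ y = take (m + j) x" by (auto simp: fiber_def)
      have lx: "length x = m + k" using x by (simp add: Bx_def)
      have "length (g @ y) = length (take (m + j) x)" using x(2) by (rule arg_cong)
      then have ly: "length y = j" using lx lg j by simp
      have "\<forall>i<j. 0 < y ! i \<and> y ! i < 1"
      proof (intro allI impI)
        fix i assume i: "i < j"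
        have "y ! i = (g @ y) ! (m + i)" using lg by (simp add: nth_append)
        also have "\<dots> = x ! (m + i)" using x(2) i by simp
        finally show "0 < y ! i \<and> y ! i < 1" using x(1) i j unfolding Bx_def by auto
      qed
      then show "y \<in> Ut j" using ly by (simp add: Ut_def)
    next
      assume y: "y \<in> Ut j"
      define x where "x = g @ y @ replicate (k - j) (1/2 :: 'a)"
      have ly: "length y = j" using y by (simp add: Ut_def)
      have c1: "length x = m + k" using lg ly j by (simp add: x_def)
      have c2: "take m x \<in> take m ` Z" using gZ lg by (simp add: x_def)
      have c3: "\<forall>i<k. 0 < x ! (m + i) \<and> x ! (m + i) < 1"
      proof (intro allI impI)
        fix i assume i: "i < k"
        show "0 < x ! (m + i) \<and> x ! (m + i) < 1"
        proof (cases "i < j")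
          case True
          then show ?thesis using y lg ly by (simp add: x_def nth_append Ut_def)
        next
          case False
          then show ?thesis using lg ly i by (simp add: x_def nth_append)
        qed
      qed
      have "x \<in> Bx m Z k" using c1 c2 c3 by (simp add: Bx_def)
      moreover have "take (m + j) x = g @ y" using lg ly by (simp add: x_def)
      ultimately show "y \<in> fiber (take (m + j) ` Bx m Z k) g" by (force simp: fiber_def)
    qed
  qed
qed

lemma Jp_cl:
  assumes g: "g \<in> S" and j: "0 < j" "j \<le> k"
  shows "cl j (Gj j g ` Kf g j) = cl j (Ut j)"
proof
  have lg: "length g = m" using g_len[OF g] .
  show "cl j (Gj j g ` Kf g j) \<subseteq> cl j (Ut j)"
    using Gj_range Kf_sub[OF g j(2)] j(2) lg by (intro cl_mono) blast
  show "cl j (Ut j) \<subseteq> cl j (Gj j g ` Kf g j)"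
  proof
    fix x :: "'a list" assume x: "x \<in> cl j (Ut j)"
    have clK: "cl j (Kf g j) = cl j (Zf j g)"
      using shell_cl[OF g j] K_fib[OF g j(2)] by (simp add: Zf_def Zj_def)
    have "\<forall>lb ub. x \<in> box lb ub \<longrightarrow> box lb ub \<inter> Gj j g ` Kf g j \<noteq> {}"
    proof (intro allI impI)
      fix lb ub assume xb: "x \<in> box lb ub"
      obtain u where u: "u \<in> box lb ub" "u \<in> Ut j" using x xb unfolding cl_def by blast
      have lu: "length u = j" using u(2) by (simp add: Ut_def)
      let ?l0 = "replicate j (0::'a)" and ?u1 = "replicate j (1::'a)"
      have ub: "u \<in> box ?l0 ?u1" using u(2) by (simp add: Ut_def box_mem)
      note bi = box_inter[OF u(1) ub]
      have sub: "box (lmax lb ?l0) (lmin ub ?u1) \<subseteq> box lb ub" using bi(2) by blast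
      obtain z where z: "z \<in> Zf j g" "Gj j g z = u" using Gj_onto[OF S_Zj0[OF g] j(2) u(2)] by blast
      have "nb (Zf j g) z (\<lambda>y'. Gj j g y' \<in> box (lmax lb ?l0) (lmin ub ?u1))"
        by (rule Gj_nb[OF z(1) j(2) lg]) (use bi z in simp)
      then obtain lo' hi' where N: "z \<in> box lo' hi'" "\<forall>y'\<in>Zf j g \<inter> box lo' hi'. Gj j g y' \<in> box (lmax lb ?l0) (lmin ub ?u1)"
        unfolding nb_def by blast
      have "Zf j g \<subseteq> tuples j" using Zf_len[OF j(2) _ lg] by auto
      then have "z \<in> cl j (Zf j g)" using cl_sup[of "Zf j g" j] z(1) by blast
      then have "z \<in> cl j (Kf g j)" using clK by simp
      then obtain z' where z': "z' \<in> box lo' hi'" "z' \<in> Kf g j" using N(1) unfolding cl_def by blast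
      have "z' \<in> Zf j g" using z'(2) Kf_sub[OF g j(2)] by blast
      then have "Gj j g z' \<in> box lb ub" using N(2) z'(1) sub by blast
      then show "box lb ub \<inter> Gj j g ` Kf g j \<noteq> {}" using z'(2) by blast
    qed
    moreover have "x \<in> tuples j" using x by (simp add: cl_def)
    ultimately show "x \<in> cl j (Gj j g ` Kf g j)" unfolding cl_def by blast
  qed
qed

lemma FJ_def: "defA SP A (m + k) (F ` J)"
  using image_def_ok[OF JA JZ] .

lemma fib_bounds:
  assumes g: "g \<in> S" and j: "j < k" and b: "b \<in> Kf g j"
    and h: "econt_on (tuples j) h1" "econt_on (tuples j) h2"
    and bd: "\<forall>a\<in>take j ` Kf g (Suc j). {y. a @ [y] \<in> Kf g (Suc j)} \<subseteq> eivl (h1 a) (h2 a)"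
  shows "{y. g @ b @ [y] \<in> Zj (Suc j)} \<subseteq> eivl (h1 b) (h2 b)"
proof
  fix y assume y: "y \<in> {y. g @ b @ [y] \<in> Zj (Suc j)}"
  have lg: "length g = m" using g_len[OF g] .
  have bZ: "g @ b \<in> Zj j" using b Kf_sub[OF g, of j] j by (auto simp: Zf_def fiber_def)
  have bt: "b \<in> tuples j" using Kf_len[OF g _ b] j by simp
  have Xs: "Kf g (Suc j) \<subseteq> tuples (Suc j)" using Kf_len[OF g, of "Suc j"] j by auto
  have fibZ: "\<And>y'. g @ b @ [y'] \<in> Zj (Suc j) \<longleftrightarrow> y' \<in> eivl (hL j (g @ b)) (hU j (g @ b))"
    using lev_fib[OF j bZ] by simp
  have incl: "b @ [y'] \<in> cl (Suc j) (Kf g (Suc j))" if "g @ b @ [y'] \<in> Zj (Suc j)" for y'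
  proof -
    have "b @ [y'] \<in> Zf (Suc j) g" using that by (simp add: Zf_def fiber_def)
    moreover have "Zf (Suc j) g \<subseteq> tuples (Suc j)" using Zf_len[of "Suc j" _ g] j lg by auto
    ultimately have "b @ [y'] \<in> cl (Suc j) (Zf (Suc j) g)" using cl_sup by blast
    moreover have "cl (Suc j) (Kf g (Suc j)) = cl (Suc j) (Zf (Suc j) g)"
      using shell_cl[OF g, of "Suc j"] K_fib[OF g, of "Suc j"] j by (simp add: Zf_def Zj_def)
    ultimately show ?thesis by simp
  qed
  have bd0: "y \<in> eivl (h1 a) (h2 a)" if "a \<in> take j ` Kf g (Suc j)" "a @ [y] \<in> Kf g (Suc j)" for a y
    using bd that by blast
  have bd1: "\<forall>a\<in>take j ` Kf g (Suc j). \<forall>y. a @ [y] \<in> Kf g (Suc j) \<longrightarrow> eless (h1 a) (Fin y)"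
    using bd0 by (simp add: eivl_iff)
  have bd2: "\<forall>a\<in>take j ` Kf g (Suc j). \<forall>y. a @ [y] \<in> Kf g (Suc j) \<longrightarrow> eless (Fin y) (h2 a)"
    using bd0 by (simp add: eivl_iff)
  have "eless (h1 b) (Fin y)"
  proof (rule ccontr)
    assume n: "\<not> eless (h1 b) (Fin y)"
    obtain y' where y': "y' \<in> eivl (hL j (g @ b)) (hU j (g @ b))" "y' < y"
      using eivl_below fibZ y by blast
    have "eless (Fin y') (h1 b)"
    proof -
      have yy: "eless (Fin y') (Fin y)" using y'(2) by simp
      have "h1 b = Fin y \<or> eless (Fin y) (h1 b)" using n eless_total by blast
      then show ?thesis
      proof
        assume "h1 b = Fin y" then show ?thesis using yy by simp
      next
        assume "eless (Fin y) (h1 b)" then show ?thesis using eless_trans[OF yy] by blast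
      qed
    qed
    then show False using cl_bound_low[OF h(1) bd1 Xs bt incl] y' fibZ by blast
  qed
  moreover have "eless (Fin y) (h2 b)"
  proof (rule ccontr)
    assume n: "\<not> eless (Fin y) (h2 b)"
    obtain y' where y': "y' \<in> eivl (hL j (g @ b)) (hU j (g @ b))" "y < y'"
      using eivl_above fibZ y by blast
    have "eless (h2 b) (Fin y')"
    proof -
      have yy: "eless (Fin y) (Fin y')" using y'(2) by simp
      have "h2 b = Fin y \<or> eless (h2 b) (Fin y)" using n eless_total by blast
      then show ?thesis
      proof
        assume "h2 b = Fin y" then show ?thesis using yy by simp
      next
        assume "eless (h2 b) (Fin y)" then show ?thesis using eless_trans[OF _ yy] by blast
      qed
    qed
    then show False using cl_bound_high[OF h(2) bd2 Xs bt incl] y' fibZ by blast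
  qed
  ultimately show "y \<in> eivl (h1 b) (h2 b)" by (simp add: eivl_iff)
qed

lemma Jp_sc: "g \<in> S \<Longrightarrow> j \<le> k \<Longrightarrow> supercone SL SP j (Gj j g ` Kf g j)"
proof (induction j)
  case 0
  have "Kf g 0 \<noteq> {}" using sc 0 supercone_props unfolding Kf_def by blast
  then have "Kf g 0 = {[]}" by (auto simp: Kf_def)
  then show ?case by (simp add: Gj_def)
next
  case (Suc j)
  note g = Suc.prems(1)
  have j: "j < k" using Suc.prems by simp
  have lg: "length g = m" using g_len[OF g] .
  let ?X = "Gj (Suc j) g ` Kf g (Suc j)"
  have d1: "defA SP UNIV (Suc j) ?X"
  proof -
    have "defA SP A ((m + Suc j) + (k - Suc j)) (F ` J)" using FJ_def j by simp
    then have "defA SP A (m + Suc j) (take (m + Suc j) ` (F ` J))"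
      by (rule defA_projn[OF gen_structure[OF st]])
    then have "defA SP UNIV (length g + Suc j) (take (m + Suc j) ` (F ` J))"
      using lg by (auto intro: defA_mono)
    then have "defA SP UNIV (Suc j) (fiber (take (m + Suc j) ` (F ` J)) g)" by (rule defA_fiber) simp
    then show ?thesis using Jp_fib[OF g, of "Suc j"] j by simp
  qed
  have tk: "take j ` ?X = Gj j g ` Kf g j"
  proof -
    have e: "take j (Gj (Suc j) g y) = Gj j g (take j y)" if "y \<in> Kf g (Suc j)" for y
    proof -
      have "length y = Suc j" using Kf_len[OF g _ that] j by simp
      then show ?thesis using take_Gj[of j "Suc j" g y] Gj_take[of j y g] by simp
    qed
    have "take j ` ?X = (\<lambda>y. Gj j g (take j y)) ` Kf g (Suc j)"
      unfolding image_image using e by (rule image_cong[OF refl])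
    also have "\<dots> = Gj j g ` (take j ` Kf g (Suc j))" by (simp add: image_image)
    also have "\<dots> = Gj j g ` Kf g j" using Kf_take[OF j] by simp
    finally show ?thesis .
  qed
  have d2: "supercone SL SP j (take j ` ?X)" using tk Suc.IH g j by simp
  have tj: "defA SL UNIV j (tuples j)" by (rule defA_of[OF st_univ[OF st] st])
  have e0: "edef SL UNIV j (tuples j) (\<lambda>_. Fin 0)" by (rule edef_0[OF ar tj])
  have e1: "edef SL UNIV j (tuples j) (\<lambda>_. Fin 1)" by (rule edef_1[OF ar tj])
  have main: "{y. a @ [y] \<in> ?X} \<subseteq> eivl (Fin 0) (Fin 1) \<and>
      small SL 1 {[y] | y. y \<in> eivl (Fin 0) (Fin 1) - {y. a @ [y] \<in> ?X}}"
    if a: "a \<in> take j ` ?X" for a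
  proof -
    obtain b where b: "b \<in> Kf g j" "a = Gj j g b" using a tk by auto
    have lb: "length b = j" using Kf_len[OF g _ b(1)] j by simp
    have bZ: "g @ b \<in> Zj j" using b Kf_sub[OF g, of j] j by (auto simp: Zf_def fiber_def)
    define \<tau> where "\<tau> y = Tf j ((g @ b) @ [y])" for y
    define Kfib where "Kfib = {y. b @ [y] \<in> Kf g (Suc j)}"
    define Zfib where "Zfib = {y. (g @ b) @ [y] \<in> Zj (Suc j)}"
    have KZ: "Kfib \<subseteq> Zfib" using Kf_sub[OF g, of "Suc j"] j by (auto simp: Kfib_def Zfib_def Zf_def fiber_def)
    have fe: "{t. a @ [t] \<in> ?X} = \<tau> ` Kfib"
    proof (rule set_eqI)
      fix t
      show "t \<in> {t. a @ [t] \<in> ?X} \<longleftrightarrow> t \<in> \<tau> ` Kfib"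
      proof
        assume "t \<in> {t. a @ [t] \<in> ?X}"
        then obtain y' where y': "y' \<in> Kf g (Suc j)" "a @ [t] = Gj (Suc j) g y'" by auto
        have "length y' = Suc j" using Kf_len[OF g _ y'(1)] j by simp
        then obtain b' v where bv: "y' = b' @ [v]" "length b' = j" using snoc_split2 by blast
        have e: "Gj j g b @ [t] = Gj j g b' @ [Tf j (g @ b' @ [v])]" using y'(2) b(2) Gj_snoc[OF bv(2)] bv by simp
        have b'K: "b' \<in> Kf g j" using y'(1) bv Kf_take[OF j] by (force simp: image_iff)
        have bb: "b' \<in> Zf j g" "b \<in> Zf j g" using Kf_sub[OF g, of j] j b'K b(1) by auto
        have "Gj j g b' = Gj j g b" using e by simp
        then have "b' = b" using Gj_inj[OF _ lg bb] j by simp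
        then show "t \<in> \<tau> ` Kfib" using e y'(1) bv by (auto simp: \<tau>_def Kfib_def)
      next
        assume "t \<in> \<tau> ` Kfib"
        then obtain v where v: "b @ [v] \<in> Kf g (Suc j)" "t = \<tau> v" by (auto simp: Kfib_def)
        have "Gj (Suc j) g (b @ [v]) = a @ [t]" using Gj_snoc[OF lb] b(2) v by (simp add: \<tau>_def)
        then show "t \<in> {t. a @ [t] \<in> ?X}" using v(1) by force
      qed
    qed
    have tauZ: "\<tau> y \<in> eivl (Fin 0) (Fin 1)" if "y \<in> Zfib" for y
      using Tf_bounds[OF j bZ] that by (simp add: \<tau>_def Zfib_def eivl_iff)
    have sub1: "{y. a @ [y] \<in> ?X} \<subseteq> eivl (Fin 0) (Fin 1)" using fe tauZ KZ by auto
    have compl: "eivl (Fin 0) (Fin 1) - {y. a @ [y] \<in> ?X} \<subseteq> \<tau> ` (Zfib - Kfib)"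
    proof
      fix t assume t: "t \<in> eivl (Fin 0) (Fin 1) - {y. a @ [y] \<in> ?X}"
      then have t01: "0 < t" "t < 1" by (auto simp: eivl_iff)
      obtain y where y: "(g @ b) @ [y] \<in> Zj (Suc j)" "Tf j ((g @ b) @ [y]) = t" using Tf_onto[OF j bZ t01] by blast
      have "y \<notin> Kfib" using t fe y by (auto simp: \<tau>_def)
      then show "t \<in> \<tau> ` (Zfib - Kfib)" using y by (auto simp: Zfib_def \<tau>_def)
    qed
    obtain h1 h2 where hh: "edef SL UNIV j (tuples j) h1" "edef SL UNIV j (tuples j) h2"
      "econt_on (tuples j) h1" "econt_on (tuples j) h2" "\<forall>x\<in>tuples j. eless (h1 x) (h2 x)"
      "\<forall>a\<in>take j ` Kf g (Suc j). {y. a @ [y] \<in> Kf g (Suc j)} \<subseteq> eivl (h1 a) (h2 a) \<and>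
         small SL 1 {[y] | y. y \<in> eivl (h1 a) (h2 a) - {y. a @ [y] \<in> Kf g (Suc j)}}"
      using Kf_sc[OF g, of "Suc j"] j by auto
    have bK: "b \<in> take j ` Kf g (Suc j)" using b(1) Kf_take[OF j] by simp
    have ZB: "Zfib \<subseteq> eivl (h1 b) (h2 b)"
      using fib_bounds[OF g j b(1) hh(3,4)] hh(6) by (simp add: Zfib_def)
    have "small SL 1 {[y] | y. y \<in> eivl (h1 b) (h2 b) - {y. b @ [y] \<in> Kf g (Suc j)}}"
      using hh(6) bK by blast
    then have sm1: "small SL 1 {[y] | y. y \<in> eivl (h1 b) (h2 b) - Kfib}" by (simp add: Kfib_def)
    have sm2: "small SL 1 {[y] | y. y \<in> Zfib - Kfib}" by (rule small_mono[OF sm1]) (use ZB in blast)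
    have inj: "inj_on \<tau> (Zfib - Kfib)"
      by (rule inj_onI) (use Tf_inj[OF j bZ] in \<open>auto simp: \<tau>_def Zfib_def\<close>)
    define \<tau>' where "\<tau>' y = (if (g @ b) @ [y] \<in> Zj (Suc j) then Tf j ((g @ b) @ [y]) else 0)" for y
    have dt: "defA SL UNIV 2 {[y, \<tau>' y] | y. True}"
      unfolding \<tau>'_def by (rule tau_def_ok[OF j]) (use lg lb in simp)
    have ag: "\<forall>y\<in>Zfib - Kfib. \<tau>' y = \<tau> y" by (auto simp: \<tau>'_def \<tau>_def Zfib_def)
    have sm3: "small SL 1 {[\<tau> y] | y. y \<in> Zfib - Kfib}" by (rule small_image[OF st sm2 inj dt ag])
    have "small SL 1 {[y] | y. y \<in> eivl (Fin 0) (Fin 1) - {y. a @ [y] \<in> ?X}}"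
      by (rule small_mono[OF sm3]) (use compl in blast)
    then show ?thesis using sub1 by simp
  qed
  show ?case
    using d1 d2 e0 e1 main econt_const[of "tuples j" "Fin (0::'a)"] econt_const[of "tuples j" "Fin (1::'a)"]
    by (simp only: supercone.simps) (intro conjI exI[of _ "\<lambda>_. Fin 0"] exI[of _ "\<lambda>_. Fin 1"]; simp)
qed

end


lemma levels_exist:
  fixes SL :: "nat \<Rightarrow> 'a::linordered_field list set \<Rightarrow> bool"
  assumes st: "is_structure SL" and Zc: "cell SL (m + k) Z"
    and fam: "supercone_family SL SP m k S J" and JZ: "J \<subseteq> Z" and g0: "g0 \<in> S"
    and j: "j < k"
  shows "\<exists>h1 h2. bound_fn SL (m + j) (take (m + j) ` Z) h1 \<and> bound_fn SL (m + j) (take (m + j) ` Z) h2 \<and>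
        (\<forall>x\<in>take (m + j) ` Z. eless (h1 x) (h2 x) \<and>
           {y. x @ [y] \<in> take (m + Suc j) ` Z} = eivl (h1 x) (h2 x))"
proof -
  let ?C = "take (m + Suc j) ` Z"
  have cC: "cell SL (Suc (m + j)) ?C"
    using cell_take[of SL "m + Suc j" "k - Suc j" Z] Zc j by simp
  have tC: "take (m + j) ` ?C = take (m + j) ` Z" by (simp add: image_image min_def)
  have S_sub: "S \<subseteq> tuples m" and J_sub: "J \<subseteq> tuples (m + k)" and sc: "\<forall>g\<in>S. supercone SL SP k (fiber J g)"
    using fam by (auto simp: supercone_family_def)
  show ?thesis
  proof (rule cell_SucE[OF cC])
    fix D f assume graph: "cell SL (m + j) D" "take (m + j) ` ?C = D" "\<forall>x\<in>D. {y. x @ [y] \<in> ?C} = {f x}"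
    let ?K = "take (Suc j) ` fiber J g0"
    have sk: "supercone SL SP k (fiber J g0)" using sc g0 by blast
    have K: "supercone SL SP (Suc j) ?K" by (rule supercone_take[OF sk]) (use j in simp)
    then have "take j ` ?K \<noteq> {}" using supercone_props by auto
    then obtain a where a: "a \<in> take j ` ?K" by blast
    obtain h1 h2 where hh: "\<forall>x\<in>tuples j. eless (h1 x) (h2 x)"
      "\<forall>a\<in>take j ` ?K. {y. a @ [y] \<in> ?K} \<subseteq> eivl (h1 a) (h2 a) \<and>
         small SL 1 {[y] | y. y \<in> eivl (h1 a) (h2 a) - {y. a @ [y] \<in> ?K}}"
      using K by (simp only: supercone.simps) blast
    have at: "a \<in> tuples j" using supercone_props[OF K] a by auto
    have lu: "eless (h1 a) (h2 a)" using hh(1) at by blast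
    have smA: "small SL 1 {[y] | y. y \<in> eivl (h1 a) (h2 a) - {y. a @ [y] \<in> ?K}}" using hh(2) a by blast
    obtain y1 y2 where yy: "y1 \<in> {y. a @ [y] \<in> ?K}" "y2 \<in> {y. a @ [y] \<in> ?K}" "y1 \<noteq> y2"
      using cosmall_two[OF st lu smA] by blast
    have lg: "length g0 = m" using S_sub g0 by auto
    have inC: "g0 @ a @ [y] \<in> ?C" if ay: "a @ [y] \<in> ?K" for y
    proof -
      obtain z where z: "z \<in> fiber J g0" "a @ [y] = take (Suc j) z" using ay by blast
      have "g0 @ z \<in> Z" using z JZ by (auto simp: fiber_def)
      moreover have "take (m + Suc j) (g0 @ z) = g0 @ a @ [y]" using z lg by simp
      ultimately show ?thesis by force
    qed
    have "g0 @ a \<in> D"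
    proof -
      have "g0 @ a @ [y1] \<in> ?C" using inC yy by simp
      then have "take (m + j) (g0 @ a @ [y1]) \<in> D" using graph(2) by blast
      moreover have "length a = j" using at by simp
      ultimately show ?thesis using lg by simp
    qed
    then have "{y. (g0 @ a) @ [y] \<in> ?C} = {f (g0 @ a)}" using graph(3) by blast
    then have "y1 = f (g0 @ a)" "y2 = f (g0 @ a)" using inC yy by auto
    then show ?thesis using yy(3) by simp
  next
    fix D h1 h2 assume ivl: "cell SL (m + j) D" "take (m + j) ` ?C = D" "bound_fn SL (m + j) D h1"
      "bound_fn SL (m + j) D h2" "\<forall>x\<in>D. eless (h1 x) (h2 x) \<and> {y. x @ [y] \<in> ?C} = eivl (h1 x) (h2 x)"
    have D: "D = take (m + j) ` Z" using ivl(2) tC by simp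
    show ?thesis using ivl(3,4,5) unfolding D by blast
  qed
qed

theorem mainTheorem4:
  fixes SL :: "nat \<Rightarrow> 'a::linordered_field list set \<Rightarrow> bool"
    and P A :: "'a set"
    and m k :: nat
    and S J Z :: "'a list set"
  assumes "standing_assumptions SL P"
    and "A_uniform_family_shell SL (gen SL P) A m k S J Z"
  shows "\<exists>J' F.
     A_uniform_family_shell SL (gen SL P) A m k S J'
        {g @ y | g y. g \<in> take m ` Z \<and> length y = k \<and> (\<forall>i<k. 0 < y ! i \<and> y ! i < 1)} \<and>
     fdef SL A (m + k) (m + k) Z F \<and> cont_on Z (m + k) F \<and> inj_on F Z \<and> F ` J = J'"
proof -
  have st: "is_structure SL" and eo: "expands_ordered_field SL"
    using assms(1) by (auto simp: standing_assumptions_def)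
  have ar: "arith_st SL" using arith_SL[OF st eo] .
  have stg: "is_structure (gen SL P)" using gen_structure[OF st] .
  have fam: "supercone_family SL (gen SL P) m k S J" and shell: "is_shell SL m k S J Z"
    and JA: "defA (gen SL P) A (m + k) J" and ZA: "defA SL A (m + k) Z"
    using assms(2) by (auto simp: A_uniform_family_shell_def)
  have Zc: "cell SL (m + k) Z" and JZ: "J \<subseteq> Z" using shell by (auto simp: is_shell_def)
  have Zt: "Z \<subseteq> tuples (m + k)" using cell_props[OF Zc] by simp
  have S_sub: "S \<subseteq> tuples m" and J_eq: "J = {g @ y | g y. g \<in> S \<and> y \<in> fiber J g}"
    using fam by (auto simp: supercone_family_def)
  let ?B = "{g @ y | g y. g \<in> take m ` Z \<and> length y = k \<and> (\<forall>i<k. 0 < y ! i \<and> y ! i < 1)}"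
  have Beq: "?B = Bx m Z k" using Bx_shell[OF Zt] .
  have Bcell: "cell SL (m + k) ?B" using Bx_cell[OF ar ZA Zc, of k] Beq by simp
  have BA: "defA SL A (m + k) ?B" using Bx_def_ok[OF ar ZA, of k] Beq by simp
  show ?thesis
  proof (cases "S = {}")
    case True
    then have J0: "J = {}" using J_eq by auto
    have "A_uniform_family_shell SL (gen SL P) A m k S {} ?B"
      unfolding A_uniform_family_shell_def supercone_family_def is_shell_def
      using True S_sub Bcell BA defA_empty[OF stg] by (auto simp: fiber_def)
    moreover have "fdef SL A (m + k) (m + k) Z (\<lambda>x. x)" by (rule id_fdef[OF ar ZA])
    moreover have "cont_on Z (m + k) (\<lambda>x. x)" by (rule id_cont[OF Zt])
    ultimately show ?thesis using J0 by (intro exI[of _ "{}"] exI[of _ "\<lambda>x. x"]) auto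
  next
    case False
    then obtain g0 where g0: "g0 \<in> S" by blast
    have "\<forall>j. \<exists>h. j < k \<longrightarrow> bound_fn SL (m + j) (take (m + j) ` Z) (fst h) \<and>
        bound_fn SL (m + j) (take (m + j) ` Z) (snd h) \<and>
        (\<forall>x\<in>take (m + j) ` Z. eless (fst h x) (snd h x) \<and>
           {y. x @ [y] \<in> take (m + Suc j) ` Z} = eivl (fst h x) (snd h x))"
    proof
      fix j
      show "\<exists>h. j < k \<longrightarrow> bound_fn SL (m + j) (take (m + j) ` Z) (fst h) \<and>
        bound_fn SL (m + j) (take (m + j) ` Z) (snd h) \<and>
        (\<forall>x\<in>take (m + j) ` Z. eless (fst h x) (snd h x) \<and>
           {y. x @ [y] \<in> take (m + Suc j) ` Z} = eivl (fst h x) (snd h x))"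
      proof (cases "j < k")
        case True
        obtain h1 h2 where "bound_fn SL (m + j) (take (m + j) ` Z) h1 \<and> bound_fn SL (m + j) (take (m + j) ` Z) h2 \<and>
          (\<forall>x\<in>take (m + j) ` Z. eless (h1 x) (h2 x) \<and>
           {y. x @ [y] \<in> take (m + Suc j) ` Z} = eivl (h1 x) (h2 x))"
          using levels_exist[OF st Zc fam JZ g0 True] by blast
        then show ?thesis by (intro exI[of _ "(h1, h2)"]) simp
      qed simp
    qed
    then obtain H where H: "\<And>j. j < k \<Longrightarrow> bound_fn SL (m + j) (take (m + j) ` Z) (fst (H j)) \<and>
        bound_fn SL (m + j) (take (m + j) ` Z) (snd (H j)) \<and>
        (\<forall>x\<in>take (m + j) ` Z. eless (fst (H j) x) (snd (H j) x) \<and>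
           {y. x @ [y] \<in> take (m + Suc j) ` Z} = eivl (fst (H j) x) (snd (H j) x))"
      by metis
    interpret C: constrJ SL A m k Z "\<lambda>j. fst (H j)" "\<lambda>j. snd (H j)" P S J
      by unfold_locales (use ar Zc ZA H fam shell JA in auto)
    let ?J' = "C.F ` J"
    have fibk: "fiber ?J' g = C.Gj k g ` C.Kf g k" if g: "g \<in> S" for g
    proof -
      have "?J' \<subseteq> tuples (m + k)" using C.F_len JZ by auto
      then have "take (m + k) ` ?J' = ?J'" by (force simp: image_iff)
      then show ?thesis using C.Jp_fib[OF g, of k] by simp
    qed
    have fam': "supercone_family SL (gen SL P) m k S ?J'"
      unfolding supercone_family_def
    proof (intro conjI)
      show "S \<subseteq> tuples m" using S_sub .
      show "?J' \<subseteq> tuples (m + k)" using C.F_len JZ by auto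
      show "defA (gen SL P) UNIV (m + k) ?J'" using C.FJ_def by (auto intro: defA_mono)
      show "\<forall>g\<in>S. supercone SL (gen SL P) k (fiber ?J' g)" using C.Jp_sc fibk by simp
      show "?J' = {g @ y | g y. g \<in> S \<and> y \<in> fiber ?J' g}"
      proof
        show "?J' \<subseteq> {g @ y | g y. g \<in> S \<and> y \<in> fiber ?J' g}"
        proof
          fix w assume "w \<in> ?J'"
          then obtain x where x: "x \<in> J" "w = C.F x" by auto
          obtain g z where gz: "x = g @ z" "g \<in> S" "g @ z \<in> J" "length z = k" using C.J_dest[OF x(1)] by blast
          have "w = g @ C.Gj k g z" using x gz C.F_split C.g_len by simp
          moreover have "C.Gj k g z \<in> fiber ?J' g" using x gz calculation by (auto simp: fiber_def)
          ultimately show "w \<in> {g @ y | g y. g \<in> S \<and> y \<in> fiber ?J' g}" using gz by blast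
        qed
        show "{g @ y | g y. g \<in> S \<and> y \<in> fiber ?J' g} \<subseteq> ?J'" by (auto simp: fiber_def)
      qed
    qed
    have sub': "?J' \<subseteq> ?B"
    proof
      fix w assume "w \<in> ?J'"
      then obtain x where x: "x \<in> J" "w = C.F x" by auto
      obtain g z where gz: "x = g @ z" "g \<in> S" "g @ z \<in> J" "length z = k" using C.J_dest[OF x(1)] by blast
      have lg: "length g = m" using C.g_len[OF gz(2)] .
      have w: "w = g @ C.Gj k g z" using x gz C.F_split lg by simp
      have "g @ z \<in> Z" using gz(3) JZ by blast
      then have "z \<in> C.Zf k g" using C.Zj_k by (simp add: C.Zf_def fiber_def)
      then have "C.Gj k g z \<in> Ut k" using C.Gj_range lg by simp
      then have u: "length (C.Gj k g z) = k" "\<forall>i<k. 0 < C.Gj k g z ! i \<and> C.Gj k g z ! i < 1"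
        by (auto simp: Ut_def)
      have "g \<in> take m ` Z" using C.S_Zj0[OF gz(2)] by (simp add: C.Zj_def)
      then show "w \<in> ?B" using w u by blast
    qed
    have cl': "\<forall>g\<in>S. \<forall>j. 0 < j \<and> j \<le> k \<longrightarrow>
        cl j (fiber (take (m + j) ` ?J') g) = cl j (fiber (take (m + j) ` ?B) g)"
    proof (intro ballI allI impI)
      fix g j assume g: "g \<in> S" and j: "0 < j \<and> j \<le> k"
      have "fiber (take (m + j) ` ?B) g = Ut j" using Beq C.Bx_fib[OF C.S_Zj0[OF g]] j by simp
      moreover have "fiber (take (m + j) ` ?J') g = C.Gj j g ` C.Kf g j" using C.Jp_fib[OF g] j by simp
      ultimately show "cl j (fiber (take (m + j) ` ?J') g) = cl j (fiber (take (m + j) ` ?B) g)"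
        using C.Jp_cl[OF g] j by simp
    qed
    have "A_uniform_family_shell SL (gen SL P) A m k S ?J' ?B"
      unfolding A_uniform_family_shell_def is_shell_def
      using fam' Bcell sub' cl' C.FJ_def BA by simp
    then show ?thesis using C.F_fdef C.F_cont C.F_inj by blast
  qed
qed


end
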